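(* Let $(K,\le)$ be an AEC with a system of pregeometries $(\mathrm{cl}_M)_{M\in K}$, and let $\mathscr A$ be defined by: for $M_0\le M_1,M_2\le N$, $N$ is an $\mathscr A$-amalgam of $M_1,M_2$ over $M_0$ by inclusion iff there are $B_1,B_2\subseteq N$ such that $B_1\cup B_2$ is $\mathrm{cl}_N$-independent, $\mathrm{cl}_N(B_1\cup B_2)=N$, $\mathrm{cl}_N(B_1)=M_1$, $\mathrm{cl}_N(B_2)=M_2$ and $\mathrm{cl}_N(B_1\cap B_2)=M_0$ (and $(N,g_1,g_2)\in\mathscr A(M_0,M_1,M_2,f)$ iff $N$ is an $\mathscr A$-amalgam of $g_1[M_1],g_2[M_2]$ over $g_1[M_0]$ by inclusion). Then $\mathscr A$ is regular, absolutely minimal, 3-monotonic, continuous and admits decompositions, and $\mu(K)=\aleph_0$.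
   Context: An AEC $(K,\le)$: a class of structures in a language $\tau$ closed under isomorphism, with a partial order $\le$ refining substructure and preserved under isomorphism, satisfying Löwenheim–Skolem (cardinal $\mathrm{LS}(K)$), Tarski–Vaught chain axioms (union of an increasing continuous chain is in $K$, each member $\le$ the union, and if each member is $\le N$ then the union is $\le N$) and coherence ($M_1,M_2\le N$, $M_1\subseteq M_2$ imply $M_1\le M_2$). A $K$-embedding $f:M\to N$ is an isomorphism onto $f[M]$ with $f[M]\le N$; $\iota$ denotes inclusions. A system of pregeometries for $K$: operators $\mathrm{cl}_M:\mathcal P(M)\to\mathcal P(M)$ for $M\in K$ such that (1) each $(M,\mathrm{cl}_M)$ is a pregeometry: $X\subseteq\mathrm{cl}_M(X)=\mathrm{cl}_M(\mathrm{cl}_M(X))$, monotone, finite character (if $a\in\mathrm{cl}_M(X)$ then $a\in\mathrm{cl}_M(X_0)$ for some finite $X_0\subseteq X$), and exchange ($b\in\mathrm{cl}_M(A\cup\{a\})\setminus\mathrm{cl}_M(A)$ implies $a\in\mathrm{cl}_M(A\cup\{b\})$); (2) if $M\le N$ then $\mathrm{cl}_M\subseteq\mathrm{cl}_N$, in particular $M=\mathrm{cl}_M(M)=\mathrm{cl}_N(M)$; (3) if $B\subseteq N$, $B=\mathrm{cl}_N(B)$ and some $M_0\le N$ has $M_0\subseteq B$, then $B$ is the universe of some $M\le N$. Independence and bases are with respect to $\mathrm{cl}_N$. Properties of $\mathscr A$ (a class of amalgams $\mathscr A(M_0,M_1,M_2,f)$ of triples $(N,g_1,g_2)$, $g_2\circ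 f=g_1\restriction M_0$): "$N$ is an $\mathscr A$-amalgam of $M_1,M_2$ over $M_0$ by inclusion" means $(N,\iota,\iota)\in\mathscr A(M_0,M_1,M_2,\iota)$; "subamalgamated inside $N$" means some $N'\le N$ is such an amalgam, denoted $M_1\oplus^N_{M_0}M_2$ when unique. Absolutely minimal: for $(N,g_1,g_2)\in\mathscr A(M_0,M_1,M_2,f)$, $N^*\ge N$, $N'\le N^*$ with $g_1[M_1]\cup g_2[M_2]\subseteq N'$, we get $N\le N'$. Regular: for a commutative square $g_2\circ f=g_1\restriction M_0$ ($M_0\le M_1$), TFAE (i) $(N,g_1,g_2)\in\mathscr A(M_0,M_1,M_2,f)$; (ii) there are $M_0\le M'\le M_1$ and $g_2[M_2]\le N'\le N$ with $(N',g_1\restriction M',g_2)\in\mathscr A(M_0,M',M_2,f)$ and $(N,g_1,\iota)\in\mathscr A(M',M_1,N',g_1\restriction M')$; (iii) for every $M_0\le M'\le M_1$ there is $N'\le N$ with $(N',g_1\restriction M',g_2)\in\mathscr A(M_0,M',M_2,f)$, and for every such $N'$, $(N,g_1,\iota)\in\mathscr A(M',M_1,N',g_1\restriction M')$. Continuous: if $\delta$ is a limit, $(M_i)_{i<\delta},(N_i)_{i<\delta}$ increasing continuous chains, $f_i:M_i\to N_i$ increasing $K$-embeddings with $(N_{i+1},f_{i+1},\iota)\in\mathscr A(M_i,M_{i+1},N_i,f_i)$ for all $i+1<\delta$, then $(\bigcup N_i,\bigcup f_i,\iota)\in\mathscr A(M_0,\bigcup M_i,N_0,f_0)$. Admits decompositions: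 for $M_0\le M_1\le N$ there is $M_0\le M_2\le N$ with $N$ an $\mathscr A$-amalgam of $M_1,M_2$ over $M_0$ by inclusion. 3-monotonic: whenever $M_0\le M_1,M_2,M_3\le N$, $M_1,M_2$ are subamalgamated over $M_0$ inside $N$, and $N$ is the $\mathscr A$-amalgam of $M_3$ and $M_1\oplus^N_{M_0}M_2$ over $M_0$ by inclusion, then $N$ is the $\mathscr A$-amalgam of $M_1\oplus^N_{M_0}M_3$ and $M_2\oplus^N_{M_0}M_3$ over $M_3$ by inclusion. Sequential amalgam: $N$ is an $\mathscr A$-amalgam of $(M_i)_{i<\alpha}$ over $M_b$ by inclusion if there is an increasing continuous chain $(N_i)_{i<s(\alpha)}$ with union $N$ ($s(\alpha)=\alpha$ for limit $\alpha$, else $\alpha+1$), $N_0=M_b$, $N_1=M_0$, and $N_{i+1}$ an $\mathscr A$-amalgam of $N_i,M_i$ over $M_b$ by inclusion for $1\le i<\alpha$; the unique one inside $N$ is $\bigoplus^N_{M_b,i\in S}M_i$. $\mu(a,M)$ is the least $\mu$ such that whenever $M$ is an $\mathscr A$-amalgam of $(M_i)_{i<\alpha}$ over some $M_b\le M$ by inclusion, $a\in\bigoplus^M_{M_b,j\in S}M_j$ for some $S\subseteq\alpha$ with $|S|<\mu$; $\mu(K)=\sup_{M,a}\mu(a,M)$. *)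

theory Defs
  imports Main "HOL-Library.FuncSet" "HOL-Library.Equipollence"
begin

text \<open>A language is given by the arities of its function symbols (type 'f) and of its
relation symbols (type 'r).
Interpretations are canonical: outside the universe / wrong arity they are undefined/False,
so a substructure of N is determined by its universe.\<close>

record ('a, 'f, 'r) struc =
  univ :: "'a set"
  fint :: "'f \<Rightarrow> 'a list \<Rightarrow> 'a"
  rint :: "'r \<Rightarrow> 'a list \<Rightarrow> bool"

type_synonym ('f, 'r) lang = "('f \<Rightarrow> nat) \<times> ('r \<Rightarrow> nat)"

definition tup :: "nat \<Rightarrow> 'a set \<Rightarrow> 'a list \<Rightarrow> bool" where
  "tup n X xs \<longleftrightarrow> set xs \<subseteq> X \<and> length xs = n"

definition is_struc :: "('f, 'r) lang \<Rightarrow> ('a, 'f, 'r) struc \<Rightarrow> bool" where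
  "is_struc L M \<longleftrightarrow>
     (\<forall>f xs. if tup (fst L f) (univ M) xs then fint M f xs \<in> univ M
             else fint M f xs = undefined) \<and>
     (\<forall>r xs. rint M r xs \<longrightarrow> tup (snd L r) (univ M) xs)"

definition substruc :: "('f, 'r) lang \<Rightarrow> ('a, 'f, 'r) struc \<Rightarrow> ('a, 'f, 'r) struc \<Rightarrow> bool" where
  "substruc L M N \<longleftrightarrow> is_struc L M \<and> is_struc L N \<and> univ M \<subseteq> univ N \<and>
     (\<forall>f xs. tup (fst L f) (univ M) xs \<longrightarrow> fint M f xs = fint N f xs) \<and>
     (\<forall>r xs. tup (snd L r) (univ M) xs \<longrightarrow> rint M r xs = rint N r xs)"

definition iso :: "('f, 'r) lang \<Rightarrow> ('a \<Rightarrow> 'a) \<Rightarrow> ('a, 'f, 'r) struc \<Rightarrow> ('a, 'f, 'r) struc \<Rightarrow> bool" where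
  "iso L h M N \<longleftrightarrow> is_struc L M \<and> is_struc L N \<and> bij_betw h (univ M) (univ N) \<and>
     (\<forall>f xs. tup (fst L f) (univ M) xs \<longrightarrow> h (fint M f xs) = fint N f (map h xs)) \<and>
     (\<forall>r xs. tup (snd L r) (univ M) xs \<longrightarrow> rint N r (map h xs) = rint M r xs)"

definition restr :: "('f, 'r) lang \<Rightarrow> ('a, 'f, 'r) struc \<Rightarrow> 'a set \<Rightarrow> ('a, 'f, 'r) struc" where
  "restr L N X = \<lparr> univ = X,
     fint = (\<lambda>f xs. if tup (fst L f) X xs then fint N f xs else undefined),
     rint = (\<lambda>r xs. tup (snd L r) X xs \<and> rint N r xs) \<rparr>"

definition union_struc :: "('f, 'r) lang \<Rightarrow> ('a, 'f, 'r) struc set \<Rightarrow> ('a, 'f, 'r) struc" where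
  "union_struc L Ms = \<lparr> univ = \<Union>(univ ` Ms),
     fint = (\<lambda>f xs. if tup (fst L f) (\<Union>(univ ` Ms)) xs
                    then fint (SOME M. M \<in> Ms \<and> set xs \<subseteq> univ M) f xs else undefined),
     rint = (\<lambda>r xs. \<exists>M\<in>Ms. rint M r xs) \<rparr>"

definition wlt :: "'i rel \<Rightarrow> 'i \<Rightarrow> 'i \<Rightarrow> bool" where
  "wlt r j i \<longleftrightarrow> (j, i) \<in> r \<and> j \<noteq> i"

definition is_limit_pt :: "'i set \<Rightarrow> 'i rel \<Rightarrow> 'i \<Rightarrow> bool" where
  "is_limit_pt I r i \<longleftrightarrow> (\<exists>j\<in>I. wlt r j i) \<and> (\<forall>j\<in>I. wlt r j i \<longrightarrow> (\<exists>k\<in>I. wlt r j k \<and> wlt r k i))"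

definition is_succ :: "'i set \<Rightarrow> 'i rel \<Rightarrow> 'i \<Rightarrow> 'i \<Rightarrow> bool" where
  "is_succ I r i j \<longleftrightarrow> wlt r i j \<and> \<not> (\<exists>k\<in>I. wlt r i k \<and> wlt r k j)"

definition incr_cont_chain ::
  "('f, 'r) lang \<Rightarrow> (('a, 'f, 'r) struc \<Rightarrow> ('a, 'f, 'r) struc \<Rightarrow> bool)
   \<Rightarrow> 'i set \<Rightarrow> 'i rel \<Rightarrow> ('i \<Rightarrow> ('a, 'f, 'r) struc) \<Rightarrow> bool" where
  "incr_cont_chain L le I r M \<longleftrightarrow> well_order_on I r \<and> I \<noteq> {} \<and>
     (\<forall>i\<in>I. \<forall>j\<in>I. (i, j) \<in> r \<longrightarrow> le (M i) (M j)) \<and>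
     (\<forall>i\<in>I. is_limit_pt I r i \<longrightarrow> M i = union_struc L (M ` {j\<in>I. wlt r j i}))"

text \<open>Chains are indexed by well-orders on the (arbitrary) type 'i.\<close>
definition aec :: "'i itself \<Rightarrow> ('f, 'r) lang \<Rightarrow> ('a, 'f, 'r) struc set
    \<Rightarrow> (('a, 'f, 'r) struc \<Rightarrow> ('a, 'f, 'r) struc \<Rightarrow> bool) \<Rightarrow> bool" where
  "aec (_ :: 'i itself) L K le \<longleftrightarrow>
     (\<forall>M\<in>K. is_struc L M) \<and>
     (\<forall>M M' h. M \<in> K \<and> iso L h M M' \<longrightarrow> M' \<in> K) \<and>
     (\<forall>M N. le M N \<longrightarrow> M \<in> K \<and> N \<in> K \<and> substruc L M N) \<and>
     (\<forall>M\<in>K. le M M) \<and>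
     (\<forall>M N P. le M N \<and> le N P \<longrightarrow> le M P) \<and>
     (\<forall>M N. le M N \<and> le N M \<longrightarrow> M = N) \<and>
     (\<forall>M N N' h. le M N \<and> iso L h N N' \<longrightarrow> le (restr L N' (h ` univ M)) N') \<and>
     (\<exists>\<Lambda> :: ('f + 'r + 'a + nat) set. infinite \<Lambda> \<and> (UNIV :: ('f + 'r) set) \<lesssim> \<Lambda> \<and>
        (\<forall>N\<in>K. \<forall>A. A \<subseteq> univ N \<longrightarrow>
           (\<exists>M. le M N \<and> A \<subseteq> univ M \<and> univ M \<lesssim> (A <+> \<Lambda>)))) \<and>
     (\<forall>(I :: 'i set) r M. incr_cont_chain L le I r M \<longrightarrow>
        union_struc L (M ` I) \<in> K \<and> (\<forall>i\<in>I. le (M i) (union_struc L (M ` I))) \<and>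
        (\<forall>N. (\<forall>i\<in>I. le (M i) N) \<longrightarrow> le (union_struc L (M ` I)) N)) \<and>
     (\<forall>M1 M2 N. le M1 N \<and> le M2 N \<and> univ M1 \<subseteq> univ M2 \<longrightarrow> le M1 M2)"

definition kemb :: "('f, 'r) lang \<Rightarrow> ('a, 'f, 'r) struc set
    \<Rightarrow> (('a, 'f, 'r) struc \<Rightarrow> ('a, 'f, 'r) struc \<Rightarrow> bool)
    \<Rightarrow> ('a \<Rightarrow> 'a) \<Rightarrow> ('a, 'f, 'r) struc \<Rightarrow> ('a, 'f, 'r) struc \<Rightarrow> bool" where
  "kemb L K le g M N \<longleftrightarrow> M \<in> K \<and> N \<in> K \<and> inj_on g (univ M) \<and>
     le (restr L N (g ` univ M)) N \<and> iso L g M (restr L N (g ` univ M))"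

definition pregeom_system :: "('f, 'r) lang \<Rightarrow> ('a, 'f, 'r) struc set
    \<Rightarrow> (('a, 'f, 'r) struc \<Rightarrow> ('a, 'f, 'r) struc \<Rightarrow> bool)
    \<Rightarrow> (('a, 'f, 'r) struc \<Rightarrow> 'a set \<Rightarrow> 'a set) \<Rightarrow> bool" where
  "pregeom_system L K le cl \<longleftrightarrow>
     (\<forall>M\<in>K.
        (\<forall>X. X \<subseteq> univ M \<longrightarrow> X \<subseteq> cl M X \<and> cl M X \<subseteq> univ M \<and> cl M (cl M X) = cl M X) \<and>
        (\<forall>X Y. X \<subseteq> Y \<and> Y \<subseteq> univ M \<longrightarrow> cl M X \<subseteq> cl M Y) \<and>
        (\<forall>X a. X \<subseteq> univ M \<and> a \<in> cl M X \<longrightarrow> (\<exists>X0. X0 \<subseteq> X \<and> finite X0 \<and> a \<in> cl M X0)) \<and>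
        (\<forall>A a b. A \<subseteq> univ M \<and> a \<in> univ M \<and> b \<in> cl M (insert a A) - cl M A
                 \<longrightarrow> a \<in> cl M (insert b A))) \<and>
     (\<forall>M N. le M N \<longrightarrow> (\<forall>X. X \<subseteq> univ M \<longrightarrow> cl M X = cl N X)) \<and>
     (\<forall>N\<in>K. \<forall>B. B \<subseteq> univ N \<and> cl N B = B \<and> (\<exists>M0. le M0 N \<and> univ M0 \<subseteq> B)
                 \<longrightarrow> (\<exists>M. le M N \<and> univ M = B))"

definition indep :: "(('a, 'f, 'r) struc \<Rightarrow> 'a set \<Rightarrow> 'a set) \<Rightarrow> ('a, 'f, 'r) struc \<Rightarrow> 'a set \<Rightarrow> bool" where
  "indep cl N B \<longleftrightarrow> (\<forall>b\<in>B. b \<notin> cl N (B - {b}))"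

definition pg_amalgam :: "(('a, 'f, 'r) struc \<Rightarrow> ('a, 'f, 'r) struc \<Rightarrow> bool)
    \<Rightarrow> (('a, 'f, 'r) struc \<Rightarrow> 'a set \<Rightarrow> 'a set)
    \<Rightarrow> ('a, 'f, 'r) struc \<Rightarrow> ('a, 'f, 'r) struc \<Rightarrow> ('a, 'f, 'r) struc \<Rightarrow> ('a, 'f, 'r) struc \<Rightarrow> bool" where
  "pg_amalgam le cl M0 M1 M2 N \<longleftrightarrow> le M0 M1 \<and> le M0 M2 \<and> le M1 N \<and> le M2 N \<and>
     (\<exists>B1 B2. B1 \<subseteq> univ N \<and> B2 \<subseteq> univ N \<and> indep cl N (B1 \<union> B2) \<and>
        cl N (B1 \<union> B2) = univ N \<and> cl N B1 = univ M1 \<and> cl N B2 = univ M2 \<and>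
        cl N (B1 \<inter> B2) = univ M0)"

definition comm_square :: "('f, 'r) lang \<Rightarrow> ('a, 'f, 'r) struc set
    \<Rightarrow> (('a, 'f, 'r) struc \<Rightarrow> ('a, 'f, 'r) struc \<Rightarrow> bool)
    \<Rightarrow> ('a, 'f, 'r) struc \<Rightarrow> ('a, 'f, 'r) struc \<Rightarrow> ('a, 'f, 'r) struc \<Rightarrow> ('a \<Rightarrow> 'a)
    \<Rightarrow> ('a, 'f, 'r) struc \<Rightarrow> ('a \<Rightarrow> 'a) \<Rightarrow> ('a \<Rightarrow> 'a) \<Rightarrow> bool" where
  "comm_square L K le M0 M1 M2 f N g1 g2 \<longleftrightarrow> le M0 M1 \<and> kemb L K le f M0 M2 \<and>
     kemb L K le g1 M1 N \<and> kemb L K le g2 M2 N \<and> (\<forall>x\<in>univ M0. g2 (f x) = g1 x)"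

definition pg_A :: "('f, 'r) lang \<Rightarrow> ('a, 'f, 'r) struc set
    \<Rightarrow> (('a, 'f, 'r) struc \<Rightarrow> ('a, 'f, 'r) struc \<Rightarrow> bool)
    \<Rightarrow> (('a, 'f, 'r) struc \<Rightarrow> 'a set \<Rightarrow> 'a set)
    \<Rightarrow> ('a, 'f, 'r) struc \<Rightarrow> ('a, 'f, 'r) struc \<Rightarrow> ('a, 'f, 'r) struc \<Rightarrow> ('a \<Rightarrow> 'a)
    \<Rightarrow> ('a, 'f, 'r) struc \<Rightarrow> ('a \<Rightarrow> 'a) \<Rightarrow> ('a \<Rightarrow> 'a) \<Rightarrow> bool" where
  "pg_A L K le cl M0 M1 M2 f N g1 g2 \<longleftrightarrow> comm_square L K le M0 M1 M2 f N g1 g2 \<and>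
     pg_amalgam le cl (restr L N (g1 ` univ M0)) (restr L N (g1 ` univ M1))
                      (restr L N (g2 ` univ M2)) N"

text \<open>A M0 M1 M2 f N g1 g2 means (N, g1, g2) \<in> A(M0, M1, M2, f); inclusions are id.\<close>

type_synonym ('a, 'f, 'r) amalg_class =
  "('a, 'f, 'r) struc \<Rightarrow> ('a, 'f, 'r) struc \<Rightarrow> ('a, 'f, 'r) struc \<Rightarrow> ('a \<Rightarrow> 'a)
   \<Rightarrow> ('a, 'f, 'r) struc \<Rightarrow> ('a \<Rightarrow> 'a) \<Rightarrow> ('a \<Rightarrow> 'a) \<Rightarrow> bool"

definition by_incl :: "('a, 'f, 'r) amalg_class \<Rightarrow> ('a, 'f, 'r) struc \<Rightarrow> ('a, 'f, 'r) struc
    \<Rightarrow> ('a, 'f, 'r) struc \<Rightarrow> ('a, 'f, 'r) struc \<Rightarrow> bool" where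
  "by_incl A M0 M1 M2 N \<longleftrightarrow> A M0 M1 M2 id N id id"

definition abs_minimal :: "(('a, 'f, 'r) struc \<Rightarrow> ('a, 'f, 'r) struc \<Rightarrow> bool)
    \<Rightarrow> ('a, 'f, 'r) amalg_class \<Rightarrow> bool" where
  "abs_minimal le A \<longleftrightarrow> (\<forall>M0 M1 M2 f N g1 g2 Ns N'.
     A M0 M1 M2 f N g1 g2 \<and> le N Ns \<and> le N' Ns \<and> g1 ` univ M1 \<union> g2 ` univ M2 \<subseteq> univ N'
     \<longrightarrow> le N N')"

definition regular :: "('f, 'r) lang \<Rightarrow> ('a, 'f, 'r) struc set
    \<Rightarrow> (('a, 'f, 'r) struc \<Rightarrow> ('a, 'f, 'r) struc \<Rightarrow> bool) \<Rightarrow> ('a, 'f, 'r) amalg_class \<Rightarrow> bool" where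
  "regular L K le A \<longleftrightarrow> (\<forall>M0 M1 M2 f N g1 g2. comm_square L K le M0 M1 M2 f N g1 g2 \<longrightarrow>
     (A M0 M1 M2 f N g1 g2 \<longleftrightarrow>
        (\<exists>M' N'. le M0 M' \<and> le M' M1 \<and> le (restr L N (g2 ` univ M2)) N' \<and> le N' N \<and>
           A M0 M' M2 f N' (restrict g1 (univ M')) g2 \<and>
           A M' M1 N' (restrict g1 (univ M')) N g1 id)) \<and>
     (A M0 M1 M2 f N g1 g2 \<longleftrightarrow>
        (\<forall>M'. le M0 M' \<and> le M' M1 \<longrightarrow>
           (\<exists>N'. le N' N \<and> A M0 M' M2 f N' (restrict g1 (univ M')) g2) \<and>
           (\<forall>N'. le N' N \<and> A M0 M' M2 f N' (restrict g1 (univ M')) g2 \<longrightarrow>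
                 A M' M1 N' (restrict g1 (univ M')) N g1 id))))"

definition union_fun :: "'i set \<Rightarrow> ('i \<Rightarrow> ('a, 'f, 'r) struc) \<Rightarrow> ('i \<Rightarrow> 'a \<Rightarrow> 'a) \<Rightarrow> 'a \<Rightarrow> 'a" where
  "union_fun I M f = (\<lambda>x. f (SOME i. i \<in> I \<and> x \<in> univ (M i)) x)"

definition continuous_amalg :: "'i itself \<Rightarrow> ('f, 'r) lang \<Rightarrow> ('a, 'f, 'r) struc set
    \<Rightarrow> (('a, 'f, 'r) struc \<Rightarrow> ('a, 'f, 'r) struc \<Rightarrow> bool) \<Rightarrow> ('a, 'f, 'r) amalg_class \<Rightarrow> bool" where
  "continuous_amalg (_ :: 'i itself) L K le A \<longleftrightarrow>
     (\<forall>(I :: 'i set) r M N f i0.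
        incr_cont_chain L le I r M \<and> incr_cont_chain L le I r N \<and>
        (\<forall>i\<in>I. \<exists>j\<in>I. wlt r i j) \<and>
        i0 \<in> I \<and> (\<forall>j\<in>I. (i0, j) \<in> r) \<and>
        (\<forall>i\<in>I. kemb L K le (f i) (M i) (N i)) \<and>
        (\<forall>i\<in>I. \<forall>j\<in>I. (i, j) \<in> r \<longrightarrow> (\<forall>x\<in>univ (M i). f j x = f i x)) \<and>
        (\<forall>i\<in>I. \<forall>j\<in>I. is_succ I r i j \<longrightarrow> A (M i) (M j) (N i) (f i) (N j) (f j) id)
        \<longrightarrow> A (M i0) (union_struc L (M ` I)) (N i0) (f i0) (union_struc L (N ` I)) (union_fun I M f) id)"

definition admits_decomp :: "(('a, 'f, 'r) struc \<Rightarrow> ('a, 'f, 'r) struc \<Rightarrow> bool)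
    \<Rightarrow> ('a, 'f, 'r) amalg_class \<Rightarrow> bool" where
  "admits_decomp le A \<longleftrightarrow> (\<forall>M0 M1 N. le M0 M1 \<and> le M1 N \<longrightarrow>
     (\<exists>M2. le M0 M2 \<and> le M2 N \<and> by_incl A M0 M1 M2 N))"

definition is_oplus :: "(('a, 'f, 'r) struc \<Rightarrow> ('a, 'f, 'r) struc \<Rightarrow> bool)
    \<Rightarrow> ('a, 'f, 'r) amalg_class \<Rightarrow> ('a, 'f, 'r) struc \<Rightarrow> ('a, 'f, 'r) struc
    \<Rightarrow> ('a, 'f, 'r) struc \<Rightarrow> ('a, 'f, 'r) struc \<Rightarrow> ('a, 'f, 'r) struc \<Rightarrow> bool" where
  "is_oplus le A M0 M1 M2 N X \<longleftrightarrow> le X N \<and> by_incl A M0 M1 M2 X \<and>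
     (\<forall>Y. le Y N \<and> by_incl A M0 M1 M2 Y \<longrightarrow> Y = X)"

definition three_monotonic :: "(('a, 'f, 'r) struc \<Rightarrow> ('a, 'f, 'r) struc \<Rightarrow> bool)
    \<Rightarrow> ('a, 'f, 'r) amalg_class \<Rightarrow> bool" where
  "three_monotonic le A \<longleftrightarrow> (\<forall>M0 M1 M2 M3 N N12.
     le M0 M1 \<and> le M0 M2 \<and> le M0 M3 \<and> le M1 N \<and> le M2 N \<and> le M3 N \<and>
     is_oplus le A M0 M1 M2 N N12 \<and> by_incl A M0 M3 N12 N
     \<longrightarrow> (\<exists>N13 N23. is_oplus le A M0 M1 M3 N N13 \<and> is_oplus le A M0 M2 M3 N N23 \<and>
                    by_incl A M3 N13 N23 N))"

text \<open>P i is the stage obtained after adding Mf i (N_{i+1} in the paper); the stage before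
  it (N_i in the paper) is the union of all earlier P j, which equals P j at successors
  and gives continuity at limits.\<close>
definition seq_amalg :: "('f, 'r) lang \<Rightarrow> (('a, 'f, 'r) struc \<Rightarrow> ('a, 'f, 'r) struc \<Rightarrow> bool)
    \<Rightarrow> ('a, 'f, 'r) amalg_class \<Rightarrow> 'i set \<Rightarrow> 'i rel \<Rightarrow> ('i \<Rightarrow> ('a, 'f, 'r) struc)
    \<Rightarrow> ('a, 'f, 'r) struc \<Rightarrow> ('a, 'f, 'r) struc \<Rightarrow> bool" where
  "seq_amalg L le A I r Mf Mb N \<longleftrightarrow> well_order_on I r \<and> le Mb N \<and>
     (\<exists>P. (\<forall>i\<in>I. le Mb (P i)) \<and>
          (\<forall>i\<in>I. \<forall>j\<in>I. (j, i) \<in> r \<longrightarrow> le (P j) (P i)) \<and>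
          (\<forall>i\<in>I. (\<forall>j\<in>I. (i, j) \<in> r) \<longrightarrow> P i = Mf i) \<and>
          (\<forall>i\<in>I. \<not> (\<forall>j\<in>I. (i, j) \<in> r) \<longrightarrow>
             (\<forall>j\<in>I. wlt r j i \<longrightarrow> le (P j) (union_struc L (P ` {k\<in>I. wlt r k i}))) \<and>
             le (union_struc L (P ` {k\<in>I. wlt r k i})) (P i) \<and>
             by_incl A Mb (union_struc L (P ` {k\<in>I. wlt r k i})) (Mf i) (P i)) \<and>
          N = union_struc L (insert Mb (P ` I)))"

text \<open>mu(K) = aleph_0: every element of a sequential amalgam already lies in the
  subamalgam of finitely many of the pieces (cardinals mu range over infinite cardinals,
  so aleph_0 is the least possible value).\<close>
definition mu_is_aleph0 :: "'i itself \<Rightarrow> ('f, 'r) lang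
    \<Rightarrow> (('a, 'f, 'r) struc \<Rightarrow> ('a, 'f, 'r) struc \<Rightarrow> bool) \<Rightarrow> ('a, 'f, 'r) amalg_class \<Rightarrow> bool" where
  "mu_is_aleph0 (_ :: 'i itself) L le A \<longleftrightarrow>
     (\<forall>(I :: 'i set) r Mf Mb N a. seq_amalg L le A I r Mf Mb N \<and> a \<in> univ N \<longrightarrow>
        (\<exists>S. S \<subseteq> I \<and> finite S \<and>
           (\<exists>N'. le N' N \<and> seq_amalg L le A S (Restr r S) Mf Mb N' \<and> a \<in> univ N')))"

end

theory Submission
  imports Defs
begin

definition ind :: "('a set \<Rightarrow> 'a set) \<Rightarrow> 'a set \<Rightarrow> 'a set \<Rightarrow> bool" where
  "ind c A X \<longleftrightarrow> (\<forall>x\<in>X. x \<notin> c (A \<union> (X - {x})))"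

definition frk :: "('a set \<Rightarrow> 'a set) \<Rightarrow> 'a set \<Rightarrow> 'a set \<Rightarrow> 'a set \<Rightarrow> bool" where
  "frk c s0 s1 s2 \<longleftrightarrow> (\<exists>Y\<subseteq>s2. ind c s1 Y \<and> c (s0 \<union> Y) = s2)"

locale pgeo =
  fixes U :: "'a set" and c :: "'a set \<Rightarrow> 'a set"
  assumes incl: "X \<subseteq> U \<Longrightarrow> X \<subseteq> c X"
    and sub: "X \<subseteq> U \<Longrightarrow> c X \<subseteq> U"
    and idem: "X \<subseteq> U \<Longrightarrow> c (c X) = c X"
    and mono: "X \<subseteq> Y \<Longrightarrow> Y \<subseteq> U \<Longrightarrow> c X \<subseteq> c Y"
    and fin: "X \<subseteq> U \<Longrightarrow> a \<in> c X \<Longrightarrow> \<exists>X0. X0 \<subseteq> X \<and> finite X0 \<and> a \<in> c X0"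
    and exch: "A \<subseteq> U \<Longrightarrow> a \<in> U \<Longrightarrow> b \<in> c (insert a A) - c A \<Longrightarrow> a \<in> c (insert b A)"
begin

lemma cl_un_cl: "A \<subseteq> U \<Longrightarrow> B \<subseteq> U \<Longrightarrow> c (c A \<union> B) = c (A \<union> B)"
proof -
  assume a: "A \<subseteq> U" "B \<subseteq> U"
  have "c (A \<union> B) \<subseteq> c (c A \<union> B)"
    by (rule mono) (use a incl sub in blast)+
  moreover have "c A \<union> B \<subseteq> c (A \<union> B)"
    using mono[of A "A \<union> B"] incl[of "A \<union> B"] a by blast
  hence "c (c A \<union> B) \<subseteq> c (c (A \<union> B))" using mono a sub by (meson Un_subset_iff)
  ultimately show ?thesis using idem a by auto
qed

lemma cl_un_cl2: "A \<subseteq> U \<Longrightarrow> B \<subseteq> U \<Longrightarrow> c (A \<union> c B) = c (A \<union> B)"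
  using cl_un_cl[of B A] by (simp add: Un_commute)

lemma closed_sub: "X \<subseteq> Y \<Longrightarrow> Y \<subseteq> U \<Longrightarrow> c Y = Y \<Longrightarrow> c X \<subseteq> Y"
  using mono by blast

lemma ind_cl: "A \<subseteq> U \<Longrightarrow> X \<subseteq> U \<Longrightarrow> ind c (c A) X \<longleftrightarrow> ind c A X"
  unfolding ind_def using cl_un_cl[of A] by (metis Diff_subset order_trans)

lemma ind_anti: "A \<subseteq> A' \<Longrightarrow> A' \<subseteq> U \<Longrightarrow> X \<subseteq> U \<Longrightarrow> ind c A' X \<Longrightarrow> ind c A X"
  unfolding ind_def
proof
  fix x assume h: "A \<subseteq> A'" "A' \<subseteq> U" "X \<subseteq> U" "\<forall>x\<in>X. x \<notin> c (A' \<union> (X - {x}))" "x \<in> X"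
  have "c (A \<union> (X - {x})) \<subseteq> c (A' \<union> (X - {x}))" using h by (intro mono) auto
  thus "x \<notin> c (A \<union> (X - {x}))" using h by blast
qed

lemma ind_sub: "X' \<subseteq> X \<Longrightarrow> A \<subseteq> U \<Longrightarrow> X \<subseteq> U \<Longrightarrow> ind c A X \<Longrightarrow> ind c A X'"
  unfolding ind_def
proof
  fix x assume h: "X' \<subseteq> X" "A \<subseteq> U" "X \<subseteq> U" "\<forall>x\<in>X. x \<notin> c (A \<union> (X - {x}))" "x \<in> X'"
  have "c (A \<union> (X' - {x})) \<subseteq> c (A \<union> (X - {x}))" using h by (intro mono) auto
  thus "x \<notin> c (A \<union> (X' - {x}))" using h by blast
qed

lemma ind_disj: "ind c A X \<Longrightarrow> A \<subseteq> U \<Longrightarrow> X \<subseteq> U \<Longrightarrow> X \<inter> c A = {}"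
  unfolding ind_def
proof -
  assume h: "\<forall>x\<in>X. x \<notin> c (A \<union> (X - {x}))" "A \<subseteq> U" "X \<subseteq> U"
  { fix x assume "x \<in> X" "x \<in> c A"
    moreover have "c A \<subseteq> c (A \<union> (X - {x}))" using h by (intro mono) auto
    ultimately have False using h by blast }
  thus ?thesis by blast
qed

lemma ind_single: "A \<subseteq> U \<Longrightarrow> ind c A {y} \<longleftrightarrow> y \<notin> c A"
  unfolding ind_def by auto

lemma F4_aux:
  assumes A: "A \<subseteq> U" "X \<subseteq> U" "Y \<subseteq> U" "X \<inter> Y = {}" "ind c A X" "ind c (A \<union> X) Y" "x \<in> X"
  shows "finite Y0 \<Longrightarrow> Y0 \<subseteq> Y \<Longrightarrow> x \<notin> c (A \<union> (X - {x}) \<union> Y0)"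
proof (induction Y0 rule: finite_induct)
  case empty thus ?case using A unfolding ind_def by auto
next
  case (insert y Y0)
  let ?C = "A \<union> (X - {x}) \<union> Y0"
  have C: "?C \<subseteq> U" using A insert by auto
  have nx: "x \<notin> c ?C" using insert by auto
  show ?case
  proof
    assume "x \<in> c (A \<union> (X - {x}) \<union> insert y Y0)"
    hence "x \<in> c (insert y ?C) - c ?C" using nx by auto
    hence "y \<in> c (insert x ?C)" using exch[OF C] A insert by auto
    moreover have "insert x ?C \<subseteq> A \<union> X \<union> (Y - {y})" using A insert by auto
    hence "c (insert x ?C) \<subseteq> c (A \<union> X \<union> (Y - {y}))" using A by (intro mono) auto
    ultimately show False using A(6) insert unfolding ind_def by blast
  qed
qed

lemma F4: assumes "A \<subseteq> U" "X \<subseteq> U" "Y \<subseteq> U" "X \<inter> Y = {}"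
  shows "ind c A (X \<union> Y) \<longleftrightarrow> ind c A X \<and> ind c (A \<union> X) Y"
proof
  assume h: "ind c A (X \<union> Y)"
  have "ind c A X" using ind_sub[OF _ _ _ h] assms by auto
  moreover have "ind c (A \<union> X) Y" unfolding ind_def
  proof
    fix y assume "y \<in> Y"
    hence "A \<union> X \<union> (Y - {y}) = A \<union> ((X \<union> Y) - {y})" using assms by auto
    thus "y \<notin> c (A \<union> X \<union> (Y - {y}))" using h \<open>y \<in> Y\<close> unfolding ind_def by auto
  qed
  ultimately show "ind c A X \<and> ind c (A \<union> X) Y" by blast
next
  assume h: "ind c A X \<and> ind c (A \<union> X) Y"
  show "ind c A (X \<union> Y)" unfolding ind_def
  proof
    fix z assume z: "z \<in> X \<union> Y"
    show "z \<notin> c (A \<union> (X \<union> Y - {z}))"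
    proof (cases "z \<in> Y")
      case True
      hence "A \<union> (X \<union> Y - {z}) = A \<union> X \<union> (Y - {z})" using assms by auto
      thus ?thesis using h True unfolding ind_def by auto
    next
      case False
      hence zX: "z \<in> X" using z by auto
      show ?thesis
      proof
        assume "z \<in> c (A \<union> (X \<union> Y - {z}))"
        then obtain Z where Z: "Z \<subseteq> A \<union> (X \<union> Y - {z})" "finite Z" "z \<in> c Z"
          using fin[of "A \<union> (X \<union> Y - {z})" z] assms by auto
        have "Z \<subseteq> A \<union> (X - {z}) \<union> (Z \<inter> Y)" using Z by auto
        hence "c Z \<subseteq> c (A \<union> (X - {z}) \<union> (Z \<inter> Y))" using assms by (intro mono) auto
        moreover have "z \<notin> c (A \<union> (X - {z}) \<union> (Z \<inter> Y))"
          using F4_aux[OF assms(1-4) _ _ zX, of "Z \<inter> Y"] h Z by auto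
        ultimately show False using Z by auto
      qed
    qed
  qed
qed

lemma chain_fin:
  assumes "chain\<^sub>\<subseteq> C" "finite F" "F \<subseteq> \<Union>C" "C \<noteq> {}"
  shows "\<exists>X\<in>C. F \<subseteq> X"
  using assms(2,3)
proof (induction F rule: finite_induct)
  case empty thus ?case using assms(4) by auto
next
  case (insert x F)
  then obtain X where X: "X \<in> C" "F \<subseteq> X" by auto
  obtain Y where Y: "Y \<in> C" "x \<in> Y" using insert by auto
  show ?case using assms(1) X Y unfolding chain_subset_def
    by (metis insert_subset subset_iff)
qed

lemma basis_ex: assumes "A \<subseteq> U" "Y \<subseteq> U"
  shows "\<exists>X\<subseteq>Y. ind c A X \<and> Y \<subseteq> c (A \<union> X)"
proof -
  let ?F = "{X. X \<subseteq> Y \<and> ind c A X}"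
  have "\<forall>C\<in>chains ?F. \<Union>C \<in> ?F"
  proof
    fix C assume C: "C \<in> chains ?F"
    have ch: "chain\<^sub>\<subseteq> C" and CF: "C \<subseteq> ?F" using C unfolding chains_def by auto
    have "\<Union>C \<subseteq> Y" using CF by auto
    moreover have "ind c A (\<Union>C)" unfolding ind_def
    proof
      fix x assume x: "x \<in> \<Union>C"
      show "x \<notin> c (A \<union> (\<Union>C - {x}))"
      proof
        assume "x \<in> c (A \<union> (\<Union>C - {x}))"
        then obtain Z where Z: "Z \<subseteq> A \<union> (\<Union>C - {x})" "finite Z" "x \<in> c Z"
          using fin[of "A \<union> (\<Union>C - {x})" x] assms \<open>\<Union>C \<subseteq> Y\<close> by (meson Diff_subset le_sup_iff order_trans)
        obtain X where X: "X \<in> C" "insert x (Z \<inter> \<Union>C) \<subseteq> X"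
          using chain_fin[OF ch, of "insert x (Z \<inter> \<Union>C)"] Z x by auto
        have iX: "ind c A X" "X \<subseteq> Y" using X CF by auto
        have "Z \<subseteq> A \<union> (X - {x})" using Z X by auto
        hence "c Z \<subseteq> c (A \<union> (X - {x}))" using assms iX by (intro mono) auto
        thus False using iX X Z unfolding ind_def by auto
      qed
    qed
    ultimately show "\<Union>C \<in> ?F" by auto
  qed
  then obtain X where X: "X \<in> ?F" "\<forall>X'\<in>?F. X \<subseteq> X' \<longrightarrow> X' = X"
    using Zorn_Lemma[of ?F] by blast
  have "Y \<subseteq> c (A \<union> X)"
  proof
    fix y assume y: "y \<in> Y"
    show "y \<in> c (A \<union> X)"
    proof (rule ccontr)
      assume ny: "y \<notin> c (A \<union> X)"
      have XU: "X \<subseteq> U" using X assms by auto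
      have "y \<notin> X" using ny incl[of "A \<union> X"] XU assms by auto
      have "ind c (A \<union> X) {y}" using ind_single[of "A \<union> X" y] ny XU assms by auto
      hence "ind c A (X \<union> {y})" using F4[of A X "{y}"] X assms y \<open>y \<notin> X\<close> XU by auto
      hence "insert y X \<in> ?F" using X y by auto
      hence "insert y X = X" using X(2) by blast
      thus False using \<open>y \<notin> X\<close> by auto
    qed
  qed
  thus ?thesis using X by auto
qed

lemma ind_fin: assumes "A \<subseteq> U" "X \<subseteq> U" "\<And>X0. X0 \<subseteq> X \<Longrightarrow> finite X0 \<Longrightarrow> ind c A X0"
  shows "ind c A X"
  unfolding ind_def
proof
  fix x assume x: "x \<in> X"
  show "x \<notin> c (A \<union> (X - {x}))"
  proof
    assume "x \<in> c (A \<union> (X - {x}))"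
    then obtain Z where Z: "Z \<subseteq> A \<union> (X - {x})" "finite Z" "x \<in> c Z"
      using fin[of "A \<union> (X - {x})" x] assms by auto
    let ?X0 = "insert x (Z \<inter> X)"
    have "ind c A ?X0" using assms(3) Z x by auto
    moreover have "c Z \<subseteq> c (A \<union> (?X0 - {x}))" using Z assms by (intro mono) auto
    ultimately show False using Z unfolding ind_def by auto
  qed
qed

definition closed where "closed s \<longleftrightarrow> s \<subseteq> U \<and> c s = s"

lemma frk_D: assumes "closed s0" "closed s1" "closed s2" "s0 \<subseteq> s1" "s0 \<subseteq> s2"
  "frk c s0 s1 s2" "X \<subseteq> s1" "ind c s0 X"
  shows "ind c s2 X"
proof -
  obtain Z where Z: "Z \<subseteq> s2" "ind c s1 Z" "c (s0 \<union> Z) = s2" using assms(6) unfolding frk_def by auto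
  have U: "s0 \<subseteq> U" "s1 \<subseteq> U" "s2 \<subseteq> U" "X \<subseteq> U" "Z \<subseteq> U" using assms Z unfolding closed_def by auto
  have "ind c (s0 \<union> X) Z" using ind_anti[OF _ _ _ Z(2)] assms U by auto
  moreover have "Z \<inter> s1 = {}" using ind_disj[OF Z(2)] U assms unfolding closed_def by auto
  hence d: "X \<inter> Z = {}" using assms by auto
  ultimately have "ind c s0 (X \<union> Z)" using F4[of s0 X Z] assms U by auto
  hence "ind c s0 (Z \<union> X)" by (simp add: Un_commute)
  hence "ind c (s0 \<union> Z) X" using F4[of s0 Z X] U d by (auto simp: Int_commute)
  hence "ind c (c (s0 \<union> Z)) X" using ind_cl[of "s0 \<union> Z" X] U by auto
  thus ?thesis using Z by simp
qed

lemma frk_from_D: assumes "closed s0" "closed s2" "s0 \<subseteq> s2" "s1 \<subseteq> U"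
  "\<And>X. X \<subseteq> s2 \<Longrightarrow> ind c s0 X \<Longrightarrow> ind c s1 X"
  shows "frk c s0 s1 s2"
proof -
  have U: "s0 \<subseteq> U" "s2 \<subseteq> U" using assms unfolding closed_def by auto
  obtain X where X: "X \<subseteq> s2" "ind c s0 X" "s2 \<subseteq> c (s0 \<union> X)" using basis_ex[OF U] by auto
  have "c (s0 \<union> X) \<subseteq> s2" using closed_sub[of "s0 \<union> X" s2] assms X U unfolding closed_def by auto
  thus ?thesis unfolding frk_def using X assms by (intro exI[of _ X]) auto
qed

lemma frk_sym: assumes "closed s0" "closed s1" "closed s2" "s0 \<subseteq> s1" "s0 \<subseteq> s2"
  "frk c s0 s1 s2" shows "frk c s0 s2 s1"
  using frk_from_D[of s0 s1 s2] frk_D[OF assms] assms unfolding closed_def by auto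

lemma frk_anti: assumes "frk c s0 s1 s2" "s1' \<subseteq> s1" "s1 \<subseteq> U" "s2 \<subseteq> U"
  shows "frk c s0 s1' s2"
  using assms ind_anti unfolding frk_def by (smt (verit, best) order_trans)

lemma frk_triv: assumes "closed s0" "closed s2" "s0 \<subseteq> s2" shows "frk c s0 s0 s2"
  using frk_from_D[of s0 s2 s0] assms unfolding closed_def by auto

lemma frk_trans:
  assumes cl: "closed a0" "closed a'" "closed a1" "closed C" "closed n'" "closed n"
    and sub: "a0 \<subseteq> a'" "a' \<subseteq> a1" "a0 \<subseteq> C"
    and h1: "c (a' \<union> C) = n'" "frk c a0 a' C"
    and h2: "c (a1 \<union> n') = n" "frk c a' a1 n'"
  shows "c (a1 \<union> C) = n \<and> frk c a0 a1 C"
proof -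
  have U: "a0 \<subseteq> U" "a' \<subseteq> U" "a1 \<subseteq> U" "C \<subseteq> U" "n' \<subseteq> U" "n \<subseteq> U" using cl unfolding closed_def by auto
  have Cn': "C \<subseteq> n'" "a' \<subseteq> n'" using h1 incl[of "a' \<union> C"] U by auto
  have "a1 \<union> C = a1 \<union> (a' \<union> C)" using sub by auto
  hence "c (a1 \<union> C) = c (a1 \<union> (a' \<union> C))" by simp
  also have "\<dots> = n" using h2 h1 cl_un_cl2[of a1 "a' \<union> C"] U by auto
  finally have e: "c (a1 \<union> C) = n" .
  obtain Y where Y: "Y \<subseteq> C" "ind c a' Y" "c (a0 \<union> Y) = C" using h1 unfolding frk_def by auto
  have s: "frk c a' n' a1" using frk_sym[OF cl(2) cl(3) cl(5) sub(2) Cn'(2) h2(2)] .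
  have "ind c a1 Y" using frk_D[OF cl(2) cl(5) cl(3) Cn'(2) sub(2) s] Y Cn' by auto
  thus ?thesis using e Y unfolding frk_def by auto
qed

end

lemma frk_transfer: assumes "\<And>X. X \<subseteq> T \<Longrightarrow> c X = c' X" "s0 \<subseteq> T" "s1 \<subseteq> T" "s2 \<subseteq> T"
  shows "frk c s0 s1 s2 \<longleftrightarrow> frk c' s0 s1 s2"
proof -
  have "\<And>Y. Y \<subseteq> s2 \<Longrightarrow> ind c s1 Y \<longleftrightarrow> ind c' s1 Y"
    unfolding ind_def using assms by (metis (no_types, lifting) Diff_subset le_sup_iff order_trans)
  moreover have "\<And>Y. Y \<subseteq> s2 \<Longrightarrow> c (s0 \<union> Y) = c' (s0 \<union> Y)" using assms by auto
  ultimately show ?thesis unfolding frk_def by (metis (no_types, lifting))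
qed


context pgeo begin

lemma amalg_fwd:
  assumes B: "B1 \<subseteq> U" "B2 \<subseteq> U" "ind c {} (B1 \<union> B2)"
      "c (B1 \<union> B2) = U" "c B1 = m1" "c B2 = m2" "c (B1 \<inter> B2) = m0"
  shows "c (m1 \<union> m2) = U \<and> frk c m0 m1 m2"
proof -
  define X2 where "X2 = B2 - B1"
  have X2U: "X2 \<subseteq> U" "B1 \<inter> X2 = {}" "B1 \<union> B2 = B1 \<union> X2" using B unfolding X2_def by auto
  have "ind c ({} \<union> B1) X2" using F4[of "{}" B1 X2] B(3) B(1) X2U by simp
  hence "ind c (c B1) X2" using ind_cl[of B1 X2] B(1) X2U by simp
  hence i: "ind c m1 X2" using B(5) by simp
  have "B2 \<subseteq> c B2" using incl B(2) by blast
  hence s: "X2 \<subseteq> m2" using B(6) unfolding X2_def by blast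
  have "c (m0 \<union> X2) = c ((B1 \<inter> B2) \<union> X2)"
    using cl_un_cl[of "B1 \<inter> B2" X2] B(1,7) X2U by auto
  also have "(B1 \<inter> B2) \<union> X2 = B2" unfolding X2_def by auto
  finally have e: "c (m0 \<union> X2) = m2" using B(6) by simp
  have "c (m1 \<union> m2) = c (B1 \<union> c B2)" using cl_un_cl[of B1 "c B2"] B(1,2,5,6) sub[of B2] by simp
  also have "\<dots> = c (B1 \<union> B2)" using cl_un_cl2[of B1 B2] B(1,2) by simp
  finally show ?thesis using B(4) i s e unfolding frk_def by blast
qed

lemma amalg_bwd:
  assumes cm: "closed m0" "closed m1" "closed m2" "m0 \<subseteq> m1" "m0 \<subseteq> m2"
    and R: "c (m1 \<union> m2) = U" "frk c m0 m1 m2"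
  shows "\<exists>B1 B2. B1 \<subseteq> U \<and> B2 \<subseteq> U \<and> ind c {} (B1 \<union> B2) \<and>
      c (B1 \<union> B2) = U \<and> c B1 = m1 \<and> c B2 = m2 \<and> c (B1 \<inter> B2) = m0"
proof -
  have mU: "m0 \<subseteq> U" "m1 \<subseteq> U" "m2 \<subseteq> U" "c m0 = m0" "c m1 = m1" "c m2 = m2"
    using cm unfolding closed_def by auto
  obtain Y where Y: "Y \<subseteq> m2" "ind c m1 Y" "c (m0 \<union> Y) = m2" using R unfolding frk_def by blast
  obtain B0 where B0: "B0 \<subseteq> m0" "ind c {} B0" "m0 \<subseteq> c ({} \<union> B0)"
    using basis_ex[of "{}" m0] mU by blast
  have cB0: "c B0 = m0" using B0 closed_sub[of B0 m0] mU by auto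
  obtain X1 where X1: "X1 \<subseteq> m1" "ind c m0 X1" "m1 \<subseteq> c (m0 \<union> X1)"
    using basis_ex[of m0 m1] mU by blast
  have cX1: "c (m0 \<union> X1) = m1" using X1 closed_sub[of "m0 \<union> X1" m1] mU cm(4) by blast
  have U: "B0 \<subseteq> U" "X1 \<subseteq> U" "Y \<subseteq> U" using B0 X1 Y mU by blast+
  have cB1: "c (B0 \<union> X1) = m1" using cl_un_cl[of B0 X1] cB0 cX1 U by simp
  have cB2: "c (B0 \<union> Y) = m2" using cl_un_cl[of B0 Y] cB0 Y(3) U by simp
  have dX1: "X1 \<inter> m0 = {}" using ind_disj[OF X1(2)] mU U by simp
  have dY: "Y \<inter> m1 = {}" using ind_disj[OF Y(2)] mU U by simp
  have i1: "ind c B0 X1" using ind_cl[of B0 X1] cB0 X1(2) U by simp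
  have i2: "ind c (B0 \<union> X1) Y" using ind_cl[of "B0 \<union> X1" Y] cB1 Y(2) U by simp
  have d1: "X1 \<inter> Y = {}" using dY X1(1) by blast
  have "ind c B0 (X1 \<union> Y)" using F4[of B0 X1 Y] i1 i2 U d1 by simp
  moreover have d2: "B0 \<inter> (X1 \<union> Y) = {}" using dX1 dY B0(1) cm(4) by blast
  ultimately have i: "ind c {} (B0 \<union> (X1 \<union> Y))" using F4[of "{}" B0 "X1 \<union> Y"] B0(2) U by simp
  have e1: "(B0 \<union> X1) \<union> (B0 \<union> Y) = B0 \<union> (X1 \<union> Y)" by blast
  have e2: "(B0 \<union> X1) \<inter> (B0 \<union> Y) = B0" using d1 by blast
  have "c ((B0 \<union> X1) \<union> (B0 \<union> Y)) = c (m1 \<union> c (B0 \<union> Y))"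
    using cl_un_cl[of "B0 \<union> X1" "c (B0 \<union> Y)"] cl_un_cl2[of "B0 \<union> X1" "B0 \<union> Y"] U cB1 sub[of "B0 \<union> Y"]
    by simp
  also have "\<dots> = U" using cB2 R(1) by simp
  finally have e3: "c ((B0 \<union> X1) \<union> (B0 \<union> Y)) = U" .
  show ?thesis
    apply (rule exI[of _ "B0 \<union> X1"], rule exI[of _ "B0 \<union> Y"])
    using U i e1 e2 e3 cB1 cB2 cB0 by simp
qed

end

context pgeo begin

lemma closedI: "s \<subseteq> U \<Longrightarrow> closed (c s)"
  unfolding closed_def using sub idem by blast

lemma closedD: "closed s \<Longrightarrow> s \<subseteq> U" "closed s \<Longrightarrow> c s = s"
  unfolding closed_def by blast+

lemma cl_least: "X \<subseteq> s \<Longrightarrow> closed s \<Longrightarrow> c X \<subseteq> s"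
  by (rule closed_sub) (simp_all add: closedD)

lemma three_mono_sets:
  assumes cl: "closed m0" "closed m1" "closed m2" "closed m3"
    and sb: "m0 \<subseteq> m1" "m0 \<subseteq> m2" "m0 \<subseteq> m3"
    and h: "frk c m0 m1 m2" "frk c m0 m3 (c (m1 \<union> m2))" "c (m3 \<union> c (m1 \<union> m2)) = U"
  shows "frk c m0 m1 m3" "frk c m0 m2 m3"
    "c (c (m1 \<union> m3) \<union> c (m2 \<union> m3)) = U"
    "frk c m3 (c (m1 \<union> m3)) (c (m2 \<union> m3))"
proof -
  have U: "m0 \<subseteq> U" "m1 \<subseteq> U" "m2 \<subseteq> U" "m3 \<subseteq> U" using closedD(1) cl by auto
  define n12 where "n12 = c (m1 \<union> m2)"
  have cn: "closed n12" "m1 \<subseteq> n12" "m2 \<subseteq> n12" "m0 \<subseteq> n12"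
    using closedI[of "m1 \<union> m2"] incl[of "m1 \<union> m2"] U sb unfolding n12_def by auto
  have s: "frk c m0 n12 m3" using frk_sym[OF cl(1) cl(4) cn(1) sb(3) cn(4)] h(2) unfolding n12_def by blast
  have n12U: "n12 \<subseteq> U" using closedD(1)[OF cn(1)] .
  show f1: "frk c m0 m1 m3" using frk_anti[OF s cn(2) n12U U(4)] .
  show f2: "frk c m0 m2 m3" using frk_anti[OF s cn(3) n12U U(4)] .
  have "c (c (m1 \<union> m3) \<union> c (m2 \<union> m3)) = c ((m1 \<union> m3) \<union> (m2 \<union> m3))"
    using cl_un_cl[of "m1 \<union> m3" "c (m2 \<union> m3)"] cl_un_cl2[of "m1 \<union> m3" "m2 \<union> m3"] U sub[of "m2 \<union> m3"]
    by simp
  also have "(m1 \<union> m3) \<union> (m2 \<union> m3) = m3 \<union> (m1 \<union> m2)" by blast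
  also have "c \<dots> = c (m3 \<union> c (m1 \<union> m2))" using cl_un_cl2[of m3 "m1 \<union> m2"] U by simp
  finally show "c (c (m1 \<union> m3) \<union> c (m2 \<union> m3)) = U" using h(3) by simp
  obtain Z where Z: "Z \<subseteq> m2" "ind c m1 Z" "c (m0 \<union> Z) = m2" using h(1) unfolding frk_def by blast
  obtain W where W: "W \<subseteq> m3" "ind c n12 W" "c (m0 \<union> W) = m3" using s unfolding frk_def by blast
  have ZW: "Z \<subseteq> U" "W \<subseteq> U" using Z W U by blast+
  have "m1 \<union> Z \<subseteq> n12" using cn Z(1) by blast
  hence "ind c (m1 \<union> Z) W" using ind_anti[OF _ n12U ZW(2) W(2)] by blast
  moreover have "W \<inter> c n12 = {}" using ind_disj[OF W(2) n12U ZW(2)] .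
  hence d: "Z \<inter> W = {}" using closedD(2)[OF cn(1)] cn Z(1) by blast
  ultimately have "ind c m1 (Z \<union> W)" using F4[of m1 Z W] Z(2) U ZW by blast
  hence "ind c m1 (W \<union> Z)" by (simp add: Un_commute)
  hence "ind c (m1 \<union> W) Z" using F4[of m1 W Z] U ZW d by blast
  hence "ind c (c (m1 \<union> W)) Z" using ind_cl[of "m1 \<union> W" Z] U ZW by blast
  moreover have "c (m1 \<union> W) = c (m1 \<union> m3)"
  proof -
    have "m1 \<union> W = m1 \<union> (m0 \<union> W)" using sb by blast
    hence "c (m1 \<union> W) = c (m1 \<union> c (m0 \<union> W))" using cl_un_cl2[of m1 "m0 \<union> W"] U ZW by simp
    thus ?thesis using W(3) by simp
  qed
  ultimately have i: "ind c (c (m1 \<union> m3)) Z" by simp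
  have "c (m3 \<union> Z) = c (m2 \<union> m3)"
  proof -
    have "m3 \<union> Z = m3 \<union> (m0 \<union> Z)" using sb by blast
    hence "c (m3 \<union> Z) = c (m3 \<union> c (m0 \<union> Z))" using cl_un_cl2[of m3 "m0 \<union> Z"] U ZW by simp
    thus ?thesis using Z(3) by (simp add: Un_commute)
  qed
  moreover have "Z \<subseteq> c (m2 \<union> m3)" using Z(1) incl[of "m2 \<union> m3"] U by blast
  ultimately show "frk c m3 (c (m1 \<union> m3)) (c (m2 \<union> m3))" using i unfolding frk_def by blast
qed

lemma decomp_sets:
  assumes "closed m0" "closed m1" "m0 \<subseteq> m1"
  shows "\<exists>m2. closed m2 \<and> m0 \<subseteq> m2 \<and> c (m1 \<union> m2) = U \<and> frk c m0 m1 m2"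
proof -
  have U: "m0 \<subseteq> U" "m1 \<subseteq> U" using assms closedD(1) by auto
  obtain Y where Y: "Y \<subseteq> U" "ind c m1 Y" "U \<subseteq> c (m1 \<union> Y)" using basis_ex[of m1 U] U by blast
  define m2 where "m2 = c (m0 \<union> Y)"
  have m2: "closed m2" "m0 \<subseteq> m2" "Y \<subseteq> m2" using closedI[of "m0 \<union> Y"] incl[of "m0 \<union> Y"] U Y
    unfolding m2_def by auto
  have m2U: "m2 \<subseteq> U" using closedD(1)[OF m2(1)] .
  have "c (m1 \<union> Y) \<subseteq> c (m1 \<union> m2)" using mono[of "m1 \<union> Y" "m1 \<union> m2"] m2 U m2U by blast
  moreover have "c (m1 \<union> m2) \<subseteq> U" using sub[of "m1 \<union> m2"] U m2U by blast
  ultimately have "c (m1 \<union> m2) = U" using Y by blast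
  moreover have "frk c m0 m1 m2" unfolding frk_def using Y m2 m2_def by blast
  ultimately show ?thesis using m2 by blast
qed

lemma reg_iii_sets:
  assumes cl: "closed a0" "closed a'" "closed a1" "closed C"
    and sb: "a0 \<subseteq> a'" "a' \<subseteq> a1" "a0 \<subseteq> C"
    and h: "c (a1 \<union> C) = n" "frk c a0 a1 C" "c (a' \<union> C) = n'"
  shows "c (a1 \<union> n') = n \<and> frk c a' a1 n'"
proof -
  have U: "a0 \<subseteq> U" "a' \<subseteq> U" "a1 \<subseteq> U" "C \<subseteq> U" using cl closedD(1) by auto
  have "a1 \<union> C = a1 \<union> (a' \<union> C)" using sb by blast
  hence e: "c (a1 \<union> n') = n" using cl_un_cl2[of a1 "a' \<union> C"] h U by simp
  obtain Y where Y: "Y \<subseteq> C" "ind c a1 Y" "c (a0 \<union> Y) = C" using h(2) unfolding frk_def by blast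
  have "a' \<union> Y = a' \<union> (a0 \<union> Y)" using sb by blast
  hence "c (a' \<union> Y) = n'" using cl_un_cl2[of a' "a0 \<union> Y"] h U Y by simp
  moreover have "Y \<subseteq> n'" using Y(1) incl[of "a' \<union> C"] h(3) U by blast
  ultimately show ?thesis using e Y unfolding frk_def by blast
qed

end

lemma tup_mono: "tup n X xs \<Longrightarrow> X \<subseteq> Y \<Longrightarrow> tup n Y xs"
  unfolding tup_def by auto

lemma is_struc_in: "is_struc L M \<Longrightarrow> tup (fst L f) (univ M) xs \<Longrightarrow> fint M f xs \<in> univ M"
  unfolding is_struc_def by metis
lemma is_struc_out: "is_struc L M \<Longrightarrow> \<not> tup (fst L f) (univ M) xs \<Longrightarrow> fint M f xs = undefined"
  unfolding is_struc_def by metis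
lemma is_struc_rint: "is_struc L M \<Longrightarrow> rint M r xs \<Longrightarrow> tup (snd L r) (univ M) xs"
  unfolding is_struc_def by metis

lemma restr_restr: "X \<subseteq> Y \<Longrightarrow> restr L (restr L N Y) X = restr L N X"
  unfolding restr_def using tup_mono by (fastforce intro!: ext)

lemma univ_restr[simp]: "univ (restr L N X) = X"
  unfolding restr_def by simp

lemma substruc_restr_eq: assumes "substruc L M N" shows "restr L N (univ M) = M"
proof -
  have s: "is_struc L M" and f: "\<And>f xs. tup (fst L f) (univ M) xs \<Longrightarrow> fint M f xs = fint N f xs"
    and r: "\<And>r xs. tup (snd L r) (univ M) xs \<Longrightarrow> rint M r xs = rint N r xs"
    using assms unfolding substruc_def by auto
  show ?thesis
  proof (rule struc.equality)
    show "fint (restr L N (univ M)) = fint M"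
    proof (intro ext)
      fix g xs show "fint (restr L N (univ M)) g xs = fint M g xs"
        using f[of g xs] is_struc_out[OF s, of g xs] unfolding restr_def by auto
    qed
    show "rint (restr L N (univ M)) = rint M"
    proof (intro ext)
      fix g xs show "rint (restr L N (univ M)) g xs = rint M g xs"
        using r[of g xs] is_struc_rint[OF s, of g xs] unfolding restr_def by auto
    qed
  qed (auto simp: restr_def)
qed

lemma isoD: assumes "iso L g M R" shows "is_struc L M" "is_struc L R" "bij_betw g (univ M) (univ R)"
  "\<And>f xs. tup (fst L f) (univ M) xs \<Longrightarrow> g (fint M f xs) = fint R f (map g xs)"
  "\<And>r xs. tup (snd L r) (univ M) xs \<Longrightarrow> rint R r (map g xs) = rint M r xs"
  using assms unfolding iso_def by blast+

lemma isoI: assumes "is_struc L M" "is_struc L R" "bij_betw g (univ M) (univ R)"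
  "\<And>f xs. tup (fst L f) (univ M) xs \<Longrightarrow> g (fint M f xs) = fint R f (map g xs)"
  "\<And>r xs. tup (snd L r) (univ M) xs \<Longrightarrow> rint R r (map g xs) = rint M r xs"
  shows "iso L g M R"
  using assms unfolding iso_def by blast

lemma iso_id_eq: assumes "iso L id M R" shows "M = R"
proof -
  have s: "is_struc L M" "is_struc L R" "univ M = univ R" using assms unfolding iso_def bij_betw_def by auto
  have f: "\<And>f xs. tup (fst L f) (univ M) xs \<Longrightarrow> fint M f xs = fint R f xs"
    and r: "\<And>r xs. tup (snd L r) (univ M) xs \<Longrightarrow> rint R r xs = rint M r xs"
    using assms unfolding iso_def by auto
  show ?thesis
  proof (rule struc.equality)
    show "univ M = univ R" by fact
    show "fint M = fint R"
    proof (intro ext)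
      fix g xs show "fint M g xs = fint R g xs"
        using f[of g xs] is_struc_out[OF s(1), of g xs] is_struc_out[OF s(2), of g xs] s(3)
        by (cases "tup (fst L g) (univ R) xs") auto
    qed
    show "rint M = rint R"
    proof (intro ext)
      fix g xs show "rint M g xs = rint R g xs"
        using r[of g xs] is_struc_rint[OF s(1), of g xs] is_struc_rint[OF s(2), of g xs] s(3) by auto
    qed
  qed simp
qed

lemma iso_id_self: "is_struc L M \<Longrightarrow> iso L id M M"
  unfolding iso_def bij_betw_def by simp

lemma iso_cong: assumes "\<forall>x\<in>univ M. g x = h x" and "iso L g M R" shows "iso L h M R"
proof (rule isoI)
  have m: "\<And>xs. set xs \<subseteq> univ M \<Longrightarrow> map g xs = map h xs"
  proof -
    fix xs :: "'a list" assume "set xs \<subseteq> univ M"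
    thus "map g xs = map h xs" using assms(1) by (induct xs) auto
  qed
  show "is_struc L M" "is_struc L R" using isoD[OF assms(2)] by blast+
  show "bij_betw h (univ M) (univ R)"
    using assms(1) isoD(3)[OF assms(2)] bij_betw_cong[of "univ M" g h "univ R"] by simp
  show "\<And>f xs. tup (fst L f) (univ M) xs \<Longrightarrow> h (fint M f xs) = fint R f (map h xs)"
  proof -
    fix f xs assume t: "tup (fst L f) (univ M) xs"
    have "fint M f xs \<in> univ M" by (rule is_struc_in[OF isoD(1)[OF assms(2)] t])
    hence "h (fint M f xs) = g (fint M f xs)" using assms(1) by simp
    also have "\<dots> = fint R f (map g xs)" using isoD(4)[OF assms(2) t] .
    also have "map g xs = map h xs" using m t unfolding tup_def by blast
    finally show "h (fint M f xs) = fint R f (map h xs)" .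
  qed
  show "\<And>r xs. tup (snd L r) (univ M) xs \<Longrightarrow> rint R r (map h xs) = rint M r xs"
  proof -
    fix r xs assume t: "tup (snd L r) (univ M) xs"
    have e: "map h xs = map g xs" using m t unfolding tup_def by auto
    show "rint R r (map h xs) = rint M r xs" unfolding e by (rule isoD(5)[OF assms(2) t])
  qed
qed


locale setting =
  fixes L :: "('f, 'r) lang" and K :: "('a, 'f, 'r) struc set"
    and le :: "('a, 'f, 'r) struc \<Rightarrow> ('a, 'f, 'r) struc \<Rightarrow> bool"
    and cl :: "('a, 'f, 'r) struc \<Rightarrow> 'a set \<Rightarrow> 'a set"
    and ity :: "'i itself"
  assumes aec: "aec ity L K le" and pgs: "pregeom_system L K le cl"
begin

lemmas A = aec[unfolded aec_def]
lemma K_struc: "M \<in> K \<Longrightarrow> is_struc L M" using A[THEN conjunct1] by blast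
lemma leD: "le M N \<Longrightarrow> M \<in> K \<and> N \<in> K \<and> substruc L M N"
  using A[THEN conjunct2, THEN conjunct2, THEN conjunct1] by blast
lemma le_refl: "M \<in> K \<Longrightarrow> le M M"
  using A[THEN conjunct2, THEN conjunct2, THEN conjunct2, THEN conjunct1] by blast
lemma le_trans: "le M N \<Longrightarrow> le N P \<Longrightarrow> le M P"
  using A[THEN conjunct2, THEN conjunct2, THEN conjunct2, THEN conjunct2, THEN conjunct1] by blast
lemma le_antisym: "le M N \<Longrightarrow> le N M \<Longrightarrow> M = N"
  using A[THEN conjunct2, THEN conjunct2, THEN conjunct2, THEN conjunct2, THEN conjunct2, THEN conjunct1] by blast
lemma le_iso: "le M N \<Longrightarrow> iso L h N N' \<Longrightarrow> le (restr L N' (h ` univ M)) N'"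
  using A[THEN conjunct2, THEN conjunct2, THEN conjunct2, THEN conjunct2, THEN conjunct2, THEN conjunct2, THEN conjunct1] by blast
lemma chain_ax: "incr_cont_chain L le (I :: 'i set) r M \<Longrightarrow>
        union_struc L (M ` I) \<in> K \<and> (\<forall>i\<in>I. le (M i) (union_struc L (M ` I))) \<and>
        (\<forall>N. (\<forall>i\<in>I. le (M i) N) \<longrightarrow> le (union_struc L (M ` I)) N)"
  using A[THEN conjunct2, THEN conjunct2, THEN conjunct2, THEN conjunct2, THEN conjunct2, THEN conjunct2, THEN conjunct2, THEN conjunct2, THEN conjunct1] by blast
lemma coh: "le M1 N \<Longrightarrow> le M2 N \<Longrightarrow> univ M1 \<subseteq> univ M2 \<Longrightarrow> le M1 M2"
  using A[THEN conjunct2, THEN conjunct2, THEN conjunct2, THEN conjunct2, THEN conjunct2, THEN conjunct2, THEN conjunct2, THEN conjunct2, THEN conjunct2] by blast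

lemma le_univ: "le M N \<Longrightarrow> univ M \<subseteq> univ N" using leD unfolding substruc_def by blast

lemma restr_le: "le M N \<Longrightarrow> restr L N (univ M) = M"
  using leD substruc_restr_eq by blast

lemmas P = pgs[unfolded pregeom_system_def]

lemma pgeo: assumes "M \<in> K" shows "pgeo (univ M) (cl M)"
proof -
  have h: "(\<forall>X. X \<subseteq> univ M \<longrightarrow> X \<subseteq> cl M X \<and> cl M X \<subseteq> univ M \<and> cl M (cl M X) = cl M X) \<and>
        (\<forall>X Y. X \<subseteq> Y \<and> Y \<subseteq> univ M \<longrightarrow> cl M X \<subseteq> cl M Y) \<and>
        (\<forall>X a. X \<subseteq> univ M \<and> a \<in> cl M X \<longrightarrow> (\<exists>X0. X0 \<subseteq> X \<and> finite X0 \<and> a \<in> cl M X0)) \<and>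
        (\<forall>A a b. A \<subseteq> univ M \<and> a \<in> univ M \<and> b \<in> cl M (insert a A) - cl M A
                 \<longrightarrow> a \<in> cl M (insert b A))"
    using P[THEN conjunct1] assms by (rule bspec)
  from h have h1: "\<forall>X. X \<subseteq> univ M \<longrightarrow> X \<subseteq> cl M X \<and> cl M X \<subseteq> univ M \<and> cl M (cl M X) = cl M X"
    by (rule conjunct1)
  from h have h2: "\<forall>X Y. X \<subseteq> Y \<and> Y \<subseteq> univ M \<longrightarrow> cl M X \<subseteq> cl M Y"
    by (elim conjE)
  from h have h3: "\<forall>X a. X \<subseteq> univ M \<and> a \<in> cl M X \<longrightarrow> (\<exists>X0. X0 \<subseteq> X \<and> finite X0 \<and> a \<in> cl M X0)"
    by (elim conjE)
  from h have h4: "\<forall>A a b. A \<subseteq> univ M \<and> a \<in> univ M \<and> b \<in> cl M (insert a A) - cl M A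
                 \<longrightarrow> a \<in> cl M (insert b A)"
    by (elim conjE)
  show ?thesis
  proof
    fix X assume "X \<subseteq> univ M" thus "X \<subseteq> cl M X" "cl M X \<subseteq> univ M" "cl M (cl M X) = cl M X"
      using h1 by blast+
  next
    fix X Y assume "X \<subseteq> Y" "Y \<subseteq> univ M" thus "cl M X \<subseteq> cl M Y" using h2 by blast
  next
    fix X a assume "X \<subseteq> univ M" "a \<in> cl M X"
    thus "\<exists>X0. X0 \<subseteq> X \<and> finite X0 \<and> a \<in> cl M X0" using h3 by blast
  next
    fix A a b assume "A \<subseteq> univ M" "a \<in> univ M" "b \<in> cl M (insert a A) - cl M A"
    thus "a \<in> cl M (insert b A)" using h4 by blast
  qed
qed

lemma cl_le: "le M N \<Longrightarrow> X \<subseteq> univ M \<Longrightarrow> cl M X = cl N X"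
  using P[THEN conjunct2, THEN conjunct1] by blast

lemma closed_le: "le M N \<Longrightarrow> cl N (univ M) = univ M"
proof -
  assume h: "le M N"
  have "pgeo (univ M) (cl M)" using pgeo leD h by blast
  hence "cl M (univ M) = univ M" using pgeo.incl pgeo.sub by blast
  thus ?thesis using cl_le[OF h] by auto
qed

lemma closed_struc: "N \<in> K \<Longrightarrow> B \<subseteq> univ N \<Longrightarrow> cl N B = B \<Longrightarrow> le M0 N \<Longrightarrow> univ M0 \<subseteq> B
   \<Longrightarrow> le (restr L N B) N"
proof -
  assume h: "N \<in> K" "B \<subseteq> univ N" "cl N B = B" "le M0 N" "univ M0 \<subseteq> B"
  then obtain M where "le M N" "univ M = B" using P[THEN conjunct2, THEN conjunct2] by blast
  thus ?thesis using restr_le by metis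
qed

lemma kemb_id: "kemb L K le id M N \<longleftrightarrow> le M N"
proof
  assume "kemb L K le id M N"
  hence "le (restr L N (univ M)) N" "iso L id M (restr L N (univ M))" unfolding kemb_def by auto
  thus "le M N" using iso_id_eq by metis
next
  assume h: "le M N"
  have "M \<in> K" "N \<in> K" using leD[OF h] by auto
  moreover have "iso L id M M" using iso_id_self[OF K_struc[OF calculation(1)]] .
  ultimately show "kemb L K le id M N" unfolding kemb_def using restr_le[OF h] h by simp
qed

lemma by_incl_iff: "by_incl (pg_A L K le cl) M0 M1 M2 N \<longleftrightarrow> pg_amalgam le cl M0 M1 M2 N"
proof
  assume "by_incl (pg_A L K le cl) M0 M1 M2 N"
  hence "pg_amalgam le cl (restr L N (univ M0)) (restr L N (univ M1)) (restr L N (univ M2)) N"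
    and "comm_square L K le M0 M1 M2 id N id id" unfolding by_incl_def pg_A_def by auto
  moreover have "le M0 N" "le M1 N" "le M2 N" using calculation(2)
    unfolding comm_square_def kemb_id using le_trans by blast+
  ultimately show "pg_amalgam le cl M0 M1 M2 N" using restr_le by metis
next
  assume h: "pg_amalgam le cl M0 M1 M2 N"
  hence l: "le M0 M1" "le M0 M2" "le M1 N" "le M2 N" unfolding pg_amalgam_def by auto
  hence "le M0 N" using le_trans by blast
  thus "by_incl (pg_A L K le cl) M0 M1 M2 N"
    unfolding by_incl_def pg_A_def comm_square_def kemb_id using l h restr_le by auto
qed

lemma indep_ind: "indep cl N B \<longleftrightarrow> ind (cl N) {} B"
  unfolding indep_def ind_def by simp

lemma pg_amalgam_iff:
  "pg_amalgam le cl M0 M1 M2 T \<longleftrightarrow> le M0 M1 \<and> le M0 M2 \<and> le M1 T \<and> le M2 T \<and>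
     cl T (univ M1 \<union> univ M2) = univ T \<and> frk (cl T) (univ M0) (univ M1) (univ M2)"
proof (cases "le M0 M1 \<and> le M0 M2 \<and> le M1 T \<and> le M2 T")
  case False thus ?thesis unfolding pg_amalgam_def by blast
next
  case True
  hence l: "le M0 M1" "le M0 M2" "le M1 T" "le M2 T" by auto
  have T: "T \<in> K" using leD l by blast
  interpret p: pgeo "univ T" "cl T" using pgeo[OF T] .
  have l0: "le M0 T" using l le_trans by blast
  have cm: "p.closed (univ M0)" "p.closed (univ M1)" "p.closed (univ M2)"
     "univ M0 \<subseteq> univ M1" "univ M0 \<subseteq> univ M2"
    using closed_le[OF l0] closed_le[OF l(3)] closed_le[OF l(4)] le_univ[OF l0] le_univ[OF l(3)] le_univ[OF l(4)]
       le_univ[OF l(1)] le_univ[OF l(2)] unfolding p.closed_def by auto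
  have "(\<exists>B1 B2. B1 \<subseteq> univ T \<and> B2 \<subseteq> univ T \<and> indep cl T (B1 \<union> B2) \<and>
        cl T (B1 \<union> B2) = univ T \<and> cl T B1 = univ M1 \<and> cl T B2 = univ M2 \<and> cl T (B1 \<inter> B2) = univ M0)
     \<longleftrightarrow> cl T (univ M1 \<union> univ M2) = univ T \<and> frk (cl T) (univ M0) (univ M1) (univ M2)"
    (is "?E \<longleftrightarrow> ?R")
  proof
    assume ?E
    then obtain B1 B2 where "B1 \<subseteq> univ T" "B2 \<subseteq> univ T" "ind (cl T) {} (B1 \<union> B2)"
        "cl T (B1 \<union> B2) = univ T" "cl T B1 = univ M1" "cl T B2 = univ M2" "cl T (B1 \<inter> B2) = univ M0"
      unfolding indep_ind by blast
    thus ?R by (rule p.amalg_fwd)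
  next
    assume ?R thus ?E unfolding indep_ind using p.amalg_bwd[OF cm] by blast
  qed
  moreover have "pg_amalgam le cl M0 M1 M2 T \<longleftrightarrow> ?E" unfolding pg_amalgam_def using l by simp
  ultimately show ?thesis using l by simp
qed

end

context setting begin

lemma restr_sub: "le T N \<Longrightarrow> X \<subseteq> univ T \<Longrightarrow> restr L T X = restr L N X"
  using restr_le[of T N] restr_restr[of X "univ T" L N] by simp

lemma closed_N: "le M N \<Longrightarrow> pgeo.closed (univ N) (cl N) (univ M)"
proof -
  assume h: "le M N"
  have "N \<in> K" using leD[OF h] by blast
  then interpret p: pgeo "univ N" "cl N" using pgeo by blast
  show ?thesis unfolding p.closed_def using closed_le[OF h] le_univ[OF h] by simp
qed

lemma cl_eq_on: "le X N \<Longrightarrow> \<forall>Y. Y \<subseteq> univ X \<longrightarrow> cl X Y = cl N Y"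
  using cl_le by blast

lemma amalg_out:
  assumes "pg_amalgam le cl M0 M1 M2 X" "le X N"
  shows "cl N (univ M1 \<union> univ M2) = univ X \<and> frk (cl N) (univ M0) (univ M1) (univ M2)"
proof -
  have h: "le M0 M1" "le M0 M2" "le M1 X" "le M2 X" "cl X (univ M1 \<union> univ M2) = univ X"
    "frk (cl X) (univ M0) (univ M1) (univ M2)" using assms(1) unfolding pg_amalgam_iff by blast+
  have s: "univ M0 \<subseteq> univ X" "univ M1 \<subseteq> univ X" "univ M2 \<subseteq> univ X"
    using le_univ h le_trans by blast+
  have "frk (cl N) (univ M0) (univ M1) (univ M2)"
    using frk_transfer[of "univ X" "cl X" "cl N"] cl_le[OF assms(2)] s h(6) by blast
  moreover have "cl N (univ M1 \<union> univ M2) = univ X" using cl_le[OF assms(2)] s h(5) by simp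
  ultimately show ?thesis by blast
qed

lemma amalg_in:
  assumes "le X N" "le M0 M1" "le M0 M2" "le M1 X" "le M2 X"
    "cl N (univ M1 \<union> univ M2) = univ X" "frk (cl N) (univ M0) (univ M1) (univ M2)"
  shows "pg_amalgam le cl M0 M1 M2 X"
proof -
  have s: "univ M0 \<subseteq> univ X" "univ M1 \<subseteq> univ X" "univ M2 \<subseteq> univ X"
    using le_univ assms le_trans by blast+
  have "frk (cl X) (univ M0) (univ M1) (univ M2)"
    using frk_transfer[of "univ X" "cl X" "cl N"] cl_le[OF assms(1)] s assms(7) by blast
  moreover have "cl X (univ M1 \<union> univ M2) = univ X" using cl_le[OF assms(1)] s assms(6) by simp
  ultimately show ?thesis unfolding pg_amalgam_iff using assms by blast
qed

lemma closed_restr_le: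
  assumes "le M0 N" "B \<subseteq> univ N" "cl N B = B" "univ M0 \<subseteq> B"
  shows "le (restr L N B) N"
  using closed_struc[OF _ assms(2,3,1,4)] leD[OF assms(1)] by blast

lemma abs_min: "abs_minimal le (pg_A L K le cl)"
  unfolding abs_minimal_def
proof (intro allI impI, elim conjE)
  fix M0 M1 M2 f N g1 g2 Ns N'
  assume A: "pg_A L K le cl M0 M1 M2 f N g1 g2" and l: "le N Ns" "le N' Ns"
    and sub: "g1 ` univ M1 \<union> g2 ` univ M2 \<subseteq> univ N'"
  have pa: "pg_amalgam le cl (restr L N (g1 ` univ M0)) (restr L N (g1 ` univ M1)) (restr L N (g2 ` univ M2)) N"
    using A unfolding pg_A_def by blast
  hence "le (restr L N (g1 ` univ M1)) N" "le (restr L N (g2 ` univ M2)) N"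
     "cl N (g1 ` univ M1 \<union> g2 ` univ M2) = univ N"
    unfolding pg_amalgam_iff by simp_all
  hence S: "g1 ` univ M1 \<union> g2 ` univ M2 \<subseteq> univ N" "cl N (g1 ` univ M1 \<union> g2 ` univ M2) = univ N"
    using le_univ by fastforce+
  have Ns: "Ns \<in> K" using leD l by blast
  interpret p: pgeo "univ Ns" "cl Ns" using pgeo[OF Ns] .
  have "cl Ns (g1 ` univ M1 \<union> g2 ` univ M2) \<subseteq> cl Ns (univ N')"
    using p.mono[OF sub] le_univ[OF l(2)] by blast
  also have "\<dots> = univ N'" using closed_le[OF l(2)] .
  finally have "univ N \<subseteq> univ N'" using S cl_le[OF l(1) S(1)] by simp
  thus "le N N'" using coh l by blast
qed

lemma adm_decomp: "admits_decomp le (pg_A L K le cl)"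
  unfolding admits_decomp_def
proof (intro allI impI, elim conjE)
  fix M0 M1 N assume l: "le M0 M1" "le M1 N"
  have l0: "le M0 N" using l le_trans by blast
  have NK: "N \<in> K" using leD l by blast
  interpret p: pgeo "univ N" "cl N" using pgeo[OF NK] .
  obtain m2 where m2: "p.closed m2" "univ M0 \<subseteq> m2" "cl N (univ M1 \<union> m2) = univ N"
    "frk (cl N) (univ M0) (univ M1) m2"
    using p.decomp_sets[OF closed_N[OF l0] closed_N[OF l(2)] le_univ[OF l(1)]] by blast
  have M2: "le (restr L N m2) N" using closed_restr_le[OF l0] m2 p.closedD[OF m2(1)] by blast
  have l02: "le M0 (restr L N m2)" using coh[OF l0 M2] m2 by simp
  have "pg_amalgam le cl M0 M1 (restr L N m2) N"
    using amalg_in[OF le_refl[OF NK] l(1) l02 l(2) M2] m2 by simp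
  thus "\<exists>M2. le M0 M2 \<and> le M2 N \<and> by_incl (pg_A L K le cl) M0 M1 M2 N"
    using l02 M2 by_incl_iff by blast
qed

lemma is_oplus_iff: "is_oplus le (pg_A L K le cl) M0 M1 M2 N X \<longleftrightarrow> le X N \<and> pg_amalgam le cl M0 M1 M2 X"
proof
  assume "is_oplus le (pg_A L K le cl) M0 M1 M2 N X"
  thus "le X N \<and> pg_amalgam le cl M0 M1 M2 X" unfolding is_oplus_def by_incl_iff by blast
next
  assume h: "le X N \<and> pg_amalgam le cl M0 M1 M2 X"
  have "\<And>Y. le Y N \<Longrightarrow> pg_amalgam le cl M0 M1 M2 Y \<Longrightarrow> Y = X"
  proof -
    fix Y assume y: "le Y N" "pg_amalgam le cl M0 M1 M2 Y"
    have "univ Y = univ X" using amalg_out[OF y(2,1)] amalg_out[of M0 M1 M2 X N] h by simp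
    thus "Y = X" using restr_le[OF y(1)] restr_le[of X N] h by metis
  qed
  thus "is_oplus le (pg_A L K le cl) M0 M1 M2 N X" unfolding is_oplus_def by_incl_iff using h by blast
qed

lemma three_mono: "three_monotonic le (pg_A L K le cl)"
  unfolding three_monotonic_def
proof (intro allI impI, elim conjE)
  fix M0 M1 M2 M3 N N12
  assume l: "le M0 M1" "le M0 M2" "le M0 M3" "le M1 N" "le M2 N" "le M3 N"
    and o: "is_oplus le (pg_A L K le cl) M0 M1 M2 N N12"
    and b: "by_incl (pg_A L K le cl) M0 M3 N12 N"
  have NK: "N \<in> K" using leD l by blast
  interpret p: pgeo "univ N" "cl N" using pgeo[OF NK] .
  have l0: "le M0 N" using l le_trans by blast
  have o': "le N12 N" "pg_amalgam le cl M0 M1 M2 N12" using o unfolding is_oplus_iff by blast+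
  have h1: "cl N (univ M1 \<union> univ M2) = univ N12" "frk (cl N) (univ M0) (univ M1) (univ M2)"
    using amalg_out[OF o'(2,1)] by blast+
  have b': "pg_amalgam le cl M0 M3 N12 N" using b by_incl_iff by blast
  have h2: "cl N (univ M3 \<union> univ N12) = univ N" "frk (cl N) (univ M0) (univ M3) (univ N12)"
    using amalg_out[OF b' le_refl[OF NK]] by blast+
  have cl: "p.closed (univ M0)" "p.closed (univ M1)" "p.closed (univ M2)" "p.closed (univ M3)"
    using closed_N l l0 by blast+
  have sb: "univ M0 \<subseteq> univ M1" "univ M0 \<subseteq> univ M2" "univ M0 \<subseteq> univ M3" using le_univ l by blast+
  note T = p.three_mono_sets[OF cl sb h1(2), unfolded h1(1), OF h2(2) h2(1)]
  define n13 where "n13 = cl N (univ M1 \<union> univ M3)"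
  define n23 where "n23 = cl N (univ M2 \<union> univ M3)"
  have n13: "n13 \<subseteq> univ N" "cl N n13 = n13" "univ M1 \<union> univ M3 \<subseteq> n13"
    using p.closedD[OF p.closedI[of "univ M1 \<union> univ M3"]] p.incl[of "univ M1 \<union> univ M3"] p.closedD(1)[OF cl(2)] p.closedD(1)[OF cl(4)]
    unfolding n13_def by auto
  have n23: "n23 \<subseteq> univ N" "cl N n23 = n23" "univ M2 \<union> univ M3 \<subseteq> n23"
    using p.closedD[OF p.closedI[of "univ M2 \<union> univ M3"]] p.incl[of "univ M2 \<union> univ M3"] p.closedD(1)[OF cl(3)] p.closedD(1)[OF cl(4)]
    unfolding n23_def by auto
  define N13 where "N13 = restr L N n13"
  define N23 where "N23 = restr L N n23"
  have "univ M0 \<subseteq> n13" "univ M0 \<subseteq> n23" using sb n13(3) n23(3) by auto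
  hence L13: "le N13 N" and L23: "le N23 N" unfolding N13_def N23_def
    using closed_restr_le[OF l0 n13(1) n13(2)] closed_restr_le[OF l0 n23(1) n23(2)] by auto
  have u: "univ N13 = n13" "univ N23 = n23" unfolding N13_def N23_def by simp_all
  have l13: "le M1 N13" "le M3 N13" using coh[OF _ L13] l n13 u by auto
  have l23: "le M2 N23" "le M3 N23" using coh[OF _ L23] l n23 u by auto
  have "pg_amalgam le cl M0 M1 M3 N13"
    using amalg_in[OF L13 l(1) l(3) l13] T(1) u n13_def by simp
  hence O13: "is_oplus le (pg_A L K le cl) M0 M1 M3 N N13" using is_oplus_iff L13 by blast
  have "pg_amalgam le cl M0 M2 M3 N23"
    using amalg_in[OF L23 l(2) l(3) l23] T(2) u n23_def by simp
  hence O23: "is_oplus le (pg_A L K le cl) M0 M2 M3 N N23" using is_oplus_iff L23 by blast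
  have "pg_amalgam le cl M3 N13 N23 N"
    using amalg_in[OF le_refl[OF NK] l13(2) l23(2) L13 L23] T(3) T(4) u n13_def n23_def by simp
  thus "\<exists>N13 N23. is_oplus le (pg_A L K le cl) M0 M1 M3 N N13 \<and> is_oplus le (pg_A L K le cl) M0 M2 M3 N N23 \<and>
                    by_incl (pg_A L K le cl) M3 N13 N23 N"
    using O13 O23 by_incl_iff by blast
qed

end

lemma iso_sub:
  assumes "iso L g M R" "substruc L M' M" "is_struc L (restr L R (g ` univ M'))"
  shows "iso L g M' (restr L R (g ` univ M'))"
proof (rule isoI)
  have sM: "univ M' \<subseteq> univ M" and fM: "\<And>f xs. tup (fst L f) (univ M') xs \<Longrightarrow> fint M' f xs = fint M f xs"
    and rM: "\<And>r xs. tup (snd L r) (univ M') xs \<Longrightarrow> rint M' r xs = rint M r xs"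
    using assms(2) unfolding substruc_def by auto
  show "is_struc L M'" using assms(2) unfolding substruc_def by blast
  show "is_struc L (restr L R (g ` univ M'))" by fact
  have "inj_on g (univ M)" using isoD(3)[OF assms(1)] unfolding bij_betw_def by blast
  hence "inj_on g (univ M')" using sM inj_on_subset by blast
  thus "bij_betw g (univ M') (univ (restr L R (g ` univ M')))" unfolding bij_betw_def by simp
  have tg: "\<And>n xs. tup n (univ M') xs \<Longrightarrow> tup n (g ` univ M') (map g xs)" unfolding tup_def by auto
  show "\<And>f xs. tup (fst L f) (univ M') xs \<Longrightarrow> g (fint M' f xs) = fint (restr L R (g ` univ M')) f (map g xs)"
  proof -
    fix f xs assume t: "tup (fst L f) (univ M') xs"
    have t2: "tup (fst L f) (univ M) xs" using tup_mono[OF t sM] .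
    have "g (fint M' f xs) = g (fint M f xs)" using fM[OF t] by simp
    also have "\<dots> = fint R f (map g xs)" using isoD(4)[OF assms(1) t2] .
    also have "\<dots> = fint (restr L R (g ` univ M')) f (map g xs)" using tg[OF t] unfolding restr_def by simp
    finally show "g (fint M' f xs) = fint (restr L R (g ` univ M')) f (map g xs)" .
  qed
  show "\<And>r xs. tup (snd L r) (univ M') xs \<Longrightarrow> rint (restr L R (g ` univ M')) r (map g xs) = rint M' r xs"
  proof -
    fix r xs assume t: "tup (snd L r) (univ M') xs"
    have t2: "tup (snd L r) (univ M) xs" using tup_mono[OF t sM] .
    have "rint (restr L R (g ` univ M')) r (map g xs) = rint R r (map g xs)" using tg[OF t] unfolding restr_def by simp
    also have "\<dots> = rint M r xs" using isoD(5)[OF assms(1) t2] .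
    also have "\<dots> = rint M' r xs" using rM[OF t] by simp
    finally show "rint (restr L R (g ` univ M')) r (map g xs) = rint M' r xs" .
  qed
qed

context setting begin

lemma kembD: assumes "kemb L K le g M N"
  shows "M \<in> K" "N \<in> K" "inj_on g (univ M)" "le (restr L N (g ` univ M)) N"
    "iso L g M (restr L N (g ` univ M))" "g ` univ M \<subseteq> univ N"
  using assms le_univ[of "restr L N (g ` univ M)" N] unfolding kemb_def by auto

lemma kemb_sub: assumes "le M' M" "kemb L K le g M N"
  shows "le (restr L N (g ` univ M')) N"
proof -
  let ?R = "restr L N (g ` univ M)"
  have "le (restr L ?R (g ` univ M')) ?R" using le_iso[OF assms(1) kembD(5)[OF assms(2)]] .
  moreover have "restr L ?R (g ` univ M') = restr L N (g ` univ M')"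
    using restr_restr le_univ[OF assms(1)] by (metis image_mono)
  ultimately show ?thesis using kembD(4)[OF assms(2)] le_trans by metis
qed

lemma kemb_restrict: assumes "le M' M" "kemb L K le g M N"
  shows "kemb L K le (restrict g (univ M')) M' N"
proof -
  have im: "restrict g (univ M') ` univ M' = g ` univ M'" by auto
  have l: "le (restr L N (g ` univ M')) N" using kemb_sub[OF assms] .
  have "iso L g M' (restr L (restr L N (g ` univ M)) (g ` univ M'))"
  proof (rule iso_sub[OF kembD(5)[OF assms(2)]])
    show "substruc L M' M" using leD[OF assms(1)] by blast
    have "restr L (restr L N (g ` univ M)) (g ` univ M') = restr L N (g ` univ M')"
      using restr_restr le_univ[OF assms(1)] by (metis image_mono)
    thus "is_struc L (restr L (restr L N (g ` univ M)) (g ` univ M'))" using K_struc leD[OF l] by simp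
  qed
  moreover have "restr L (restr L N (g ` univ M)) (g ` univ M') = restr L N (g ` univ M')"
    using restr_restr le_univ[OF assms(1)] by (metis image_mono)
  ultimately have "iso L g M' (restr L N (g ` univ M'))" by simp
  hence "iso L (restrict g (univ M')) M' (restr L N (g ` univ M'))" by (rule iso_cong[rotated]) simp
  moreover have "inj_on (restrict g (univ M')) (univ M')"
    using kembD(3)[OF assms(2)] le_univ[OF assms(1)] inj_on_subset unfolding inj_on_def by auto
  ultimately show ?thesis unfolding kemb_def im using l leD[OF assms(1)] kembD(2)[OF assms(2)] by blast
qed

lemma kemb_target: assumes "kemb L K le g M N" "le N' N" "g ` univ M \<subseteq> univ N'"
  shows "kemb L K le g M N'"
proof -
  have e: "restr L N' (g ` univ M) = restr L N (g ` univ M)" using restr_sub[OF assms(2,3)] .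
  have "le (restr L N (g ` univ M)) N'" using coh[OF kembD(4)[OF assms(1)] assms(2)] assms(3) by simp
  thus ?thesis using kembD[OF assms(1)] leD[OF assms(2)] unfolding kemb_def e by blast
qed

end

context setting begin

lemma cs_facts: assumes "comm_square L K le M0 M1 M2 f N g1 g2"
  shows "le M0 M1" "kemb L K le f M0 M2" "kemb L K le g1 M1 N" "kemb L K le g2 M2 N"
    "\<And>x. x \<in> univ M0 \<Longrightarrow> g2 (f x) = g1 x"
    "g1 ` univ M0 \<subseteq> g2 ` univ M2"
    "le (restr L N (g1 ` univ M0)) N" "le (restr L N (g1 ` univ M1)) N" "le (restr L N (g2 ` univ M2)) N"
proof -
  show h: "le M0 M1" "kemb L K le f M0 M2" "kemb L K le g1 M1 N" "kemb L K le g2 M2 N"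
    "\<And>x. x \<in> univ M0 \<Longrightarrow> g2 (f x) = g1 x" using assms unfolding comm_square_def by blast+
  show "g1 ` univ M0 \<subseteq> g2 ` univ M2"
  proof
    fix y assume "y \<in> g1 ` univ M0"
    then obtain x where x: "x \<in> univ M0" "y = g1 x" by blast
    have "f x \<in> univ M2" using kembD(6)[OF h(2)] x by blast
    thus "y \<in> g2 ` univ M2" using h(5)[OF x(1)] x by force
  qed
  show "le (restr L N (g1 ` univ M0)) N" using kemb_sub[OF h(1) h(3)] .
  show "le (restr L N (g1 ` univ M1)) N" "le (restr L N (g2 ` univ M2)) N" using kembD(4) h by blast+
qed

lemma A1:
  assumes cs: "comm_square L K le M0 M1 M2 f N g1 g2" and m: "le M0 M'" "le M' M1" and N': "le N' N"
  shows "pg_A L K le cl M0 M' M2 f N' (restrict g1 (univ M')) g2 \<longleftrightarrow>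
    g2 ` univ M2 \<subseteq> univ N' \<and> g1 ` univ M' \<subseteq> univ N' \<and>
    cl N (g1 ` univ M' \<union> g2 ` univ M2) = univ N' \<and> frk (cl N) (g1 ` univ M0) (g1 ` univ M') (g2 ` univ M2)"
    (is "?A \<longleftrightarrow> ?B")
proof -
  note c = cs_facts[OF cs]
  have s0: "univ M0 \<subseteq> univ M'" using le_univ[OF m(1)] .
  have im: "restrict g1 (univ M') ` univ M0 = g1 ` univ M0" "restrict g1 (univ M') ` univ M' = g1 ` univ M'"
    using s0 by auto
  have R': "le (restr L N (g1 ` univ M')) N" using kemb_sub[OF m(2) c(3)] .
  have a0a': "g1 ` univ M0 \<subseteq> g1 ` univ M'" using s0 by blast
  show ?thesis
  proof
    assume A: ?A
    hence cs': "comm_square L K le M0 M' M2 f N' (restrict g1 (univ M')) g2" unfolding pg_A_def by blast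
    have s1: "g1 ` univ M' \<subseteq> univ N'" using kembD(6)[of "restrict g1 (univ M')" M' N'] cs' im
      unfolding comm_square_def by auto
    have s2: "g2 ` univ M2 \<subseteq> univ N'" using kembD(6)[of g2 M2 N'] cs' unfolding comm_square_def by auto
    have "pg_amalgam le cl (restr L N' (g1 ` univ M0)) (restr L N' (g1 ` univ M')) (restr L N' (g2 ` univ M2)) N'"
      using A im unfolding pg_A_def by simp
    hence "pg_amalgam le cl (restr L N (g1 ` univ M0)) (restr L N (g1 ` univ M')) (restr L N (g2 ` univ M2)) N'"
      using restr_sub[OF N'] s1 s2 a0a' by (metis order_trans)
    from amalg_out[OF this N'] show ?B using s1 s2 by simp
  next
    assume B: ?B
    have k1: "kemb L K le (restrict g1 (univ M')) M' N'"
      using kemb_target[OF kemb_restrict[OF m(2) c(3)] N'] im B by simp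
    have k2: "kemb L K le g2 M2 N'" using kemb_target[OF c(4) N'] B by blast
    have cs': "comm_square L K le M0 M' M2 f N' (restrict g1 (univ M')) g2"
      unfolding comm_square_def using m(1) c(2) k1 k2 c(5) s0 by auto
    have "pg_amalgam le cl (restr L N (g1 ` univ M0)) (restr L N (g1 ` univ M')) (restr L N (g2 ` univ M2)) N'"
    proof (rule amalg_in[OF N'])
      show "le (restr L N (g1 ` univ M0)) (restr L N (g1 ` univ M'))" using coh[OF c(7) R'] a0a' by simp
      show "le (restr L N (g1 ` univ M0)) (restr L N (g2 ` univ M2))" using coh[OF c(7) c(9)] c(6) by simp
      show "le (restr L N (g1 ` univ M')) N'" using coh[OF R' N'] B by simp
      show "le (restr L N (g2 ` univ M2)) N'" using coh[OF c(9) N'] B by simp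
      show "cl N (univ (restr L N (g1 ` univ M')) \<union> univ (restr L N (g2 ` univ M2))) = univ N'" using B by simp
      show "frk (cl N) (univ (restr L N (g1 ` univ M0))) (univ (restr L N (g1 ` univ M')))
                 (univ (restr L N (g2 ` univ M2)))" using B by simp
    qed
    hence "pg_amalgam le cl (restr L N' (g1 ` univ M0)) (restr L N' (g1 ` univ M')) (restr L N' (g2 ` univ M2)) N'"
      using restr_sub[OF N'] B a0a' by (metis order_trans)
    thus ?A unfolding pg_A_def using cs' im by simp
  qed
qed

lemma A2:
  assumes cs: "comm_square L K le M0 M1 M2 f N g1 g2" and m: "le M0 M'" "le M' M1" and N': "le N' N"
    and s: "g1 ` univ M' \<subseteq> univ N'"
  shows "pg_A L K le cl M' M1 N' (restrict g1 (univ M')) N g1 id \<longleftrightarrow>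
    cl N (g1 ` univ M1 \<union> univ N') = univ N \<and> frk (cl N) (g1 ` univ M') (g1 ` univ M1) (univ N')"
proof -
  note c = cs_facts[OF cs]
  have NK: "N \<in> K" using leD N' by blast
  have im: "restrict g1 (univ M') ` univ M' = g1 ` univ M'" by auto
  have R': "le (restr L N (g1 ` univ M')) N" using kemb_sub[OF m(2) c(3)] .
  have k1: "kemb L K le (restrict g1 (univ M')) M' N'"
    using kemb_target[OF kemb_restrict[OF m(2) c(3)] N'] im s by simp
  have cs': "comm_square L K le M' M1 N' (restrict g1 (univ M')) N g1 id"
    unfolding comm_square_def kemb_id using m(2) k1 c(3) N' by auto
  have e: "restr L N (id ` univ N') = N'" using restr_le[OF N'] by simp
  have a'a1: "g1 ` univ M' \<subseteq> g1 ` univ M1" using le_univ[OF m(2)] by blast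
  have l1: "le (restr L N (g1 ` univ M')) (restr L N (g1 ` univ M1))" using coh[OF R' c(8)] a'a1 by simp
  have l2: "le (restr L N (g1 ` univ M')) N'" using coh[OF R' N'] s by simp
  have "pg_A L K le cl M' M1 N' (restrict g1 (univ M')) N g1 id \<longleftrightarrow>
     pg_amalgam le cl (restr L N (g1 ` univ M')) (restr L N (g1 ` univ M1)) N' N"
    unfolding pg_A_def using cs' im e by simp
  also have "\<dots> \<longleftrightarrow> cl N (g1 ` univ M1 \<union> univ N') = univ N \<and> frk (cl N) (g1 ` univ M') (g1 ` univ M1) (univ N')"
  proof
    assume "pg_amalgam le cl (restr L N (g1 ` univ M')) (restr L N (g1 ` univ M1)) N' N"
    from amalg_out[OF this le_refl[OF NK]]
    show "cl N (g1 ` univ M1 \<union> univ N') = univ N \<and> frk (cl N) (g1 ` univ M') (g1 ` univ M1) (univ N')" by simp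
  next
    assume "cl N (g1 ` univ M1 \<union> univ N') = univ N \<and> frk (cl N) (g1 ` univ M') (g1 ` univ M1) (univ N')"
    thus "pg_amalgam le cl (restr L N (g1 ` univ M')) (restr L N (g1 ` univ M1)) N' N"
      using amalg_in[OF le_refl[OF NK] l1 l2 c(8) N'] by simp
  qed
  finally show ?thesis .
qed

lemma A0:
  assumes cs: "comm_square L K le M0 M1 M2 f N g1 g2"
  shows "pg_A L K le cl M0 M1 M2 f N g1 g2 \<longleftrightarrow>
    cl N (g1 ` univ M1 \<union> g2 ` univ M2) = univ N \<and> frk (cl N) (g1 ` univ M0) (g1 ` univ M1) (g2 ` univ M2)"
proof -
  note c = cs_facts[OF cs]
  have NK: "N \<in> K" using kembD(2)[OF c(3)] .
  have "g1 ` univ M0 \<subseteq> g1 ` univ M1" using le_univ[OF c(1)] by blast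
  hence l1: "le (restr L N (g1 ` univ M0)) (restr L N (g1 ` univ M1))" using coh[OF c(7) c(8)] by simp
  have l2: "le (restr L N (g1 ` univ M0)) (restr L N (g2 ` univ M2))" using coh[OF c(7) c(9)] c(6) by simp
  show ?thesis
  proof
    assume "pg_A L K le cl M0 M1 M2 f N g1 g2"
    hence "pg_amalgam le cl (restr L N (g1 ` univ M0)) (restr L N (g1 ` univ M1)) (restr L N (g2 ` univ M2)) N"
      unfolding pg_A_def by blast
    from amalg_out[OF this le_refl[OF NK]] show "cl N (g1 ` univ M1 \<union> g2 ` univ M2) = univ N \<and>
      frk (cl N) (g1 ` univ M0) (g1 ` univ M1) (g2 ` univ M2)" by simp
  next
    assume "cl N (g1 ` univ M1 \<union> g2 ` univ M2) = univ N \<and> frk (cl N) (g1 ` univ M0) (g1 ` univ M1) (g2 ` univ M2)"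
    hence "pg_amalgam le cl (restr L N (g1 ` univ M0)) (restr L N (g1 ` univ M1)) (restr L N (g2 ` univ M2)) N"
      using amalg_in[OF le_refl[OF NK] l1 l2 c(8) c(9)] by simp
    thus "pg_A L K le cl M0 M1 M2 f N g1 g2" unfolding pg_A_def using cs by blast
  qed
qed

lemma regular_pg: "regular L K le (pg_A L K le cl)"
  unfolding regular_def
proof (intro allI impI)
  fix M0 M1 M2 f N g1 g2
  assume cs: "comm_square L K le M0 M1 M2 f N g1 g2"
  note c = cs_facts[OF cs]
  have NK: "N \<in> K" using kembD(2)[OF c(3)] .
  interpret p: pgeo "univ N" "cl N" using pgeo[OF NK] .
  define a0 a1 cc n where "a0 = g1 ` univ M0" "a1 = g1 ` univ M1" "cc = g2 ` univ M2" "n = univ N"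
  have cl0: "p.closed a0" "p.closed a1" "p.closed cc" "p.closed n"
    using closed_N[OF c(7)] closed_N[OF c(8)] closed_N[OF c(9)] closed_N[OF le_refl[OF NK]]
    unfolding a0_a1_cc_n_def by simp_all
  have U: "a0 \<subseteq> univ N" "a1 \<subseteq> univ N" "cc \<subseteq> univ N" using cl0 p.closedD(1) by blast+
  have a0a1: "a0 \<subseteq> a1" using le_univ[OF c(1)] unfolding a0_a1_cc_n_def by blast
  have a0c: "a0 \<subseteq> cc" using c(6) unfolding a0_a1_cc_n_def .
  have M0K: "M0 \<in> K" "M1 \<in> K" using leD[OF c(1)] by blast+
  have A0': "pg_A L K le cl M0 M1 M2 f N g1 g2 \<longleftrightarrow> cl N (a1 \<union> cc) = n \<and> frk (cl N) a0 a1 cc"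
    using A0[OF cs] unfolding a0_a1_cc_n_def .
  have facts': "\<And>M'. le M0 M' \<Longrightarrow> le M' M1 \<Longrightarrow> p.closed (g1 ` univ M') \<and> a0 \<subseteq> g1 ` univ M' \<and> g1 ` univ M' \<subseteq> a1"
  proof -
    fix M' assume m: "le M0 M'" "le M' M1"
    show "p.closed (g1 ` univ M') \<and> a0 \<subseteq> g1 ` univ M' \<and> g1 ` univ M' \<subseteq> a1"
      using closed_N[OF kemb_sub[OF m(2) c(3)]] le_univ[OF m(1)] le_univ[OF m(2)]
      unfolding a0_a1_cc_n_def by auto
  qed
  show "(pg_A L K le cl M0 M1 M2 f N g1 g2 \<longleftrightarrow>
        (\<exists>M' N'. le M0 M' \<and> le M' M1 \<and> le (restr L N (g2 ` univ M2)) N' \<and> le N' N \<and>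
           pg_A L K le cl M0 M' M2 f N' (restrict g1 (univ M')) g2 \<and>
           pg_A L K le cl M' M1 N' (restrict g1 (univ M')) N g1 id)) \<and>
     (pg_A L K le cl M0 M1 M2 f N g1 g2 \<longleftrightarrow>
        (\<forall>M'. le M0 M' \<and> le M' M1 \<longrightarrow>
           (\<exists>N'. le N' N \<and> pg_A L K le cl M0 M' M2 f N' (restrict g1 (univ M')) g2) \<and>
           (\<forall>N'. le N' N \<and> pg_A L K le cl M0 M' M2 f N' (restrict g1 (univ M')) g2 \<longrightarrow>
                 pg_A L K le cl M' M1 N' (restrict g1 (univ M')) N g1 id)))"
  proof (intro conjI iffI)
    assume A: "pg_A L K le cl M0 M1 M2 f N g1 g2"
    hence i: "cl N (a1 \<union> cc) = n" "frk (cl N) a0 a1 cc" using A0' by blast+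
    let ?R2 = "restr L N (g2 ` univ M2)"
    have l0: "le M0 M0" using le_refl M0K by blast
    have lR: "le ?R2 ?R2" using le_refl leD[OF c(9)] by blast
    have ca: "cl N (a0 \<union> cc) = cc" using a0c p.closedD(2)[OF cl0(3)] by (simp add: Un_absorb1)
    have "pg_A L K le cl M0 M0 M2 f ?R2 (restrict g1 (univ M0)) g2"
      using A1[OF cs l0 c(1) c(9)] a0c ca p.frk_triv[OF cl0(1) cl0(3) a0c] unfolding a0_a1_cc_n_def by simp
    moreover have "pg_A L K le cl M0 M1 ?R2 (restrict g1 (univ M0)) N g1 id"
      using A2[OF cs l0 c(1) c(9)] a0c i unfolding a0_a1_cc_n_def by simp
    ultimately show "\<exists>M' N'. le M0 M' \<and> le M' M1 \<and> le ?R2 N' \<and> le N' N \<and>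
           pg_A L K le cl M0 M' M2 f N' (restrict g1 (univ M')) g2 \<and>
           pg_A L K le cl M' M1 N' (restrict g1 (univ M')) N g1 id"
      using l0 c(1) lR c(9) by blast
  next
    assume "\<exists>M' N'. le M0 M' \<and> le M' M1 \<and> le (restr L N (g2 ` univ M2)) N' \<and> le N' N \<and>
           pg_A L K le cl M0 M' M2 f N' (restrict g1 (univ M')) g2 \<and>
           pg_A L K le cl M' M1 N' (restrict g1 (univ M')) N g1 id"
    then obtain M' N' where h: "le M0 M'" "le M' M1" "le N' N"
      "pg_A L K le cl M0 M' M2 f N' (restrict g1 (univ M')) g2"
      "pg_A L K le cl M' M1 N' (restrict g1 (univ M')) N g1 id" by blast
    have h1: "cc \<subseteq> univ N'" "g1 ` univ M' \<subseteq> univ N'" "cl N (g1 ` univ M' \<union> cc) = univ N'"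
      "frk (cl N) a0 (g1 ` univ M') cc" using A1[OF cs h(1,2,3)] h(4) unfolding a0_a1_cc_n_def by blast+
    have h2: "cl N (a1 \<union> univ N') = n" "frk (cl N) (g1 ` univ M') a1 (univ N')"
      using A2[OF cs h(1,2,3) h1(2)] h(5) unfolding a0_a1_cc_n_def by blast+
    note f' = facts'[OF h(1,2)]
    have "cl N (a1 \<union> cc) = n \<and> frk (cl N) a0 a1 cc"
      using p.frk_trans[OF cl0(1) conjunct1[OF f'] cl0(2) cl0(3) closed_N[OF h(3)] cl0(4)
          conjunct1[OF conjunct2[OF f']] conjunct2[OF conjunct2[OF f']] a0c h1(3,4) h2] .
    thus "pg_A L K le cl M0 M1 M2 f N g1 g2" using A0' by blast
  next
    assume A: "pg_A L K le cl M0 M1 M2 f N g1 g2"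
    hence i: "cl N (a1 \<union> cc) = n" "frk (cl N) a0 a1 cc" using A0' by blast+
    show "\<forall>M'. le M0 M' \<and> le M' M1 \<longrightarrow>
           (\<exists>N'. le N' N \<and> pg_A L K le cl M0 M' M2 f N' (restrict g1 (univ M')) g2) \<and>
           (\<forall>N'. le N' N \<and> pg_A L K le cl M0 M' M2 f N' (restrict g1 (univ M')) g2 \<longrightarrow>
                 pg_A L K le cl M' M1 N' (restrict g1 (univ M')) N g1 id)"
    proof (intro allI impI conjI, elim conjE)
      fix M' assume m: "le M0 M'" "le M' M1"
      note f' = facts'[OF m]
      define a' where "a' = g1 ` univ M'"
      have f'': "p.closed a'" "a0 \<subseteq> a'" "a' \<subseteq> a1" using f' unfolding a'_def by blast+
      have a'U: "a' \<subseteq> univ N" using p.closedD(1)[OF f''(1)] .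
      define B where "B = cl N (a' \<union> cc)"
      have B: "B \<subseteq> univ N" "cl N B = B" "cc \<subseteq> B" "a' \<subseteq> B"
        using p.closedD[OF p.closedI[of "a' \<union> cc"]] p.incl[of "a' \<union> cc"] a'U U unfolding B_def by auto
      have LB: "le (restr L N B) N" using closed_restr_le[OF c(9)] B unfolding a0_a1_cc_n_def by simp
      have "frk (cl N) a0 a' cc" using p.frk_anti[OF i(2) f''(3) U(2) U(3)] .
      hence "pg_A L K le cl M0 M' M2 f (restr L N B) (restrict g1 (univ M')) g2"
        using A1[OF cs m LB] B unfolding a0_a1_cc_n_def a'_def B_def by simp
      thus "\<exists>N'. le N' N \<and> pg_A L K le cl M0 M' M2 f N' (restrict g1 (univ M')) g2" using LB by blast
    next
      fix M' N' assume mm: "le M0 M' \<and> le M' M1"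
        and NN: "le N' N \<and> pg_A L K le cl M0 M' M2 f N' (restrict g1 (univ M')) g2"
      have m: "le M0 M'" "le M' M1" using mm by blast+
      have N': "le N' N" and A': "pg_A L K le cl M0 M' M2 f N' (restrict g1 (univ M')) g2" using NN by blast+
      note f' = facts'[OF m]
      have h1: "cc \<subseteq> univ N'" "g1 ` univ M' \<subseteq> univ N'" "cl N (g1 ` univ M' \<union> cc) = univ N'"
        using A1[OF cs m N'] A' unfolding a0_a1_cc_n_def by blast+
      have "cl N (a1 \<union> univ N') = n \<and> frk (cl N) (g1 ` univ M') a1 (univ N')"
        using p.reg_iii_sets[OF cl0(1) conjunct1[OF f'] cl0(2) cl0(3)
          conjunct1[OF conjunct2[OF f']] conjunct2[OF conjunct2[OF f']] a0c i h1(3)] .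
      thus "pg_A L K le cl M' M1 N' (restrict g1 (univ M')) N g1 id"
        using A2[OF cs m N' h1(2)] unfolding a0_a1_cc_n_def by blast
    qed
  next
    assume H: "\<forall>M'. le M0 M' \<and> le M' M1 \<longrightarrow>
           (\<exists>N'. le N' N \<and> pg_A L K le cl M0 M' M2 f N' (restrict g1 (univ M')) g2) \<and>
           (\<forall>N'. le N' N \<and> pg_A L K le cl M0 M' M2 f N' (restrict g1 (univ M')) g2 \<longrightarrow>
                 pg_A L K le cl M' M1 N' (restrict g1 (univ M')) N g1 id)"
    have l1: "le M1 M1" using le_refl M0K by blast
    obtain N' where N': "le N' N" "pg_A L K le cl M0 M1 M2 f N' (restrict g1 (univ M1)) g2"
      using H c(1) l1 by blast
    have B2: "pg_A L K le cl M1 M1 N' (restrict g1 (univ M1)) N g1 id" using H c(1) l1 N' by blast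
    have h1: "cc \<subseteq> univ N'" "a1 \<subseteq> univ N'" "cl N (a1 \<union> cc) = univ N'" "frk (cl N) a0 a1 cc"
      using A1[OF cs c(1) l1 N'(1)] N'(2) unfolding a0_a1_cc_n_def by blast+
    have "cl N (a1 \<union> univ N') = n" using A2[OF cs c(1) l1 N'(1)] B2 h1(2) unfolding a0_a1_cc_n_def by blast
    moreover have "a1 \<union> univ N' = univ N'" using h1(2) by blast
    ultimately have "univ N' = n" using closed_le[OF N'(1)] by simp
    thus "pg_A L K le cl M0 M1 M2 f N g1 g2" using A0' h1 by simp
  qed
qed

end

lemma fam_chain_fin:
  assumes "J \<noteq> {}" "\<And>k l. k \<in> J \<Longrightarrow> l \<in> J \<Longrightarrow> A k \<subseteq> A l \<or> A l \<subseteq> A k"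
    "finite F" "F \<subseteq> (\<Union>k\<in>J. A k)"
  shows "\<exists>k\<in>J. F \<subseteq> A k"
  using assms(3,4)
proof (induction F rule: finite_induct)
  case empty thus ?case using assms(1) by blast
next
  case (insert x F)
  then obtain k where k: "k \<in> J" "F \<subseteq> A k" by blast
  obtain l where l: "l \<in> J" "x \<in> A l" using insert by blast
  show ?case using assms(2)[OF k(1) l(1)] k l by blast
qed

context pgeo begin

lemma limit_sets:
  assumes J: "J \<noteq> {}" "\<And>k l. k \<in> J \<Longrightarrow> l \<in> J \<Longrightarrow> (al k \<subseteq> al l \<and> nu k \<subseteq> nu l) \<or> (al l \<subseteq> al k \<and> nu l \<subseteq> nu k)"
    and c: "closed a0" "closed c0" "a0 \<subseteq> c0"
    and k: "\<And>k. k \<in> J \<Longrightarrow> closed (al k) \<and> closed (nu k) \<and> a0 \<subseteq> al k \<and> c0 \<subseteq> nu k \<and>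
              c (al k \<union> c0) = nu k \<and> frk c a0 (al k) c0"
    and V: "closed (\<Union>k\<in>J. nu k)"
  shows "c ((\<Union>k\<in>J. al k) \<union> c0) = (\<Union>k\<in>J. nu k) \<and> frk c a0 (\<Union>k\<in>J. al k) c0"
proof -
  let ?A = "\<Union>k\<in>J. al k" and ?V = "\<Union>k\<in>J. nu k"
  have VU: "?V \<subseteq> U" using closedD(1)[OF V] .
  have c0U: "c0 \<subseteq> U" using closedD(1)[OF c(2)] .
  have a0U: "a0 \<subseteq> U" using closedD(1)[OF c(1)] .
  have alnu: "\<And>k. k \<in> J \<Longrightarrow> al k \<subseteq> nu k"
  proof -
    fix k assume kJ: "k \<in> J"
    have "al k \<union> c0 \<subseteq> U" using closedD(1) k[OF kJ] c0U by blast
    hence "al k \<union> c0 \<subseteq> c (al k \<union> c0)" using incl by blast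
    thus "al k \<subseteq> nu k" using k[OF kJ] by blast
  qed
  have AU: "?A \<subseteq> U" using alnu VU by blast
  have "c (?A \<union> c0) \<subseteq> ?V"
  proof (rule cl_least[OF _ V])
    obtain k where "k \<in> J" using J(1) by blast
    thus "?A \<union> c0 \<subseteq> ?V" using alnu k by blast
  qed
  moreover have "?V \<subseteq> c (?A \<union> c0)"
  proof
    fix x assume "x \<in> ?V"
    then obtain k where kJ: "k \<in> J" "x \<in> nu k" by blast
    have "c (al k \<union> c0) \<subseteq> c (?A \<union> c0)" using mono[of "al k \<union> c0" "?A \<union> c0"] AU c0U kJ by blast
    thus "x \<in> c (?A \<union> c0)" using k[OF kJ(1)] kJ by blast
  qed
  ultimately have e: "c (?A \<union> c0) = ?V" by blast
  have "frk c a0 ?A c0"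
  proof (rule frk_from_D[OF c(1) c(2) c(3) AU])
    fix X assume X: "X \<subseteq> c0" "ind c a0 X"
    show "ind c ?A X"
    proof (rule ind_fin[OF AU])
      show "X \<subseteq> U" using X c0U by blast
      fix X0 assume X0: "X0 \<subseteq> X" "finite X0"
      show "ind c ?A X0" unfolding ind_def
      proof
        fix x assume x: "x \<in> X0"
        show "x \<notin> c (?A \<union> (X0 - {x}))"
        proof
          assume xc: "x \<in> c (?A \<union> (X0 - {x}))"
          have X0U: "X0 \<subseteq> c0" using X0 X by blast
          have SU: "?A \<union> (X0 - {x}) \<subseteq> U" using AU X0U c0U by blast
          obtain Z where Z: "Z \<subseteq> ?A \<union> (X0 - {x})" "finite Z" "x \<in> c Z"
            using fin[OF SU xc] by blast
          have "Z \<inter> ?A \<subseteq> ?A" "finite (Z \<inter> ?A)" using Z by auto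
          then obtain k where kJ: "k \<in> J" "Z \<inter> ?A \<subseteq> al k"
            using fam_chain_fin[OF J(1), of al "Z \<inter> ?A"] J(2) by blast
          have kk: "closed (al k)" "closed (nu k)" "a0 \<subseteq> al k" "frk c a0 (al k) c0"
            using k[OF kJ(1)] by blast+
          have fs: "frk c a0 c0 (al k)" using frk_sym[OF c(1) kk(1) c(2) kk(3) c(3) kk(4)] .
          have iX0: "ind c a0 X0" using ind_sub[OF X0(1) a0U] X(2) X0U X c0U by blast
          have "ind c (al k) X0" using frk_D[OF c(1) c(2) kk(1) c(3) kk(3) fs X0U iX0] .
          moreover have "Z \<subseteq> al k \<union> (X0 - {x})" using Z kJ by blast
          moreover have "al k \<union> (X0 - {x}) \<subseteq> U" using closedD(1)[OF kk(1)] X0U c0U by blast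
          ultimately have "x \<notin> c Z" using mono[of Z "al k \<union> (X0 - {x})"] x unfolding ind_def by blast
          thus False using Z by blast
        qed
      qed
    qed
  qed
  thus ?thesis using e by blast
qed

end

lemma wo_induct:
  assumes wo: "well_order_on I r" and i0: "i0 \<in> I" "\<forall>j\<in>I. (i0, j) \<in> r"
    and base: "P i0"
    and succ: "\<And>i j. i \<in> I \<Longrightarrow> j \<in> I \<Longrightarrow> is_succ I r i j \<Longrightarrow> P i \<Longrightarrow> P j"
    and lim: "\<And>j. j \<in> I \<Longrightarrow> is_limit_pt I r j \<Longrightarrow> (\<And>k. k \<in> I \<Longrightarrow> wlt r k j \<Longrightarrow> P k) \<Longrightarrow> P j"
    and j: "j \<in> I"
  shows "P j"
proof -
  have wf: "wf (r - Id)" using wo unfolding well_order_on_def by blast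
  have "j \<in> I \<longrightarrow> P j"
  proof (induction j rule: wf_induct_rule[OF wf])
    case (1 j)
    show ?case
    proof
      assume jI: "j \<in> I"
      have IH: "\<And>k. k \<in> I \<Longrightarrow> wlt r k j \<Longrightarrow> P k" using 1 unfolding wlt_def by blast
      show "P j"
      proof (cases "j = i0")
        case True thus ?thesis using base by simp
      next
        case False
        hence w: "wlt r i0 j" using i0 jI unfolding wlt_def by blast
        show ?thesis
        proof (cases "is_limit_pt I r j")
          case True thus ?thesis using lim[OF jI True IH] by blast
        next
          case False
          then obtain i where "i \<in> I" "wlt r i j" "\<not> (\<exists>k\<in>I. wlt r i k \<and> wlt r k j)"
            using w i0 unfolding is_limit_pt_def by blast
          hence "is_succ I r i j" unfolding is_succ_def by blast
          thus ?thesis using succ[OF \<open>i \<in> I\<close> jI] IH \<open>i \<in> I\<close> \<open>wlt r i j\<close> by blast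
        qed
      qed
    qed
  qed
  thus ?thesis using j by blast
qed


lemma substruc_fint: "substruc L M N \<Longrightarrow> tup (fst L g) (univ M) xs \<Longrightarrow> fint M g xs = fint N g xs"
  unfolding substruc_def by blast
lemma substruc_rint: "substruc L M N \<Longrightarrow> tup (snd L r) (univ M) xs \<Longrightarrow> rint M r xs = rint N r xs"
  unfolding substruc_def by blast
lemma restr_fint: "tup (fst L g) X xs \<Longrightarrow> fint (restr L N X) g xs = fint N g xs"
  unfolding restr_def by simp
lemma restr_rint: "rint (restr L N X) r xs = (tup (snd L r) X xs \<and> rint N r xs)"
  unfolding restr_def by simp
lemma tup_map: "tup n X xs \<Longrightarrow> tup n (h ` X) (map h xs)"
  unfolding tup_def by auto
lemma union_univ[simp]: "univ (union_struc L Ms) = \<Union>(univ ` Ms)"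
  unfolding union_struc_def by simp

lemma wo_lin: assumes "well_order_on I r" "i \<in> I" "j \<in> I" shows "(i, j) \<in> r \<or> (j, i) \<in> r"
proof (cases "i = j")
  case True
  have "refl_on I r" using assms(1) unfolding well_order_on_def linear_order_on_def partial_order_on_def preorder_on_def
    by blast
  thus ?thesis using True assms(2) unfolding refl_on_def by blast
next
  case False
  have "total_on I r" using assms(1) unfolding well_order_on_def linear_order_on_def by blast
  thus ?thesis using False assms(2,3) unfolding total_on_def by blast
qed

context setting begin

lemma cont_main:
  fixes I :: "'i set"
  assumes chM: "incr_cont_chain L le I r M" and chN: "incr_cont_chain L le I r N"
    and i0: "i0 \<in> I" "\<forall>j\<in>I. (i0, j) \<in> r"
    and kem: "\<forall>i\<in>I. kemb L K le (f i) (M i) (N i)"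
    and comp: "\<forall>i\<in>I. \<forall>j\<in>I. (i, j) \<in> r \<longrightarrow> (\<forall>x\<in>univ (M i). f j x = f i x)"
    and suc: "\<forall>i\<in>I. \<forall>j\<in>I. is_succ I r i j \<longrightarrow> pg_A L K le cl (M i) (M j) (N i) (f i) (N j) (f j) id"
  shows "pg_A L K le cl (M i0) (union_struc L (M ` I)) (N i0) (f i0) (union_struc L (N ` I)) (union_fun I M f) id"
proof -
  define BM where "BM = union_struc L (M ` I)"
  define BN where "BN = union_struc L (N ` I)"
  define F where "F = union_fun I M f"
  have wo: "well_order_on I r" and Ine: "I \<noteq> {}" using chM unfolding incr_cont_chain_def by blast+
  have lin: "\<And>i j. i \<in> I \<Longrightarrow> j \<in> I \<Longrightarrow> (i, j) \<in> r \<or> (j, i) \<in> r" using wo_lin[OF wo] .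
  have monoM: "\<And>i j. i \<in> I \<Longrightarrow> j \<in> I \<Longrightarrow> (i, j) \<in> r \<Longrightarrow> le (M i) (M j)"
    using chM unfolding incr_cont_chain_def by blast
  have monoN: "\<And>i j. i \<in> I \<Longrightarrow> j \<in> I \<Longrightarrow> (i, j) \<in> r \<Longrightarrow> le (N i) (N j)"
    using chN unfolding incr_cont_chain_def by blast
  have limM: "\<And>i. i \<in> I \<Longrightarrow> is_limit_pt I r i \<Longrightarrow> M i = union_struc L (M ` {j\<in>I. wlt r j i})"
    using chM unfolding incr_cont_chain_def by blast
  have limN: "\<And>i. i \<in> I \<Longrightarrow> is_limit_pt I r i \<Longrightarrow> N i = union_struc L (N ` {j\<in>I. wlt r j i})"
    using chN unfolding incr_cont_chain_def by blast
  have cM: "BM \<in> K" "\<And>i. i \<in> I \<Longrightarrow> le (M i) BM" using chain_ax[OF chM] unfolding BM_def by blast+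
  have cN: "BN \<in> K" "\<And>i. i \<in> I \<Longrightarrow> le (N i) BN" using chain_ax[OF chN] unfolding BN_def by blast+
  have uBM: "univ BM = (\<Union>i\<in>I. univ (M i))" unfolding BM_def by simp
  have uBN: "univ BN = (\<Union>i\<in>I. univ (N i))" unfolding BN_def by simp
  define al where "al i = f i ` univ (M i)" for i
  define nu where "nu i = univ (N i)" for i
  have kD: "\<And>i. i \<in> I \<Longrightarrow> kemb L K le (f i) (M i) (N i)" using kem by blast
  have compI: "\<And>i j x. i \<in> I \<Longrightarrow> j \<in> I \<Longrightarrow> (i, j) \<in> r \<Longrightarrow> x \<in> univ (M i) \<Longrightarrow> f j x = f i x"
    using comp by blast
  have Mmono: "\<And>i j. i \<in> I \<Longrightarrow> j \<in> I \<Longrightarrow> (i, j) \<in> r \<Longrightarrow> univ (M i) \<subseteq> univ (M j)"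
    using monoM le_univ by blast
  have almono: "\<And>i j. i \<in> I \<Longrightarrow> j \<in> I \<Longrightarrow> (i, j) \<in> r \<Longrightarrow> al i \<subseteq> al j"
  proof -
    fix i j assume h: "i \<in> I" "j \<in> I" "(i, j) \<in> r"
    show "al i \<subseteq> al j"
    proof
      fix y assume "y \<in> al i"
      then obtain x where x: "x \<in> univ (M i)" "y = f i x" unfolding al_def by blast
      hence "y = f j x" using compI[OF h x(1)] by simp
      thus "y \<in> al j" using Mmono[OF h] x unfolding al_def by blast
    qed
  qed
  have numono: "\<And>i j. i \<in> I \<Longrightarrow> j \<in> I \<Longrightarrow> (i, j) \<in> r \<Longrightarrow> nu i \<subseteq> nu j"
    using monoN le_univ unfolding nu_def by blast
  have Fx: "\<And>i x. i \<in> I \<Longrightarrow> x \<in> univ (M i) \<Longrightarrow> F x = f i x"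
  proof -
    fix i x assume h: "i \<in> I" "x \<in> univ (M i)"
    define j where "j = (SOME j. j \<in> I \<and> x \<in> univ (M j))"
    have j: "j \<in> I" "x \<in> univ (M j)" using someI[of "\<lambda>j. j \<in> I \<and> x \<in> univ (M j)" i] h unfolding j_def by blast+
    have "F x = f j x" unfolding F_def union_fun_def j_def by simp
    also have "\<dots> = f i x" using lin[OF h(1) j(1)] compI[OF h(1) j(1) _ h(2)] compI[OF j(1) h(1) _ j(2)] by metis
    finally show "F x = f i x" .
  qed
  have FBM: "F ` univ BM = (\<Union>i\<in>I. al i)"
  proof
    show "F ` univ BM \<subseteq> (\<Union>i\<in>I. al i)" using Fx unfolding uBM al_def by fastforce
    show "(\<Union>i\<in>I. al i) \<subseteq> F ` univ BM"
    proof
      fix y assume "y \<in> (\<Union>i\<in>I. al i)"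
      then obtain i x where "i \<in> I" "x \<in> univ (M i)" "y = f i x" unfolding al_def by blast
      hence "y = F x" "x \<in> univ BM" using Fx uBM by auto
      thus "y \<in> F ` univ BM" by blast
    qed
  qed
  have alN: "\<And>i. i \<in> I \<Longrightarrow> al i \<subseteq> nu i" using kembD(6)[OF kD] unfolding al_def nu_def by blast
  have BNK: "BN \<in> K" by (rule cN(1))
  interpret p: pgeo "univ BN" "cl BN" using pgeo[OF BNK] .
  have Ral: "\<And>i. i \<in> I \<Longrightarrow> le (restr L (N i) (al i)) BN"
    using kembD(4)[OF kD] cN(2) le_trans unfolding al_def by blast
  have clal: "\<And>i. i \<in> I \<Longrightarrow> p.closed (al i)" using closed_N[OF Ral] by simp
  have clnu: "\<And>i. i \<in> I \<Longrightarrow> p.closed (nu i)" using closed_N[OF cN(2)] unfolding nu_def by simp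
  have alch: "\<And>k l. k \<in> I \<Longrightarrow> l \<in> I \<Longrightarrow> (al k \<subseteq> al l \<and> nu k \<subseteq> nu l) \<or> (al l \<subseteq> al k \<and> nu l \<subseteq> nu k)"
    using lin almono numono by metis
  define Aset where "Aset = (\<Union>i\<in>I. al i)"
  have AU: "Aset \<subseteq> univ BN" using alN uBN unfolding Aset_def nu_def by blast
  have clA: "p.closed Aset"
  proof -
    have "cl BN Aset \<subseteq> Aset"
    proof
      fix x assume x: "x \<in> cl BN Aset"
      obtain X0 where X0: "X0 \<subseteq> Aset" "finite X0" "x \<in> cl BN X0" using p.fin[OF AU x] by blast
      obtain k where k: "k \<in> I" "X0 \<subseteq> al k"
        using fam_chain_fin[OF Ine, of al X0] X0 alch unfolding Aset_def by metis
      have "cl BN X0 \<subseteq> al k" using p.cl_least[OF k(2) clal[OF k(1)]] .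
      thus "x \<in> Aset" using X0 k unfolding Aset_def by blast
    qed
    thus ?thesis unfolding p.closed_def using AU p.incl[OF AU] by blast
  qed
  have LA: "le (restr L BN Aset) BN"
  proof (rule closed_restr_le[OF Ral[OF i0(1)] AU p.closedD(2)[OF clA]])
    show "univ (restr L (N i0) (al i0)) \<subseteq> Aset" using i0 unfolding Aset_def by auto
  qed
  have chainfin: "\<And>X. finite X \<Longrightarrow> X \<subseteq> univ BM \<Longrightarrow> \<exists>k\<in>I. X \<subseteq> univ (M k)"
  proof -
    fix X assume "finite X" "X \<subseteq> univ BM"
    thus "\<exists>k\<in>I. X \<subseteq> univ (M k)"
      using fam_chain_fin[OF Ine, of "\<lambda>i. univ (M i)" X] lin Mmono unfolding uBM by metis
  qed
  have kF: "kemb L K le F BM BN"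
  proof -
    have inj: "inj_on F (univ BM)"
    proof (rule inj_onI)
      fix x y assume xy: "x \<in> univ BM" "y \<in> univ BM" "F x = F y"
      obtain k where k: "k \<in> I" "{x, y} \<subseteq> univ (M k)" using chainfin[of "{x, y}"] xy by auto
      have "f k x = f k y" using xy(3) Fx[OF k(1)] k(2) by simp
      thus "x = y" using kembD(3)[OF kD[OF k(1)]] k(2) unfolding inj_on_def by blast
    qed
    have iso: "iso L F BM (restr L BN (F ` univ BM))"
    proof (rule isoI)
      show "is_struc L BM" using K_struc[OF cM(1)] .
      show "is_struc L (restr L BN (F ` univ BM))" using K_struc leD[OF LA] FBM unfolding Aset_def by simp
      show "bij_betw F (univ BM) (univ (restr L BN (F ` univ BM)))" using inj unfolding bij_betw_def by simp
      show "\<And>g xs. tup (fst L g) (univ BM) xs \<Longrightarrow> F (fint BM g xs) = fint (restr L BN (F ` univ BM)) g (map F xs)"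
      proof -
        fix g xs assume t: "tup (fst L g) (univ BM) xs"
        obtain k where k: "k \<in> I" "set xs \<subseteq> univ (M k)" using chainfin[of "set xs"] t unfolding tup_def by auto
        have tk: "tup (fst L g) (univ (M k)) xs" using t k unfolding tup_def by blast
        have mF: "map F xs = map (f k) xs" using Fx[OF k(1)] k(2) by (induct xs) auto
        have kk: "kemb L K le (f k) (M k) (N k)" using kD[OF k(1)] .
        have "fint BM g xs = fint (M k) g xs" using substruc_fint[OF _ tk] leD[OF cM(2)[OF k(1)]] by metis
        moreover have v: "fint (M k) g xs \<in> univ (M k)" using is_struc_in[OF K_struc tk] kembD(1)[OF kk] .
        ultimately have "F (fint BM g xs) = f k (fint (M k) g xs)" using Fx[OF k(1)] by simp
        also have "\<dots> = fint (restr L (N k) (f k ` univ (M k))) g (map (f k) xs)"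
          using isoD(4)[OF kembD(5)[OF kk] tk] .
        also have "\<dots> = fint (N k) g (map (f k) xs)" using restr_fint[OF tup_map[OF tk]] .
        also have "\<dots> = fint BN g (map (f k) xs)"
        proof -
          have "tup (fst L g) (univ (N k)) (map (f k) xs)"
            using tup_mono[OF tup_map[OF tk] kembD(6)[OF kk]] .
          thus ?thesis using substruc_fint leD[OF cN(2)[OF k(1)]] by metis
        qed
        also have "\<dots> = fint (restr L BN (F ` univ BM)) g (map F xs)"
          using restr_fint[OF tup_map[OF t, of F], of BN] unfolding mF by simp
        finally show "F (fint BM g xs) = fint (restr L BN (F ` univ BM)) g (map F xs)" .
      qed
      show "\<And>g xs. tup (snd L g) (univ BM) xs \<Longrightarrow> rint (restr L BN (F ` univ BM)) g (map F xs) = rint BM g xs"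
      proof -
        fix g xs assume t: "tup (snd L g) (univ BM) xs"
        obtain k where k: "k \<in> I" "set xs \<subseteq> univ (M k)" using chainfin[of "set xs"] t unfolding tup_def by auto
        have tk: "tup (snd L g) (univ (M k)) xs" using t k unfolding tup_def by blast
        have mF: "map F xs = map (f k) xs" using Fx[OF k(1)] k(2) by (induct xs) auto
        have kk: "kemb L K le (f k) (M k) (N k)" using kD[OF k(1)] .
        have "rint (restr L BN (F ` univ BM)) g (map F xs) = rint BN g (map (f k) xs)"
          using restr_rint[of L BN "F ` univ BM" g "map F xs"] tup_map[OF t, of F] unfolding mF by simp
        also have "\<dots> = rint (N k) g (map (f k) xs)"
        proof -
          have "tup (snd L g) (univ (N k)) (map (f k) xs)"
            using tup_mono[OF tup_map[OF tk] kembD(6)[OF kk]] .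
          thus ?thesis using substruc_rint leD[OF cN(2)[OF k(1)]] by metis
        qed
        also have "\<dots> = rint (restr L (N k) (f k ` univ (M k))) g (map (f k) xs)"
          using restr_rint[of L "N k" "f k ` univ (M k)" g "map (f k) xs"] tup_map[OF tk, of "f k"] by simp
        also have "\<dots> = rint (M k) g xs" using isoD(5)[OF kembD(5)[OF kk] tk] .
        also have "\<dots> = rint BM g xs" using substruc_rint[OF _ tk] leD[OF cM(2)[OF k(1)]] by metis
        finally show "rint (restr L BN (F ` univ BM)) g (map F xs) = rint BM g xs" .
      qed
    qed
    show ?thesis unfolding kemb_def using cM(1) cN(1) inj iso LA FBM unfolding Aset_def by simp
  qed
  have cs: "comm_square L K le (M i0) BM (N i0) (f i0) BN F id"
    unfolding comm_square_def kemb_id using cM(2)[OF i0(1)] kD[OF i0(1)] kF cN(2)[OF i0(1)] Fx[OF i0(1)] by simp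
  have FM0: "F ` univ (M i0) = al i0" using Fx[OF i0(1)] unfolding al_def by simp
  have a0c0: "al i0 \<subseteq> nu i0" using alN[OF i0(1)] .
  have Q: "\<And>j. j \<in> I \<Longrightarrow> cl BN (al j \<union> nu i0) = nu j \<and> frk (cl BN) (al i0) (al j) (nu i0)"
  proof -
    fix j assume jI: "j \<in> I"
    show "cl BN (al j \<union> nu i0) = nu j \<and> frk (cl BN) (al i0) (al j) (nu i0)"
    proof (rule wo_induct[OF wo i0, of "\<lambda>j. cl BN (al j \<union> nu i0) = nu j \<and> frk (cl BN) (al i0) (al j) (nu i0)"])
      show "j \<in> I" by fact
      have "al i0 \<union> nu i0 = nu i0" using a0c0 by blast
      thus "cl BN (al i0 \<union> nu i0) = nu i0 \<and> frk (cl BN) (al i0) (al i0) (nu i0)"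
        using p.closedD(2)[OF clnu[OF i0(1)]] p.frk_triv[OF clal[OF i0(1)] clnu[OF i0(1)] a0c0] by simp
    next
      fix i j assume ij: "i \<in> I" "j \<in> I" "is_succ I r i j"
        and IH: "cl BN (al i \<union> nu i0) = nu i \<and> frk (cl BN) (al i0) (al i) (nu i0)"
      have rij: "(i, j) \<in> r" using ij(3) unfolding is_succ_def wlt_def by blast
      have A: "pg_A L K le cl (M i) (M j) (N i) (f i) (N j) (f j) id" using suc ij by blast
      hence csij: "comm_square L K le (M i) (M j) (N i) (f i) (N j) (f j) id" unfolding pg_A_def by blast
      have e1: "f j ` univ (M i) = al i" using compI[OF ij(1,2) rij] unfolding al_def by simp
      have h: "cl (N j) (al j \<union> nu i) = nu j" "frk (cl (N j)) (al i) (al j) (nu i)"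
        using A0[OF csij] A e1 unfolding al_def nu_def by simp_all
      have sub: "al i \<subseteq> nu j" "al j \<subseteq> nu j" "nu i \<subseteq> nu j"
        using almono[OF ij(1,2) rij] alN[OF ij(2)] numono[OF ij(1,2) rij] by blast+
      have h': "cl BN (al j \<union> nu i) = nu j" "frk (cl BN) (al i) (al j) (nu i)"
      proof -
        show "cl BN (al j \<union> nu i) = nu j" using h(1) cl_le[OF cN(2)[OF ij(2)], of "al j \<union> nu i"] sub
          unfolding nu_def by simp
        show "frk (cl BN) (al i) (al j) (nu i)"
          using frk_transfer[of "univ (N j)" "cl (N j)" "cl BN" "al i" "al j" "nu i"] h(2)
            cl_le[OF cN(2)[OF ij(2)]] sub unfolding nu_def by blast
      qed
      have s0: "al i0 \<subseteq> al i" using almono[OF i0(1) ij(1)] i0(2) ij(1) by blast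
      show "cl BN (al j \<union> nu i0) = nu j \<and> frk (cl BN) (al i0) (al j) (nu i0)"
        using p.frk_trans[OF clal[OF i0(1)] clal[OF ij(1)] clal[OF ij(2)] clnu[OF i0(1)] clnu[OF ij(1)]
            clnu[OF ij(2)] s0 almono[OF ij(1,2) rij] a0c0 conjunct1[OF IH] conjunct2[OF IH] h'] .
    next
      fix j assume jI: "j \<in> I" and lj: "is_limit_pt I r j"
        and IH: "\<And>k. k \<in> I \<Longrightarrow> wlt r k j \<Longrightarrow> cl BN (al k \<union> nu i0) = nu k \<and> frk (cl BN) (al i0) (al k) (nu i0)"
      define J where "J = {k\<in>I. wlt r k j}"
      have Jne: "J \<noteq> {}" using lj unfolding is_limit_pt_def J_def by blast
      have kjr: "\<And>k. k \<in> J \<Longrightarrow> k \<in> I \<and> (k, j) \<in> r" unfolding J_def wlt_def by blast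
      have ej: "al j = (\<Union>k\<in>J. al k)"
      proof -
        have "univ (M j) = (\<Union>k\<in>J. univ (M k))" using limM[OF jI lj] unfolding J_def by simp
        hence "al j = (\<Union>k\<in>J. f j ` univ (M k))" unfolding al_def by blast
        also have "\<dots> = (\<Union>k\<in>J. al k)"
        proof (rule SUP_cong[OF refl])
          fix k assume "k \<in> J"
          hence kk: "k \<in> I" "(k, j) \<in> r" using kjr by blast+
          show "f j ` univ (M k) = al k" unfolding al_def
            by (rule image_cong[OF refl], rule compI[OF kk(1) jI kk(2)])
        qed
        finally show ?thesis .
      qed
      have en: "nu j = (\<Union>k\<in>J. nu k)" using limN[OF jI lj] unfolding J_def nu_def by simp
      have "cl BN ((\<Union>k\<in>J. al k) \<union> nu i0) = (\<Union>k\<in>J. nu k) \<and> frk (cl BN) (al i0) (\<Union>k\<in>J. al k) (nu i0)"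
      proof (rule p.limit_sets[OF Jne _ clal[OF i0(1)] clnu[OF i0(1)] a0c0])
        show "\<And>k l. k \<in> J \<Longrightarrow> l \<in> J \<Longrightarrow> (al k \<subseteq> al l \<and> nu k \<subseteq> nu l) \<or> (al l \<subseteq> al k \<and> nu l \<subseteq> nu k)"
          using alch kjr by blast
        show "p.closed (\<Union>k\<in>J. nu k)" using clnu[OF jI] en by simp
        fix k assume kJ: "k \<in> J"
        have kI: "k \<in> I" "wlt r k j" using kJ unfolding J_def by blast+
        show "p.closed (al k) \<and> p.closed (nu k) \<and> al i0 \<subseteq> al k \<and> nu i0 \<subseteq> nu k \<and>
              cl BN (al k \<union> nu i0) = nu k \<and> frk (cl BN) (al i0) (al k) (nu i0)"
          using clal[OF kI(1)] clnu[OF kI(1)] almono[OF i0(1) kI(1)] numono[OF i0(1) kI(1)] i0(2) kI(1)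
            IH[OF kI] by blast
      qed
      thus "cl BN (al j \<union> nu i0) = nu j \<and> frk (cl BN) (al i0) (al j) (nu i0)" using ej en by simp
    qed
  qed
  have fin: "cl BN (Aset \<union> nu i0) = univ BN \<and> frk (cl BN) (al i0) Aset (nu i0)"
  proof -
    have "cl BN ((\<Union>k\<in>I. al k) \<union> nu i0) = (\<Union>k\<in>I. nu k) \<and> frk (cl BN) (al i0) (\<Union>k\<in>I. al k) (nu i0)"
    proof (rule p.limit_sets[OF Ine _ clal[OF i0(1)] clnu[OF i0(1)] a0c0])
      show "\<And>k l. k \<in> I \<Longrightarrow> l \<in> I \<Longrightarrow> (al k \<subseteq> al l \<and> nu k \<subseteq> nu l) \<or> (al l \<subseteq> al k \<and> nu l \<subseteq> nu k)"
        using alch by blast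
      show "p.closed (\<Union>k\<in>I. nu k)" using closed_N[OF le_refl[OF BNK]] uBN unfolding nu_def by simp
      fix k assume kI: "k \<in> I"
      show "p.closed (al k) \<and> p.closed (nu k) \<and> al i0 \<subseteq> al k \<and> nu i0 \<subseteq> nu k \<and>
              cl BN (al k \<union> nu i0) = nu k \<and> frk (cl BN) (al i0) (al k) (nu i0)"
        using clal[OF kI] clnu[OF kI] almono[OF i0(1) kI] numono[OF i0(1) kI] i0(2) kI Q[OF kI] by blast
    qed
    thus ?thesis using uBN unfolding Aset_def nu_def by simp
  qed
  have "pg_A L K le cl (M i0) BM (N i0) (f i0) BN F id"
    using A0[OF cs] fin FBM FM0 unfolding Aset_def nu_def by simp
  thus ?thesis unfolding BM_def BN_def F_def .
qed

lemma cont_pg: "continuous_amalg TYPE('i) L K le (pg_A L K le cl)"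
  unfolding continuous_amalg_def
proof (intro allI impI, elim conjE)
  fix I :: "'i set" and r M N f i0
  assume "incr_cont_chain L le I r M" "incr_cont_chain L le I r N" "i0 \<in> I" "\<forall>j\<in>I. (i0, j) \<in> r"
    "\<forall>i\<in>I. kemb L K le (f i) (M i) (N i)"
    "\<forall>i\<in>I. \<forall>j\<in>I. (i, j) \<in> r \<longrightarrow> (\<forall>x\<in>univ (M i). f j x = f i x)"
    "\<forall>i\<in>I. \<forall>j\<in>I. is_succ I r i j \<longrightarrow> pg_A L K le cl (M i) (M j) (N i) (f i) (N j) (f j) id"
  thus "pg_A L K le cl (M i0) (union_struc L (M ` I)) (N i0) (f i0) (union_struc L (N ` I)) (union_fun I M f) id"
    by (rule cont_main)
qed

end

lemma wo_restr: "well_order_on I r \<Longrightarrow> S \<subseteq> I \<Longrightarrow> well_order_on S (Restr r S)"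
  using well_order_on_Restr well_order_on_Well_order by metis

lemma union_eq:
  assumes ne: "Ms \<noteq> {}" "Ms' \<noteq> {}" and sub: "\<And>M. M \<in> Ms \<union> Ms' \<Longrightarrow> substruc L M Z"
    and u: "\<Union>(univ ` Ms) = \<Union>(univ ` Ms')"
    and f1: "\<And>F. finite F \<Longrightarrow> F \<subseteq> \<Union>(univ ` Ms) \<Longrightarrow> \<exists>M\<in>Ms. F \<subseteq> univ M"
    and f2: "\<And>F. finite F \<Longrightarrow> F \<subseteq> \<Union>(univ ` Ms') \<Longrightarrow> \<exists>M\<in>Ms'. F \<subseteq> univ M"
  shows "union_struc L Ms = union_struc L Ms'"
proof (rule struc.equality)
  show "univ (union_struc L Ms) = univ (union_struc L Ms')" using u by simp
  show "fint (union_struc L Ms) = fint (union_struc L Ms')"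
  proof (intro ext)
    fix g xs
    show "fint (union_struc L Ms) g xs = fint (union_struc L Ms') g xs"
    proof (cases "tup (fst L g) (\<Union>(univ ` Ms)) xs")
      case False thus ?thesis unfolding union_struc_def using u by simp
    next
      case True
      have fx: "finite (set xs)" "set xs \<subseteq> \<Union>(univ ` Ms)" using True unfolding tup_def by auto
      obtain M1 where M1: "M1 \<in> Ms" "set xs \<subseteq> univ M1" using f1[OF fx] by blast
      obtain M2 where M2: "M2 \<in> Ms'" "set xs \<subseteq> univ M2" using f2[OF fx(1)] fx(2) u by auto
      define A1 where "A1 = (SOME M. M \<in> Ms \<and> set xs \<subseteq> univ M)"
      define A2 where "A2 = (SOME M. M \<in> Ms' \<and> set xs \<subseteq> univ M)"
      have A1: "A1 \<in> Ms" "set xs \<subseteq> univ A1" using someI[of "\<lambda>M. M \<in> Ms \<and> set xs \<subseteq> univ M", OF conjI[OF M1]]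
        unfolding A1_def by blast+
      have A2: "A2 \<in> Ms'" "set xs \<subseteq> univ A2" using someI[of "\<lambda>M. M \<in> Ms' \<and> set xs \<subseteq> univ M", OF conjI[OF M2]]
        unfolding A2_def by blast+
      have t1: "tup (fst L g) (univ A1) xs" using True A1 unfolding tup_def by blast
      have t2: "tup (fst L g) (univ A2) xs" using True A2 unfolding tup_def by blast
      have "fint A1 g xs = fint Z g xs" using substruc_fint[OF sub t1] A1 by blast
      moreover have "fint A2 g xs = fint Z g xs" using substruc_fint[OF sub t2] A2 by blast
      ultimately show ?thesis using True u unfolding union_struc_def A1_def A2_def by simp
    qed
  qed
  show "rint (union_struc L Ms) = rint (union_struc L Ms')"
  proof (intro ext)
    fix g xs
    have d: "\<And>Ms Ms'. (\<And>M. M \<in> Ms \<union> Ms' \<Longrightarrow> substruc L M Z) \<Longrightarrow> \<Union>(univ ` Ms) = \<Union>(univ ` Ms') \<Longrightarrow>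
      (\<And>F. finite F \<Longrightarrow> F \<subseteq> \<Union>(univ ` Ms') \<Longrightarrow> \<exists>M\<in>Ms'. F \<subseteq> univ M) \<Longrightarrow>
      (\<exists>M\<in>Ms. rint M g xs) \<Longrightarrow> (\<exists>M\<in>Ms'. rint M g xs)"
    proof -
      fix Ms Ms' assume s: "\<And>M. M \<in> Ms \<union> Ms' \<Longrightarrow> substruc L M Z" and u: "\<Union>(univ ` Ms) = \<Union>(univ ` Ms')"
        and f: "\<And>F. finite F \<Longrightarrow> F \<subseteq> \<Union>(univ ` Ms') \<Longrightarrow> \<exists>M\<in>Ms'. F \<subseteq> univ M"
        and e: "\<exists>M\<in>Ms. rint M g xs"
      then obtain M where M: "M \<in> Ms" "rint M g xs" by blast
      have sM: "substruc L M Z" using s M by blast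
      have iM: "is_struc L M" using sM unfolding substruc_def by blast
      have t: "tup (snd L g) (univ M) xs" using is_struc_rint[OF iM M(2)] .
      have rZ: "rint Z g xs" using substruc_rint[OF sM t] M by blast
      have "set xs \<subseteq> \<Union>(univ ` Ms)" using t M unfolding tup_def by blast
      hence "finite (set xs)" "set xs \<subseteq> \<Union>(univ ` Ms')" using u by auto
      then obtain M' where M': "M' \<in> Ms'" "set xs \<subseteq> univ M'" using f by blast
      have t': "tup (snd L g) (univ M') xs" using t M' unfolding tup_def by blast
      have "rint M' g xs" using substruc_rint[OF s t'] M' rZ by blast
      thus "\<exists>M\<in>Ms'. rint M g xs" using M' by blast
    qed
    have "(\<exists>M\<in>Ms. rint M g xs) \<longleftrightarrow> (\<exists>M\<in>Ms'. rint M g xs)"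
    proof
      assume "\<exists>M\<in>Ms. rint M g xs" thus "\<exists>M\<in>Ms'. rint M g xs" using d[of Ms Ms'] sub u f2 by blast
    next
      assume "\<exists>M\<in>Ms'. rint M g xs" thus "\<exists>M\<in>Ms. rint M g xs" using d[of Ms' Ms] sub u f1 by blast
    qed
    thus "rint (union_struc L Ms) g xs = rint (union_struc L Ms') g xs" unfolding union_struc_def by simp
  qed
qed simp

lemma union_single: "is_struc L X \<Longrightarrow> union_struc L {X} = X"
proof -
  assume s: "is_struc L X"
  show ?thesis
  proof (rule struc.equality)
    show "fint (union_struc L {X}) = fint X"
    proof (intro ext)
      fix g xs show "fint (union_struc L {X}) g xs = fint X g xs"
      proof (cases "tup (fst L g) (univ X) xs")
        case True
        hence "set xs \<subseteq> univ X" unfolding tup_def by blast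
        hence "(SOME M. M \<in> {X} \<and> set xs \<subseteq> univ M) = X" by (intro some_equality) auto
        thus ?thesis using True unfolding union_struc_def by simp
      next
        case False thus ?thesis using is_struc_out[OF s, of g xs] unfolding union_struc_def by simp
      qed
    qed
    show "rint (union_struc L {X}) = rint X" unfolding union_struc_def by simp
  qed (simp_all add: union_struc_def)
qed

lemma union_top:
  assumes "X \<in> Ms" "\<And>M. M \<in> Ms \<Longrightarrow> substruc L M X" "is_struc L X"
  shows "union_struc L Ms = X"
proof -
  have "substruc L X X" using assms(2)[OF assms(1)] .
  have "union_struc L Ms = union_struc L {X}"
  proof (rule union_eq)
    show "Ms \<noteq> {}" "{X} \<noteq> {}" using assms(1) by auto
    show "\<And>M. M \<in> Ms \<union> {X} \<Longrightarrow> substruc L M X" using assms by auto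
    have sb: "\<And>M. M \<in> Ms \<Longrightarrow> univ M \<subseteq> univ X" using assms(2) unfolding substruc_def by blast
    show "\<Union>(univ ` Ms) = \<Union>(univ ` {X})" using assms(1) sb by blast
    show "\<And>F. finite F \<Longrightarrow> F \<subseteq> \<Union>(univ ` Ms) \<Longrightarrow> \<exists>M\<in>Ms. F \<subseteq> univ M"
      using assms(1) sb by blast
    show "\<And>F. finite F \<Longrightarrow> F \<subseteq> \<Union>(univ ` {X}) \<Longrightarrow> \<exists>M\<in>{X}. F \<subseteq> univ M" by simp
  qed
  thus ?thesis using union_single[OF assms(3)] by simp
qed

lemma chain_fin_struc:
  assumes "Ms \<noteq> {}" "\<And>M M'. M \<in> Ms \<Longrightarrow> M' \<in> Ms \<Longrightarrow> univ M \<subseteq> univ M' \<or> univ M' \<subseteq> univ M"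
    "finite F" "F \<subseteq> \<Union>(univ ` Ms)"
  shows "\<exists>M\<in>Ms. F \<subseteq> univ M"
  using fam_chain_fin[of Ms univ F] assms by blast

lemma fin_max:
  assumes "finite S" "S \<noteq> {}" "\<And>i j. i \<in> S \<Longrightarrow> j \<in> S \<Longrightarrow> (i, j) \<in> r \<or> (j, i) \<in> r" "trans r"
  shows "\<exists>m\<in>S. \<forall>k\<in>S. (k, m) \<in> r"
  using assms
proof (induction S rule: finite_ne_induct)
  case (singleton x) thus ?case by blast
next
  case (insert x F)
  then obtain m where m: "m \<in> F" "\<forall>k\<in>F. (k, m) \<in> r" by blast
  show ?case
  proof (cases "(m, x) \<in> r")
    case True
    have "(x, x) \<in> r" using insert(5)[of x x] by blast
    thus ?thesis using True m insert(6) unfolding trans_def by blast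
  next
    case False
    hence "(x, m) \<in> r" using insert(5)[of x m] m by blast
    thus ?thesis using m by blast
  qed
qed

lemma fin_min:
  assumes "finite S" "S \<noteq> {}" "\<And>i j. i \<in> S \<Longrightarrow> j \<in> S \<Longrightarrow> (i, j) \<in> r \<or> (j, i) \<in> r" "trans r"
  shows "\<exists>m\<in>S. \<forall>k\<in>S. (m, k) \<in> r"
proof -
  have "\<exists>m\<in>S. \<forall>k\<in>S. (k, m) \<in> r\<inverse>"
    using fin_max[of S "r\<inverse>"] assms by (simp add: disj_commute)
  thus ?thesis by simp
qed


lemma wo_refl: "well_order_on I r \<Longrightarrow> i \<in> I \<Longrightarrow> (i, i) \<in> r"
  unfolding well_order_on_def linear_order_on_def partial_order_on_def preorder_on_def refl_on_def by blast
lemma wo_trans: "well_order_on I r \<Longrightarrow> trans r"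
  unfolding well_order_on_def linear_order_on_def partial_order_on_def preorder_on_def by blast
lemma wo_antisym: "well_order_on I r \<Longrightarrow> antisym r"
  unfolding well_order_on_def linear_order_on_def partial_order_on_def by blast
lemma wo_dom: "well_order_on I r \<Longrightarrow> (i, j) \<in> r \<Longrightarrow> i \<in> I \<and> j \<in> I"
  using well_order_on_domain by metis

lemma wo_nonmin: assumes "well_order_on I r" "i \<in> I"
  shows "(\<not> (\<forall>j\<in>I. (i, j) \<in> r)) \<longleftrightarrow> (\<exists>j\<in>I. wlt r j i)"
proof
  assume "\<not> (\<forall>j\<in>I. (i, j) \<in> r)"
  then obtain j where j: "j \<in> I" "(i, j) \<notin> r" by blast
  hence "(j, i) \<in> r" using wo_lin[OF assms(1) assms(2) j(1)] by blast
  moreover have "j \<noteq> i" using j wo_refl[OF assms] by blast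
  ultimately show "\<exists>j\<in>I. wlt r j i" using j unfolding wlt_def by blast
next
  assume "\<exists>j\<in>I. wlt r j i"
  then obtain j where j: "j \<in> I" "(j, i) \<in> r" "j \<noteq> i" unfolding wlt_def by blast
  have "(i, j) \<notin> r" using j wo_antisym[OF assms(1)] unfolding antisym_def by blast
  thus "\<not> (\<forall>j\<in>I. (i, j) \<in> r)" using j by blast
qed

context setting begin

lemma P_le_N:
  fixes I :: "'i set"
  assumes wo: "well_order_on I r" and Ine: "I \<noteq> {}" and lb: "le Mb N"
    and s1: "\<forall>i\<in>I. le Mb (P i)"
    and s2: "\<forall>i\<in>I. \<forall>j\<in>I. (j, i) \<in> r \<longrightarrow> le (P j) (P i)"
    and s4: "\<forall>i\<in>I. \<not> (\<forall>j\<in>I. (i, j) \<in> r) \<longrightarrow>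
             (\<forall>j\<in>I. wlt r j i \<longrightarrow> le (P j) (union_struc L (P ` {k\<in>I. wlt r k i}))) \<and>
             le (union_struc L (P ` {k\<in>I. wlt r k i})) (P i)"
    and s5: "N = union_struc L (insert Mb (P ` I))"
  shows "\<forall>i\<in>I. le (P i) N"
proof -
  have lin: "\<And>i j. i \<in> I \<Longrightarrow> j \<in> I \<Longrightarrow> (i, j) \<in> r \<or> (j, i) \<in> r" using wo_lin[OF wo] .
  have tr: "trans r" using wo_trans[OF wo] .
  have rfl: "\<And>i. i \<in> I \<Longrightarrow> (i, i) \<in> r" using wo_refl[OF wo] .
  have MbK: "Mb \<in> K" using leD[OF lb] by blast
  have PK: "\<And>i. i \<in> I \<Longrightarrow> P i \<in> K" using s1 leD by blast
  have Psub: "\<And>i j. i \<in> I \<Longrightarrow> j \<in> I \<Longrightarrow> (j, i) \<in> r \<Longrightarrow> univ (P j) \<subseteq> univ (P i)"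
    using s2 le_univ by blast
  have bP: "\<And>i. i \<in> I \<Longrightarrow> univ Mb \<subseteq> univ (P i)" using s1 le_univ by blast
  have Pch: "\<And>M M'. M \<in> insert Mb (P ` I) \<Longrightarrow> M' \<in> insert Mb (P ` I) \<Longrightarrow> univ M \<subseteq> univ M' \<or> univ M' \<subseteq> univ M"
    using lin Psub bP by blast
  show ?thesis
  proof (cases "\<exists>m\<in>I. \<forall>k\<in>I. (k, m) \<in> r")
    case True
    then obtain m where m: "m \<in> I" "\<forall>k\<in>I. (k, m) \<in> r" by blast
    have "N = P m"
    proof -
      have "union_struc L (insert Mb (P ` I)) = P m"
      proof (rule union_top)
        show "P m \<in> insert Mb (P ` I)" using m by blast
        show "is_struc L (P m)" using K_struc PK m by blast
        fix M assume "M \<in> insert Mb (P ` I)"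
        thus "substruc L M (P m)" using s1 s2 m leD by blast
      qed
      thus ?thesis using s5 by simp
    qed
    thus ?thesis using s2 m by simp
  next
    case False
    hence nomax: "\<And>i. i \<in> I \<Longrightarrow> \<exists>j\<in>I. wlt r i j"
      using lin rfl unfolding wlt_def by metis
    define W where "W i = {k\<in>I. wlt r k i}" for i
    define U where "U i = union_struc L (P ` W i)" for i
    define B where "B i = union_struc L (insert Mb (P ` W i))" for i
    have uB: "\<And>i. univ (B i) = univ Mb \<union> (\<Union>k\<in>W i. univ (P k))" unfolding B_def by simp
    have Wr: "\<And>i k. k \<in> W i \<Longrightarrow> k \<in> I \<and> (k, i) \<in> r \<and> k \<noteq> i" unfolding W_def wlt_def by blast
    have nm: "\<And>i. i \<in> I \<Longrightarrow> \<not> (\<forall>j\<in>I. (i, j) \<in> r) \<longleftrightarrow> W i \<noteq> {}"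
      using wo_nonmin[OF wo] unfolding W_def by blast
    have s4': "\<And>i. i \<in> I \<Longrightarrow> W i \<noteq> {} \<Longrightarrow> (\<forall>j\<in>W i. le (P j) (U i)) \<and> le (U i) (P i)"
      using s4 nm unfolding U_def W_def by blast
    have Bmin: "\<And>i. i \<in> I \<Longrightarrow> W i = {} \<Longrightarrow> B i = Mb"
      unfolding B_def using union_single K_struc[OF MbK] by simp
    have Bnon: "\<And>i. i \<in> I \<Longrightarrow> W i \<noteq> {} \<Longrightarrow> B i = U i"
    proof -
      fix i assume i: "i \<in> I" "W i \<noteq> {}"
      show "B i = U i" unfolding B_def U_def
      proof (rule union_eq[where Z = "P i"])
        show "insert Mb (P ` W i) \<noteq> {}" "P ` W i \<noteq> {}" using i by auto
        show "\<And>M. M \<in> insert Mb (P ` W i) \<union> P ` W i \<Longrightarrow> substruc L M (P i)"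
          using s1 s2 i Wr leD by blast
        show "\<Union>(univ ` insert Mb (P ` W i)) = \<Union>(univ ` P ` W i)" using i bP Wr by blast
        show "\<And>F. finite F \<Longrightarrow> F \<subseteq> \<Union>(univ ` insert Mb (P ` W i)) \<Longrightarrow> \<exists>M\<in>insert Mb (P ` W i). F \<subseteq> univ M"
          by (rule chain_fin_struc) (use Pch Wr in blast)+
        show "\<And>F. finite F \<Longrightarrow> F \<subseteq> \<Union>(univ ` P ` W i) \<Longrightarrow> \<exists>M\<in>P ` W i. F \<subseteq> univ M"
          by (rule chain_fin_struc) (use Pch Wr i in blast)+
      qed
    qed
    have BP: "\<And>i. i \<in> I \<Longrightarrow> le (B i) (P i)"
      using Bmin Bnon s4' s1 by metis
    have BK: "\<And>i. i \<in> I \<Longrightarrow> B i \<in> K" using BP leD by blast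
    have PB: "\<And>i j. i \<in> I \<Longrightarrow> j \<in> I \<Longrightarrow> wlt r i j \<Longrightarrow> le (P i) (B j)"
    proof -
      fix i j assume h: "i \<in> I" "j \<in> I" "wlt r i j"
      have "i \<in> W j" using h unfolding W_def by blast
      hence "W j \<noteq> {}" by blast
      thus "le (P i) (B j)" using Bnon[OF h(2)] s4'[OF h(2)] \<open>i \<in> W j\<close> by metis
    qed
    have Bmono: "\<And>i j. i \<in> I \<Longrightarrow> j \<in> I \<Longrightarrow> (i, j) \<in> r \<Longrightarrow> le (B i) (B j)"
    proof -
      fix i j assume h: "i \<in> I" "j \<in> I" "(i, j) \<in> r"
      show "le (B i) (B j)"
      proof (cases "i = j")
        case True thus ?thesis using le_refl BK h by simp
      next
        case False
        hence "wlt r i j" using h unfolding wlt_def by blast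
        thus ?thesis using BP[OF h(1)] PB[OF h(1,2)] le_trans by blast
      qed
    qed
    have Bch: "\<And>M M'. M \<in> B ` I \<Longrightarrow> M' \<in> B ` I \<Longrightarrow> univ M \<subseteq> univ M' \<or> univ M' \<subseteq> univ M"
      using lin Bmono le_univ by blast
    have chB: "incr_cont_chain L le I r B"
      unfolding incr_cont_chain_def
    proof (intro conjI ballI impI)
      show "well_order_on I r" "I \<noteq> {}" by fact+
      show "\<And>i j. i \<in> I \<Longrightarrow> j \<in> I \<Longrightarrow> (i, j) \<in> r \<Longrightarrow> le (B i) (B j)" by (rule Bmono)
      fix i assume i: "i \<in> I" and lim: "is_limit_pt I r i"
      have Wne: "W i \<noteq> {}" using lim unfolding is_limit_pt_def W_def by blast
      have "B i = U i" using Bnon[OF i Wne] .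
      also have "U i = union_struc L (B ` W i)" unfolding U_def
      proof (rule union_eq[where Z = "P i"])
        show "P ` W i \<noteq> {}" "B ` W i \<noteq> {}" using Wne by auto
        show "\<And>M. M \<in> P ` W i \<union> B ` W i \<Longrightarrow> substruc L M (P i)"
        proof -
          fix M assume "M \<in> P ` W i \<union> B ` W i"
          then obtain k where k: "k \<in> W i" "M = P k \<or> M = B k" by blast
          have kk: "k \<in> I" "(k, i) \<in> r" using Wr[OF k(1)] by blast+
          have "le (P k) (P i)" using s2 i kk by blast
          moreover have "le (B k) (P i)" using BP[OF kk(1)] calculation le_trans by blast
          ultimately show "substruc L M (P i)" using k leD by blast
        qed
        show "\<Union>(univ ` P ` W i) = \<Union>(univ ` B ` W i)"
        proof
          show "\<Union>(univ ` P ` W i) \<subseteq> \<Union>(univ ` B ` W i)"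
          proof
            fix x assume "x \<in> \<Union>(univ ` P ` W i)"
            then obtain k where k: "k \<in> W i" "x \<in> univ (P k)" by blast
            have "k \<in> I" "wlt r k i" using k unfolding W_def by blast+
            then obtain k' where k': "k' \<in> I" "wlt r k k'" "wlt r k' i" using lim unfolding is_limit_pt_def by blast
            have "k' \<in> W i" "k \<in> W k'" using k' \<open>k \<in> I\<close> unfolding W_def by blast+
            thus "x \<in> \<Union>(univ ` B ` W i)" using k uB by blast
          qed
          show "\<Union>(univ ` B ` W i) \<subseteq> \<Union>(univ ` P ` W i)"
          proof
            fix x assume "x \<in> \<Union>(univ ` B ` W i)"
            then obtain k where k: "k \<in> W i" "x \<in> univ (B k)" by blast
            have kk: "k \<in> I" "(k, i) \<in> r" using Wr[OF k(1)] by blast+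
            show "x \<in> \<Union>(univ ` P ` W i)"
            proof (cases "x \<in> univ Mb")
              case True thus ?thesis using bP[OF kk(1)] k(1) by blast
            next
              case False
              then obtain k' where k': "k' \<in> W k" "x \<in> univ (P k')" using k(2) uB by blast
              have "k' \<in> I" "(k', k) \<in> r" "k' \<noteq> k" using Wr[OF k'(1)] by blast+
              hence "(k', i) \<in> r" using kk tr unfolding trans_def by blast
              moreover have "k' \<noteq> i"
              proof
                assume "k' = i"
                hence "(i, k) \<in> r" using \<open>(k', k) \<in> r\<close> by simp
                thus False using kk wo_antisym[OF wo] Wr[OF k(1)] unfolding antisym_def by blast
              qed
              ultimately have "k' \<in> W i" using \<open>k' \<in> I\<close> unfolding W_def wlt_def by blast
              thus ?thesis using k' by blast
            qed
          qed
        qed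
        show "\<And>F. finite F \<Longrightarrow> F \<subseteq> \<Union>(univ ` P ` W i) \<Longrightarrow> \<exists>M\<in>P ` W i. F \<subseteq> univ M"
          by (rule chain_fin_struc) (use Pch Wr Wne in blast)+
        show "\<And>F. finite F \<Longrightarrow> F \<subseteq> \<Union>(univ ` B ` W i) \<Longrightarrow> \<exists>M\<in>B ` W i. F \<subseteq> univ M"
          by (rule chain_fin_struc) (use Bch Wr Wne in blast)+
      qed
      finally show "B i = union_struc L (B ` {j\<in>I. wlt r j i})" unfolding W_def .
    qed
    have cB: "union_struc L (B ` I) \<in> K" "\<And>i. i \<in> I \<Longrightarrow> le (B i) (union_struc L (B ` I))"
      using chain_ax[OF chB] by blast+
    have MbB: "\<And>i. i \<in> I \<Longrightarrow> le Mb (B i)" using coh[OF s1[rule_format] BP] uB by blast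
    have PUB: "\<And>i. i \<in> I \<Longrightarrow> le (P i) (union_struc L (B ` I))"
      using nomax PB cB le_trans by blast
    have "N = union_struc L (B ` I)" unfolding s5
    proof (rule union_eq[where Z = "union_struc L (B ` I)"])
      show "insert Mb (P ` I) \<noteq> {}" "B ` I \<noteq> {}" using Ine by auto
      show "\<And>M. M \<in> insert Mb (P ` I) \<union> B ` I \<Longrightarrow> substruc L M (union_struc L (B ` I))"
        using PUB cB(2) MbB le_trans Ine leD by blast
      show "\<Union>(univ ` insert Mb (P ` I)) = \<Union>(univ ` B ` I)"
      proof
        show "\<Union>(univ ` insert Mb (P ` I)) \<subseteq> \<Union>(univ ` B ` I)"
        proof
          fix x assume "x \<in> \<Union>(univ ` insert Mb (P ` I))"
          then consider "x \<in> univ Mb" | k where "k \<in> I" "x \<in> univ (P k)" by blast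
          thus "x \<in> \<Union>(univ ` B ` I)"
          proof cases
            case 1 thus ?thesis using Ine uB by blast
          next
            case 2
            then obtain j where "j \<in> I" "wlt r k j" using nomax by blast
            hence "k \<in> W j" using 2 unfolding W_def by blast
            thus ?thesis using 2 \<open>j \<in> I\<close> uB by blast
          qed
        qed
        show "\<Union>(univ ` B ` I) \<subseteq> \<Union>(univ ` insert Mb (P ` I))"
        proof
          fix x assume "x \<in> \<Union>(univ ` B ` I)"
          then obtain i where i: "i \<in> I" "x \<in> univ (B i)" by blast
          hence "x \<in> univ Mb \<or> (\<exists>k\<in>W i. x \<in> univ (P k))" using uB by blast
          moreover have "\<And>k. k \<in> W i \<Longrightarrow> k \<in> I" using Wr by blast
          ultimately show "x \<in> \<Union>(univ ` insert Mb (P ` I))" by blast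
        qed
      qed
      show "\<And>F. finite F \<Longrightarrow> F \<subseteq> \<Union>(univ ` insert Mb (P ` I)) \<Longrightarrow> \<exists>M\<in>insert Mb (P ` I). F \<subseteq> univ M"
        by (rule chain_fin_struc) (use Pch in blast)+
      show "\<And>F. finite F \<Longrightarrow> F \<subseteq> \<Union>(univ ` B ` I) \<Longrightarrow> \<exists>M\<in>B ` I. F \<subseteq> univ M"
        by (rule chain_fin_struc) (use Bch Ine in blast)+
    qed
    thus ?thesis using PUB by simp
  qed
qed

end

context setting begin

lemma construct:
  fixes I :: "'i set"
  assumes wo: "well_order_on I r" and lb: "le Mb N"
    and PN: "\<forall>i\<in>I. le (P i) N"
    and mf: "\<forall>i\<in>I. le (Mf i) N \<and> le Mb (Mf i) \<and> univ (Mf i) \<subseteq> univ (P i)"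
    and bP: "\<forall>i\<in>I. univ Mb \<subseteq> univ (P i)"
    and nm: "\<forall>i\<in>I. (\<exists>j\<in>I. wlt r j i) \<longrightarrow> le (U i) N \<and> frk (cl N) (univ Mb) (univ (U i)) (univ (Mf i)) \<and>
               (\<forall>j\<in>I. wlt r j i \<longrightarrow> univ (P j) \<subseteq> univ (U i))"
    and S: "finite S" "S \<subseteq> I" "S \<noteq> {}"
  shows "\<exists>N'. le N' N \<and> seq_amalg L le (pg_A L K le cl) S (Restr r S) Mf Mb N' \<and>
           univ N' = cl N (univ Mb \<union> (\<Union>k\<in>S. univ (Mf k)))"
proof -
  have NK: "N \<in> K" using leD[OF lb] by blast
  interpret p: pgeo "univ N" "cl N" using pgeo[OF NK] .
  have lin: "\<And>i j. i \<in> I \<Longrightarrow> j \<in> I \<Longrightarrow> (i, j) \<in> r \<or> (j, i) \<in> r" using wo_lin[OF wo] .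
  have tr: "trans r" using wo_trans[OF wo] .
  have rfl: "\<And>i. i \<in> I \<Longrightarrow> (i, i) \<in> r" using wo_refl[OF wo] .
  have asy: "antisym r" using wo_antisym[OF wo] .
  define b where "b = univ Mb"
  define m where "m k = univ (Mf k)" for k
  define X where "X T = b \<union> (\<Union>k\<in>T. m k)" for T
  define c where "c T = cl N (X T)" for T
  define q where "q s = c {k\<in>S. (k, s) \<in> r}" for s
  define Q where "Q s = restr L N (q s)" for s
  have bU: "b \<subseteq> univ N" using le_univ[OF lb] unfolding b_def .
  have mU: "\<And>k. k \<in> I \<Longrightarrow> m k \<subseteq> univ N" using mf le_univ unfolding m_def by blast
  have XU: "\<And>T. T \<subseteq> I \<Longrightarrow> X T \<subseteq> univ N" using bU mU unfolding X_def by blast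
  have cT: "\<And>T. T \<subseteq> I \<Longrightarrow> p.closed (c T) \<and> X T \<subseteq> c T \<and> c T \<subseteq> univ N \<and> cl N (c T) = c T"
  proof -
    fix T :: "'i set" assume T: "T \<subseteq> I"
    show "p.closed (c T) \<and> X T \<subseteq> c T \<and> c T \<subseteq> univ N \<and> cl N (c T) = c T"
      using p.closedI[OF XU[OF T]] p.closedD[OF p.closedI[OF XU[OF T]]] p.incl[OF XU[OF T]] unfolding c_def
      by blast
  qed
  have cmono: "\<And>T T'. T \<subseteq> T' \<Longrightarrow> T' \<subseteq> I \<Longrightarrow> c T \<subseteq> c T'"
  proof -
    fix T T' :: "'i set" assume "T \<subseteq> T'" "T' \<subseteq> I"
    moreover hence "X T \<subseteq> X T'" unfolding X_def by blast
    ultimately show "c T \<subseteq> c T'" unfolding c_def using p.mono XU by blast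
  qed
  have subS: "\<And>s. {k\<in>S. (k, s) \<in> r} \<subseteq> I" using S by blast
  have LQ: "\<And>s. s \<in> S \<Longrightarrow> le (Q s) N \<and> univ (Q s) = q s \<and> le Mb (Q s)"
  proof -
    fix s assume s: "s \<in> S"
    have c: "p.closed (q s)" "X {k\<in>S. (k, s) \<in> r} \<subseteq> q s" "q s \<subseteq> univ N" "cl N (q s) = q s"
      using cT[OF subS[of s]] unfolding q_def by blast+
    have "b \<subseteq> q s" using c(2) unfolding X_def by blast
    hence l: "le (Q s) N" unfolding Q_def using closed_restr_le[OF lb c(3) c(4)] unfolding b_def by blast
    moreover have "le Mb (Q s)" using coh[OF lb l] \<open>b \<subseteq> q s\<close> unfolding Q_def b_def by simp
    ultimately show "le (Q s) N \<and> univ (Q s) = q s \<and> le Mb (Q s)" unfolding Q_def by simp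
  qed
  have qmono: "\<And>s t. s \<in> S \<Longrightarrow> t \<in> S \<Longrightarrow> (s, t) \<in> r \<Longrightarrow> q s \<subseteq> q t"
  proof -
    fix s t assume h: "s \<in> S" "t \<in> S" "(s, t) \<in> r"
    have "{k\<in>S. (k, s) \<in> r} \<subseteq> {k\<in>S. (k, t) \<in> r}" using h tr unfolding trans_def by blast
    thus "q s \<subseteq> q t" unfolding q_def using cmono subS by blast
  qed
  have Qle: "\<And>s t. s \<in> S \<Longrightarrow> t \<in> S \<Longrightarrow> (s, t) \<in> r \<Longrightarrow> le (Q s) (Q t)"
    using coh LQ qmono by metis
  have linS: "\<And>i j. i \<in> S \<Longrightarrow> j \<in> S \<Longrightarrow> (i, j) \<in> r \<or> (j, i) \<in> r" using lin S by blast
  obtain smax where smax: "smax \<in> S" "\<forall>k\<in>S. (k, smax) \<in> r" using fin_max[OF S(1) S(3) linS tr] by blast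
  have qmax: "q smax = c S" unfolding q_def using smax by (metis (mono_tags, lifting) Collect_cong Collect_mem_eq)
  have N'eq: "union_struc L (insert Mb (Q ` S)) = Q smax"
  proof (rule union_top)
    show "Q smax \<in> insert Mb (Q ` S)" using smax by blast
    show "is_struc L (Q smax)" using K_struc LQ[OF smax(1)] leD by blast
    fix M assume "M \<in> insert Mb (Q ` S)"
    thus "substruc L M (Q smax)" using LQ[OF smax(1)] Qle[OF _ smax(1)] smax leD by blast
  qed
  have seq: "seq_amalg L le (pg_A L K le cl) S (Restr r S) Mf Mb (Q smax)"
    unfolding seq_amalg_def
  proof (intro conjI exI[of _ Q])
    show "well_order_on S (Restr r S)" using wo_restr[OF wo S(2)] .
    show "le Mb (Q smax)" using LQ[OF smax(1)] by blast
    show "\<forall>i\<in>S. le Mb (Q i)" using LQ by blast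
    show "\<forall>i\<in>S. \<forall>j\<in>S. (j, i) \<in> Restr r S \<longrightarrow> le (Q j) (Q i)" using Qle by blast
    show "Q smax = union_struc L (insert Mb (Q ` S))" using N'eq by simp
    show "\<forall>i\<in>S. (\<forall>j\<in>S. (i, j) \<in> Restr r S) \<longrightarrow> Q i = Mf i"
    proof (intro ballI impI)
      fix i assume i: "i \<in> S" "\<forall>j\<in>S. (i, j) \<in> Restr r S"
      have iI: "i \<in> I" using i S by blast
      have "{k\<in>S. (k, i) \<in> r} = {i}"
      proof
        show "{k\<in>S. (k, i) \<in> r} \<subseteq> {i}" using i asy unfolding antisym_def by blast
        show "{i} \<subseteq> {k\<in>S. (k, i) \<in> r}" using i rfl[OF iI] by blast
      qed
      hence "q i = cl N (b \<union> m i)" unfolding q_def c_def X_def by simp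
      also have "b \<union> m i = m i" using mf iI le_univ unfolding b_def m_def by blast
      also have "cl N (m i) = m i" using closed_le mf iI unfolding m_def by blast
      finally show "Q i = Mf i" unfolding Q_def m_def using restr_le mf iI by metis
    qed
    show "\<forall>i\<in>S. \<not> (\<forall>j\<in>S. (i, j) \<in> Restr r S) \<longrightarrow>
      (\<forall>j\<in>S. wlt (Restr r S) j i \<longrightarrow> le (Q j) (union_struc L (Q ` {k\<in>S. wlt (Restr r S) k i}))) \<and>
      le (union_struc L (Q ` {k\<in>S. wlt (Restr r S) k i})) (Q i) \<and>
      by_incl (pg_A L K le cl) Mb (union_struc L (Q ` {k\<in>S. wlt (Restr r S) k i})) (Mf i) (Q i)"
    proof (intro ballI impI)
      fix i assume i: "i \<in> S" "\<not> (\<forall>j\<in>S. (i, j) \<in> Restr r S)"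
      have iI: "i \<in> I" using i S by blast
      define W where "W = {k\<in>S. wlt (Restr r S) k i}"
      have Wc: "\<And>k. k \<in> W \<longleftrightarrow> k \<in> S \<and> (k, i) \<in> r \<and> k \<noteq> i" unfolding W_def wlt_def using i by blast
      obtain j where j: "j \<in> S" "(i, j) \<notin> r" using i by blast
      have "(j, i) \<in> r" "j \<noteq> i" using linS[OF i(1) j(1)] j rfl[OF iI] by blast+
      hence Wne: "W \<noteq> {}" using Wc j by blast
      have Wfin: "finite W" using S(1) Wc by (metis finite_subset subsetI)
      obtain pr where pr: "pr \<in> W" "\<forall>k\<in>W. (k, pr) \<in> r"
        using fin_max[OF Wfin Wne _ tr] linS Wc by blast
      have prS: "pr \<in> S" "(pr, i) \<in> r" "pr \<noteq> i" using pr Wc by blast+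
      have U': "union_struc L (Q ` W) = Q pr"
      proof (rule union_top)
        show "Q pr \<in> Q ` W" using pr by blast
        show "is_struc L (Q pr)" using K_struc LQ[OF prS(1)] leD by blast
        fix M assume "M \<in> Q ` W"
        thus "substruc L M (Q pr)" using Qle[OF _ prS(1)] pr Wc leD by blast
      qed
      have eqset: "{k\<in>S. (k, i) \<in> r} = insert i {k\<in>S. (k, pr) \<in> r}"
      proof
        show "{k\<in>S. (k, i) \<in> r} \<subseteq> insert i {k\<in>S. (k, pr) \<in> r}" using pr Wc by blast
        show "insert i {k\<in>S. (k, pr) \<in> r} \<subseteq> {k\<in>S. (k, i) \<in> r}"
          using i(1) rfl[OF iI] prS tr unfolding trans_def by blast
      qed
      have prI: "pr \<in> I" using prS S by blast
      have qi: "q i = cl N (q pr \<union> m i)"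
      proof -
        have "q i = cl N (X {k\<in>S. (k, pr) \<in> r} \<union> m i)"
          unfolding q_def c_def eqset X_def by (simp add: Un_assoc Un_commute Un_left_commute)
        also have "\<dots> = cl N (q pr \<union> m i)"
          using p.cl_un_cl[of "X {k\<in>S. (k, pr) \<in> r}" "m i"] XU[OF subS] mU[OF iI] unfolding q_def c_def by simp
        finally show ?thesis .
      qed
      have wi: "\<exists>j\<in>I. wlt r j i" using prI prS unfolding wlt_def by blast
      have nmi: "le (U i) N" "frk (cl N) b (univ (U i)) (m i)" "\<And>j. j \<in> I \<Longrightarrow> wlt r j i \<Longrightarrow> univ (P j) \<subseteq> univ (U i)"
        using nm iI wi unfolding b_def m_def by blast+
      have qpr: "q pr \<subseteq> univ (U i)"
      proof -
        have "X {k\<in>S. (k, pr) \<in> r} \<subseteq> univ (U i)"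
        proof -
          have "univ (P pr) \<subseteq> univ (U i)" using nmi(3)[OF prI] prS unfolding wlt_def by blast
          hence "b \<subseteq> univ (U i)" using bP prI unfolding b_def by blast
          moreover have "\<And>k. k \<in> S \<Longrightarrow> (k, pr) \<in> r \<Longrightarrow> m k \<subseteq> univ (U i)"
          proof -
            fix k assume k: "k \<in> S" "(k, pr) \<in> r"
            have kI: "k \<in> I" using k S by blast
            have "(k, i) \<in> r" using k prS tr unfolding trans_def by blast
            moreover have "k \<noteq> i" using k prS asy unfolding antisym_def by blast
            ultimately have "univ (P k) \<subseteq> univ (U i)" using nmi(3)[OF kI] unfolding wlt_def by blast
            thus "m k \<subseteq> univ (U i)" using mf kI unfolding m_def by blast
          qed
          ultimately show ?thesis unfolding X_def by blast
        qed
        thus ?thesis unfolding q_def c_def using p.cl_least closed_N[OF nmi(1)] by blast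
      qed
      have frk': "frk (cl N) b (q pr) (m i)"
        using p.frk_anti[OF nmi(2) qpr le_univ[OF nmi(1)] mU[OF iI]] .
      have LQi: "le (Q i) N" "univ (Q i) = q i" "le Mb (Q i)" using LQ[OF i(1)] by blast+
      have LQp: "le (Q pr) N" "univ (Q pr) = q pr" "le Mb (Q pr)" using LQ[OF prS(1)] by blast+
      have miq: "m i \<subseteq> q i" using cT[OF subS[of i]] rfl[OF iI] i(1) unfolding q_def X_def by blast
      have lmi: "le (Mf i) (Q i)" using coh[of "Mf i" N "Q i"] mf iI LQi miq unfolding m_def by simp
      have "pg_amalgam le cl Mb (Q pr) (Mf i) (Q i)"
        using amalg_in[OF LQi(1) LQp(3)] mf iI Qle[OF prS(1) i(1) prS(2)] lmi LQi LQp qi frk'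
        unfolding b_def m_def by simp
      hence "by_incl (pg_A L K le cl) Mb (Q pr) (Mf i) (Q i)" using by_incl_iff by blast
      moreover have "\<forall>j\<in>S. wlt (Restr r S) j i \<longrightarrow> le (Q j) (Q pr)"
        using Qle[OF _ prS(1)] pr Wc unfolding W_def by blast
      ultimately show "(\<forall>j\<in>S. wlt (Restr r S) j i \<longrightarrow> le (Q j) (union_struc L (Q ` {k\<in>S. wlt (Restr r S) k i}))) \<and>
        le (union_struc L (Q ` {k\<in>S. wlt (Restr r S) k i})) (Q i) \<and>
        by_incl (pg_A L K le cl) Mb (union_struc L (Q ` {k\<in>S. wlt (Restr r S) k i})) (Mf i) (Q i)"
        using U' Qle[OF prS(1) i(1) prS(2)] unfolding W_def by simp
    qed
  qed
  show ?thesis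
    using seq LQ[OF smax(1)] qmax unfolding c_def X_def b_def m_def by blast
qed

end

context setting begin

lemma mu_pg: "mu_is_aleph0 TYPE('i) L le (pg_A L K le cl)"
  unfolding mu_is_aleph0_def
proof (intro allI impI, elim conjE)
  fix I :: "'i set" and r Mf Mb N a
  assume sa: "seq_amalg L le (pg_A L K le cl) I r Mf Mb N" and a: "a \<in> univ N"
  have wo: "well_order_on I r" and lb: "le Mb N" using sa unfolding seq_amalg_def by blast+
  obtain P where s1: "\<forall>i\<in>I. le Mb (P i)"
    and s2: "\<forall>i\<in>I. \<forall>j\<in>I. (j, i) \<in> r \<longrightarrow> le (P j) (P i)"
    and s3: "\<forall>i\<in>I. (\<forall>j\<in>I. (i, j) \<in> r) \<longrightarrow> P i = Mf i"
    and s4: "\<forall>i\<in>I. \<not> (\<forall>j\<in>I. (i, j) \<in> r) \<longrightarrow>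
             (\<forall>j\<in>I. wlt r j i \<longrightarrow> le (P j) (union_struc L (P ` {k\<in>I. wlt r k i}))) \<and>
             le (union_struc L (P ` {k\<in>I. wlt r k i})) (P i) \<and>
             by_incl (pg_A L K le cl) Mb (union_struc L (P ` {k\<in>I. wlt r k i})) (Mf i) (P i)"
    and s5: "N = union_struc L (insert Mb (P ` I))"
    using sa unfolding seq_amalg_def by blast
  have NK: "N \<in> K" using leD[OF lb] by blast
  show "\<exists>S\<subseteq>I. finite S \<and> (\<exists>N'. le N' N \<and> seq_amalg L le (pg_A L K le cl) S (Restr r S) Mf Mb N' \<and> a \<in> univ N')"
  proof (cases "I = {}")
    case True
    have "seq_amalg L le (pg_A L K le cl) {} (Restr r {}) Mf Mb N"
      unfolding seq_amalg_def using wo_restr[OF wo, of "{}"] lb s5 True by auto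
    thus ?thesis using le_refl[OF NK] a True by blast
  next
    case False
    interpret p: pgeo "univ N" "cl N" using pgeo[OF NK] .
    define U where "U i = union_struc L (P ` {k\<in>I. wlt r k i})" for i
    have PN: "\<forall>i\<in>I. le (P i) N"
      by (rule P_le_N[OF wo False lb s1 s2 _ s5]) (use s4 in blast)
    have nonmin: "\<And>i. i \<in> I \<Longrightarrow> \<not> (\<forall>j\<in>I. (i, j) \<in> r) \<Longrightarrow>
       (\<forall>j\<in>I. wlt r j i \<longrightarrow> le (P j) (U i)) \<and> le (U i) (P i) \<and> pg_amalgam le cl Mb (U i) (Mf i) (P i)"
      using s4 by_incl_iff unfolding U_def by blast
    have mf: "\<forall>i\<in>I. le (Mf i) N \<and> le Mb (Mf i) \<and> univ (Mf i) \<subseteq> univ (P i)"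
    proof
      fix i assume i: "i \<in> I"
      show "le (Mf i) N \<and> le Mb (Mf i) \<and> univ (Mf i) \<subseteq> univ (P i)"
      proof (cases "\<forall>j\<in>I. (i, j) \<in> r")
        case True thus ?thesis using s3 i PN s1 by auto
      next
        case False
        hence "pg_amalgam le cl Mb (U i) (Mf i) (P i)" using nonmin[OF i] by blast
        hence "le Mb (Mf i)" "le (Mf i) (P i)" unfolding pg_amalgam_def by blast+
        thus ?thesis using PN i le_trans le_univ by blast
      qed
    qed
    have bP: "\<forall>i\<in>I. univ Mb \<subseteq> univ (P i)" using s1 le_univ by blast
    have nmf: "\<And>i. i \<in> I \<Longrightarrow> \<not> (\<forall>j\<in>I. (i, j) \<in> r) \<Longrightarrow>
        le (U i) N \<and> cl N (univ (U i) \<union> univ (Mf i)) = univ (P i) \<and>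
        frk (cl N) (univ Mb) (univ (U i)) (univ (Mf i)) \<and>
        (\<forall>j\<in>I. wlt r j i \<longrightarrow> univ (P j) \<subseteq> univ (U i))"
    proof -
      fix i assume i: "i \<in> I" "\<not> (\<forall>j\<in>I. (i, j) \<in> r)"
      note h = nonmin[OF i]
      have "le (U i) N" using h PN i le_trans by blast
      moreover have "cl N (univ (U i) \<union> univ (Mf i)) = univ (P i) \<and> frk (cl N) (univ Mb) (univ (U i)) (univ (Mf i))"
        using amalg_out[of Mb "U i" "Mf i" "P i" N] h PN i by blast
      moreover have "\<forall>j\<in>I. wlt r j i \<longrightarrow> univ (P j) \<subseteq> univ (U i)" using h le_univ by blast
      ultimately show "le (U i) N \<and> cl N (univ (U i) \<union> univ (Mf i)) = univ (P i) \<and>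
        frk (cl N) (univ Mb) (univ (U i)) (univ (Mf i)) \<and> (\<forall>j\<in>I. wlt r j i \<longrightarrow> univ (P j) \<subseteq> univ (U i))"
        by blast
    qed
    have nm: "\<forall>i\<in>I. (\<exists>j\<in>I. wlt r j i) \<longrightarrow> le (U i) N \<and> frk (cl N) (univ Mb) (univ (U i)) (univ (Mf i)) \<and>
               (\<forall>j\<in>I. wlt r j i \<longrightarrow> univ (P j) \<subseteq> univ (U i))"
      using nmf wo_nonmin[OF wo] by blast
    define c where "c T = cl N (univ Mb \<union> (\<Union>k\<in>T. univ (Mf k)))" for T
    have mU: "\<And>k. k \<in> I \<Longrightarrow> univ (Mf k) \<subseteq> univ N" using mf le_univ by blast
    have bU: "univ Mb \<subseteq> univ N" using le_univ[OF lb] .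
    have XU: "\<And>T. T \<subseteq> I \<Longrightarrow> univ Mb \<union> (\<Union>k\<in>T. univ (Mf k)) \<subseteq> univ N" using mU bU by blast
    have cT: "\<And>T. T \<subseteq> I \<Longrightarrow> p.closed (c T) \<and> univ Mb \<union> (\<Union>k\<in>T. univ (Mf k)) \<subseteq> c T"
    proof -
      fix T :: "'i set" assume T: "T \<subseteq> I"
      show "p.closed (c T) \<and> univ Mb \<union> (\<Union>k\<in>T. univ (Mf k)) \<subseteq> c T"
        unfolding c_def using p.closedI[OF XU[OF T]] p.incl[OF XU[OF T]] by blast
    qed
    have cmono: "\<And>T T'. T \<subseteq> T' \<Longrightarrow> T' \<subseteq> I \<Longrightarrow> c T \<subseteq> c T'"
    proof -
      fix T T' :: "'i set" assume h: "T \<subseteq> T'" "T' \<subseteq> I"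
      hence "univ Mb \<union> (\<Union>k\<in>T. univ (Mf k)) \<subseteq> univ Mb \<union> (\<Union>k\<in>T'. univ (Mf k))" by blast
      thus "c T \<subseteq> c T'" unfolding c_def using p.mono[OF _ XU[OF h(2)]] by blast
    qed
    have G: "\<And>i. i \<in> I \<Longrightarrow> \<forall>x\<in>univ (P i). \<exists>T. T \<subseteq> I \<and> finite T \<and> x \<in> c T"
    proof -
      have wf: "wf (r - Id)" using wo unfolding well_order_on_def by blast
      fix i0 :: 'i
      have "i0 \<in> I \<longrightarrow> (\<forall>x\<in>univ (P i0). \<exists>T. T \<subseteq> I \<and> finite T \<and> x \<in> c T)"
      proof (induction i0 rule: wf_induct_rule[OF wf])
        case (1 i)
        show ?case
        proof (intro impI ballI)
          fix x assume iI: "i \<in> I" and x: "x \<in> univ (P i)"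
          show "\<exists>T. T \<subseteq> I \<and> finite T \<and> x \<in> c T"
          proof (cases "\<forall>j\<in>I. (i, j) \<in> r")
            case True
            hence "x \<in> univ (Mf i)" using s3 iI x by metis
            moreover have "univ (Mf i) \<subseteq> c {i}" using cT[of "{i}"] iI by blast
            ultimately show ?thesis using iI by (intro exI[of _ "{i}"]) blast
          next
            case False
            note h = nmf[OF iI False]
            have uU: "univ (U i) \<subseteq> univ N" using le_univ h by blast
            have "x \<in> cl N (univ (U i) \<union> univ (Mf i))" using h x by simp
            then obtain Z where Z: "Z \<subseteq> univ (U i) \<union> univ (Mf i)" "finite Z" "x \<in> cl N Z"
              using p.fin[of "univ (U i) \<union> univ (Mf i)" x] uU mU[OF iI] by blast
            have ex: "\<forall>z\<in>Z \<inter> univ (U i). \<exists>T. T \<subseteq> I \<and> finite T \<and> z \<in> c T"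
            proof
              fix z assume z: "z \<in> Z \<inter> univ (U i)"
              then obtain k where k: "k \<in> I" "wlt r k i" "z \<in> univ (P k)" unfolding U_def by auto
              have "(k, i) \<in> r - Id" using k unfolding wlt_def by blast
              thus "\<exists>T. T \<subseteq> I \<and> finite T \<and> z \<in> c T" using 1 k by blast
            qed
            then obtain g where g: "\<forall>z\<in>Z \<inter> univ (U i). g z \<subseteq> I \<and> finite (g z) \<and> z \<in> c (g z)"
              using bchoice[OF ex] by blast
            define T where "T = insert i (\<Union>z\<in>Z \<inter> univ (U i). g z)"
            have TI: "T \<subseteq> I" "finite T" using g iI Z(2) unfolding T_def by auto
            have "Z \<subseteq> c T"
            proof
              fix z assume zZ: "z \<in> Z"
              show "z \<in> c T"
              proof (cases "z \<in> univ (U i)")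
                case True
                hence "g z \<subseteq> T" unfolding T_def using zZ by blast
                thus ?thesis using cmono[OF _ TI(1)] g zZ True by blast
              next
                case False
                hence "z \<in> univ (Mf i)" using Z zZ by blast
                moreover have "i \<in> T" unfolding T_def by blast
                ultimately show ?thesis using cT[OF TI(1)] by blast
              qed
            qed
            hence "cl N Z \<subseteq> c T" using p.cl_least cT[OF TI(1)] by blast
            thus ?thesis using Z TI by blast
          qed
        qed
      qed
      thus "i0 \<in> I \<Longrightarrow> \<forall>x\<in>univ (P i0). \<exists>T. T \<subseteq> I \<and> finite T \<and> x \<in> c T" by blast
    qed
    obtain i0 where i0: "i0 \<in> I" using False by blast
    obtain T where T: "T \<subseteq> I" "finite T" "a \<in> c T"
    proof (cases "a \<in> univ Mb")
      case True
      hence "a \<in> c {i0}" using cT[of "{i0}"] i0 by blast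
      thus ?thesis using that[of "{i0}"] i0 by blast
    next
      case False
      then obtain i where "i \<in> I" "a \<in> univ (P i)" using a s5 by auto
      thus ?thesis using G that by blast
    qed
    define S where "S = insert i0 T"
    have S: "finite S" "S \<subseteq> I" "S \<noteq> {}" using T i0 unfolding S_def by auto
    have aS: "a \<in> c S" using cmono[of T S] S T unfolding S_def by blast
    obtain N' where N': "le N' N" "seq_amalg L le (pg_A L K le cl) S (Restr r S) Mf Mb N'"
      "univ N' = c S"
      using construct[OF wo lb PN mf bP nm S] unfolding c_def by blast
    show ?thesis using N' aS S by blast
  qed
qed

end

theorem mainTheorem19:
  fixes L :: "('f, 'r) lang"
    and K :: "('a, 'f, 'r) struc set"
    and le :: "('a, 'f, 'r) struc \<Rightarrow> ('a, 'f, 'r) struc \<Rightarrow> bool"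
    and cl :: "('a, 'f, 'r) struc \<Rightarrow> 'a set \<Rightarrow> 'a set"
  assumes "aec TYPE('i) L K le"
    and "pregeom_system L K le cl"
  shows "regular L K le (pg_A L K le cl)
       \<and> abs_minimal le (pg_A L K le cl)
       \<and> three_monotonic le (pg_A L K le cl)
       \<and> continuous_amalg TYPE('i) L K le (pg_A L K le cl)
       \<and> admits_decomp le (pg_A L K le cl)
       \<and> mu_is_aleph0 TYPE('i) L le (pg_A L K le cl)"
proof -
  interpret s: setting L K le cl "TYPE('i)" by (rule setting.intro) (rule assms)+
  show ?thesis using s.regular_pg s.abs_min s.three_mono s.cont_pg s.adm_decomp s.mu_pg by blast
qed

end
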